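(* The functors $T\circ\mathbf F_{\mathcal{WHB}}$ and $\mathbf F_{\mathcal{TBA}}$ from $\mathsf{Set}$ to $\mathsf{TBA}$ are naturally isomorphic.
   Context: A WHB-algebra is an algebra $(A,\wedge,\vee,\to,\leftarrow,0,1)$ such that $(A,\wedge,\vee,0,1)$ is a bounded distributive lattice and for all $a,b,c\in A$: $a\to a=1$; $a\to(b\wedge c)=(a\to b)\wedge(a\to c)$; $(a\vee b)\to c=(a\to c)\wedge(b\to c)$; $(a\to b)\wedge(b\to c)\le a\to c$; $a\leftarrow a=0$; $(a\vee b)\leftarrow c=(a\leftarrow c)\vee(b\leftarrow c)$; $a\leftarrow(b\wedge c)=(a\leftarrow b)\vee(a\leftarrow c)$; $a\leftarrow c\le(a\leftarrow b)\vee(b\leftarrow c)$; $a\wedge((a\to b)\leftarrow 0)\le b$; $a\le b\vee(1\to(a\leftarrow b))$. A tense algebra is $(\mathbf B,G,H)$ with $\mathbf B$ a Boolean algebra and unary $G,H$ such that, with $P(x)=\neg H(\neg x)$, $F(x)=\neg G(\neg x)$: $P(x)\le y\iff x\le G(y)$ and $F(x)\le y\iff x\le H(y)$; $\mathsf{TBA}$ is the category of tense algebras and homomorphisms, $\mathsf{WHB}$ that of WHB-algebras. For a variety $\mathcal V$, $\mathbf F_{\mathcal V}\colon\mathsf{Set}\to\mathcal V$ is the free-algebra functor: $\mathbf F_{\mathcal V}(X)$ is the $\mathcal V$-free algebra over $X$ and, for $l\colon X\to Y$, $\mathbf F_{\mathcal V}(l)$ is the unique homomorphism extending $x\mapsto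 l(x)$. For a WHB-algebra $\mathbf A$: $X(\mathbf A)$ is its set of prime filters, $\sigma_{\mathbf A}(a)=\{P\colon a\in P\}$, $\tau_{\mathbf A}$ the topology with subbase $\{\sigma_{\mathbf A}(a)\}\cup\{X(\mathbf A)\setminus\sigma_{\mathbf A}(a)\}$; $(P,Q)\in R_{\mathbf A}$ iff for all $a,b$ ($a\to b\in P$, $a\in Q$ imply $b\in Q$); $(P,Q)\in S_{\mathbf A}$ iff for all $a,b$ ($a\in Q$, $b\notin Q$ imply $a\leftarrow b\in P$). $T(\mathbf A)$ is the Boolean algebra of $\tau_{\mathbf A}$-clopen subsets of $X(\mathbf A)$ with $G_{\mathbf A}(U)=\{P\colon R_{\mathbf A}(P)\subseteq U\}$ and $H_{\mathbf A}(U)=\{P\colon S_{\mathbf A}(P)\subseteq U\}$ (where $\mathcal R(P)=\{Q\colon(P,Q)\in\mathcal R\}$); for a homomorphism $h\colon\mathbf A\to\mathbf B$, $T(h)(U)=\{Q\in X(\mathbf B)\colon h^{-1}(Q)\in U\}$. *)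

theory Defs
  imports "HOL-Analysis.Abstract_Topology"
begin

record 'a whb =
  wcar :: "'a set"
  wmeet :: "'a \<Rightarrow> 'a \<Rightarrow> 'a"
  wjoin :: "'a \<Rightarrow> 'a \<Rightarrow> 'a"
  wimp :: "'a \<Rightarrow> 'a \<Rightarrow> 'a"
  wcoimp :: "'a \<Rightarrow> 'a \<Rightarrow> 'a"
  wzero :: "'a"
  wone :: "'a"

record 'a tba =
  tcar :: "'a set"
  tmeet :: "'a \<Rightarrow> 'a \<Rightarrow> 'a"
  tjoin :: "'a \<Rightarrow> 'a \<Rightarrow> 'a"
  tneg :: "'a \<Rightarrow> 'a"
  tzero :: "'a"
  tone :: "'a"
  tG :: "'a \<Rightarrow> 'a"
  tH :: "'a \<Rightarrow> 'a"

definition bdlattice :: "'a set \<Rightarrow> ('a \<Rightarrow> 'a \<Rightarrow> 'a) \<Rightarrow> ('a \<Rightarrow> 'a \<Rightarrow> 'a) \<Rightarrow> 'a \<Rightarrow> 'a \<Rightarrow> bool" where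
  "bdlattice C m j z u \<longleftrightarrow>
     z \<in> C \<and> u \<in> C \<and>
     (\<forall>a\<in>C. \<forall>b\<in>C. m a b \<in> C \<and> j a b \<in> C) \<and>
     (\<forall>a\<in>C. \<forall>b\<in>C. m a b = m b a \<and> j a b = j b a) \<and>
     (\<forall>a\<in>C. \<forall>b\<in>C. \<forall>c\<in>C. m a (m b c) = m (m a b) c \<and> j a (j b c) = j (j a b) c) \<and>
     (\<forall>a\<in>C. \<forall>b\<in>C. m a (j a b) = a \<and> j a (m a b) = a) \<and>
     (\<forall>a\<in>C. \<forall>b\<in>C. \<forall>c\<in>C. m a (j b c) = j (m a b) (m a c)) \<and>
     (\<forall>a\<in>C. m z a = z \<and> j u a = u)"

definition wle :: "('a, 'b) whb_scheme \<Rightarrow> 'a \<Rightarrow> 'a \<Rightarrow> bool" where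
  "wle A a b \<longleftrightarrow> wmeet A a b = a"

definition tle :: "('a, 'b) tba_scheme \<Rightarrow> 'a \<Rightarrow> 'a \<Rightarrow> bool" where
  "tle A a b \<longleftrightarrow> tmeet A a b = a"

definition is_whb :: "('a, 'b) whb_scheme \<Rightarrow> bool" where
  "is_whb A \<longleftrightarrow>
     bdlattice (wcar A) (wmeet A) (wjoin A) (wzero A) (wone A) \<and>
     (\<forall>a\<in>wcar A. \<forall>b\<in>wcar A. wimp A a b \<in> wcar A \<and> wcoimp A a b \<in> wcar A) \<and>
     (\<forall>a\<in>wcar A. \<forall>b\<in>wcar A. \<forall>c\<in>wcar A.
        wimp A a a = wone A \<and>
        wimp A a (wmeet A b c) = wmeet A (wimp A a b) (wimp A a c) \<and>
        wimp A (wjoin A a b) c = wmeet A (wimp A a c) (wimp A b c) \<and>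
        wle A (wmeet A (wimp A a b) (wimp A b c)) (wimp A a c) \<and>
        wcoimp A a a = wzero A \<and>
        wcoimp A (wjoin A a b) c = wjoin A (wcoimp A a c) (wcoimp A b c) \<and>
        wcoimp A a (wmeet A b c) = wjoin A (wcoimp A a b) (wcoimp A a c) \<and>
        wle A (wcoimp A a c) (wjoin A (wcoimp A a b) (wcoimp A b c)) \<and>
        wle A (wmeet A a (wcoimp A (wimp A a b) (wzero A))) b \<and>
        wle A a (wjoin A b (wimp A (wone A) (wcoimp A a b))))"

definition tP :: "('a, 'b) tba_scheme \<Rightarrow> 'a \<Rightarrow> 'a" where
  "tP A x = tneg A (tH A (tneg A x))"

definition tF :: "('a, 'b) tba_scheme \<Rightarrow> 'a \<Rightarrow> 'a" where
  "tF A x = tneg A (tG A (tneg A x))"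

definition is_tba :: "('a, 'b) tba_scheme \<Rightarrow> bool" where
  "is_tba A \<longleftrightarrow>
     bdlattice (tcar A) (tmeet A) (tjoin A) (tzero A) (tone A) \<and>
     (\<forall>a\<in>tcar A. tneg A a \<in> tcar A \<and> tmeet A a (tneg A a) = tzero A \<and> tjoin A a (tneg A a) = tone A) \<and>
     (\<forall>a\<in>tcar A. tG A a \<in> tcar A \<and> tH A a \<in> tcar A) \<and>
     (\<forall>x\<in>tcar A. \<forall>y\<in>tcar A.
        (tle A (tP A x) y \<longleftrightarrow> tle A x (tG A y)) \<and>
        (tle A (tF A x) y \<longleftrightarrow> tle A x (tH A y)))"

definition tba_hom :: "('a, 'c) tba_scheme \<Rightarrow> ('b, 'd) tba_scheme \<Rightarrow> ('a \<Rightarrow> 'b) \<Rightarrow> bool" where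
  "tba_hom A B f \<longleftrightarrow> f \<in> tcar A \<rightarrow> tcar B \<and>
     (\<forall>x\<in>tcar A. \<forall>y\<in>tcar A. f (tmeet A x y) = tmeet B (f x) (f y) \<and> f (tjoin A x y) = tjoin B (f x) (f y)) \<and>
     (\<forall>x\<in>tcar A. f (tneg A x) = tneg B (f x) \<and> f (tG A x) = tG B (f x) \<and> f (tH A x) = tH B (f x)) \<and>
     f (tzero A) = tzero B \<and> f (tone A) = tone B"

text \<open>Isomorphism in TBA: a bijective homomorphism (its inverse is then a homomorphism).\<close>
definition tba_iso :: "('a, 'c) tba_scheme \<Rightarrow> ('b, 'd) tba_scheme \<Rightarrow> ('a \<Rightarrow> 'b) \<Rightarrow> bool" where
  "tba_iso A B f \<longleftrightarrow> tba_hom A B f \<and> bij_betw f (tcar A) (tcar B)"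

datatype 'x wterm = WVar 'x | WMeet "'x wterm" "'x wterm" | WJoin "'x wterm" "'x wterm"
  | WImp "'x wterm" "'x wterm" | WCoimp "'x wterm" "'x wterm" | WZero | WOne

datatype 'x tterm = TVar 'x | TMeet "'x tterm" "'x tterm" | TJoin "'x tterm" "'x tterm"
  | TNeg "'x tterm" | TZero | TOne | TGt "'x tterm" | THt "'x tterm"

primrec weval :: "('a, 'b) whb_scheme \<Rightarrow> ('x \<Rightarrow> 'a) \<Rightarrow> 'x wterm \<Rightarrow> 'a" where
  "weval A v (WVar x) = v x"
| "weval A v (WMeet s t) = wmeet A (weval A v s) (weval A v t)"
| "weval A v (WJoin s t) = wjoin A (weval A v s) (weval A v t)"
| "weval A v (WImp s t) = wimp A (weval A v s) (weval A v t)"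
| "weval A v (WCoimp s t) = wcoimp A (weval A v s) (weval A v t)"
| "weval A v WZero = wzero A"
| "weval A v WOne = wone A"

primrec teval :: "('a, 'b) tba_scheme \<Rightarrow> ('x \<Rightarrow> 'a) \<Rightarrow> 'x tterm \<Rightarrow> 'a" where
  "teval A v (TVar x) = v x"
| "teval A v (TMeet s t) = tmeet A (teval A v s) (teval A v t)"
| "teval A v (TJoin s t) = tjoin A (teval A v s) (teval A v t)"
| "teval A v (TNeg s) = tneg A (teval A v s)"
| "teval A v TZero = tzero A"
| "teval A v TOne = tone A"
| "teval A v (TGt s) = tG A (teval A v s)"
| "teval A v (THt s) = tH A (teval A v s)"

definition wterms :: "'x set \<Rightarrow> 'x wterm set" where
  "wterms X = {t. set_wterm t \<subseteq> X}"

definition tterms :: "'x set \<Rightarrow> 'x tterm set" where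
  "tterms X = {t. set_tterm t \<subseteq> X}"

text \<open>The congruence of identities of the variety on the term algebra over X:
  s, t are identified iff they agree under every assignment of X into every
  algebra of the variety (algebras are taken on carrier type of term classes,
  which is large enough to contain every X-generated algebra of the variety).\<close>
definition whb_rel :: "'x set \<Rightarrow> ('x wterm \<times> 'x wterm) set" where
  "whb_rel X = {(s, t). s \<in> wterms X \<and> t \<in> wterms X \<and>
     (\<forall>(A :: 'x wterm set whb) v. is_whb A \<longrightarrow> v \<in> X \<rightarrow> wcar A \<longrightarrow> weval A v s = weval A v t)}"

definition tba_rel :: "'x set \<Rightarrow> ('x tterm \<times> 'x tterm) set" where
  "tba_rel X = {(s, t). s \<in> tterms X \<and> t \<in> tterms X \<and>
     (\<forall>(A :: 'x tterm set tba) v. is_tba A \<longrightarrow> v \<in> X \<rightarrow> tcar A \<longrightarrow> teval A v s = teval A v t)}"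

definition wrep :: "'x wterm set \<Rightarrow> 'x wterm" where "wrep a = (SOME t. t \<in> a)"
definition trep :: "'x tterm set \<Rightarrow> 'x tterm" where "trep a = (SOME t. t \<in> a)"

definition free_whb :: "'x set \<Rightarrow> 'x wterm set whb" where
  "free_whb X = \<lparr>wcar = wterms X // whb_rel X,
     wmeet = (\<lambda>a b. whb_rel X `` {WMeet (wrep a) (wrep b)}),
     wjoin = (\<lambda>a b. whb_rel X `` {WJoin (wrep a) (wrep b)}),
     wimp = (\<lambda>a b. whb_rel X `` {WImp (wrep a) (wrep b)}),
     wcoimp = (\<lambda>a b. whb_rel X `` {WCoimp (wrep a) (wrep b)}),
     wzero = whb_rel X `` {WZero},
     wone = whb_rel X `` {WOne}\<rparr>"

definition free_tba :: "'x set \<Rightarrow> 'x tterm set tba" where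
  "free_tba X = \<lparr>tcar = tterms X // tba_rel X,
     tmeet = (\<lambda>a b. tba_rel X `` {TMeet (trep a) (trep b)}),
     tjoin = (\<lambda>a b. tba_rel X `` {TJoin (trep a) (trep b)}),
     tneg = (\<lambda>a. tba_rel X `` {TNeg (trep a)}),
     tzero = tba_rel X `` {TZero},
     tone = tba_rel X `` {TOne},
     tG = (\<lambda>a. tba_rel X `` {TGt (trep a)}),
     tH = (\<lambda>a. tba_rel X `` {THt (trep a)})\<rparr>"

definition free_whb_map :: "'x set \<Rightarrow> ('x \<Rightarrow> 'x) \<Rightarrow> 'x wterm set \<Rightarrow> 'x wterm set" where
  "free_whb_map Y l a = whb_rel Y `` {map_wterm l (wrep a)}"

definition free_tba_map :: "'x set \<Rightarrow> ('x \<Rightarrow> 'x) \<Rightarrow> 'x tterm set \<Rightarrow> 'x tterm set" where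
  "free_tba_map Y l a = tba_rel Y `` {map_tterm l (trep a)}"

definition prime_filters :: "('a, 'b) whb_scheme \<Rightarrow> 'a set set" where
  "prime_filters A = {P. P \<subseteq> wcar A \<and> wone A \<in> P \<and> wzero A \<notin> P \<and>
      (\<forall>a\<in>P. \<forall>b\<in>wcar A. wle A a b \<longrightarrow> b \<in> P) \<and>
      (\<forall>a\<in>P. \<forall>b\<in>P. wmeet A a b \<in> P) \<and>
      (\<forall>a\<in>wcar A. \<forall>b\<in>wcar A. wjoin A a b \<in> P \<longrightarrow> a \<in> P \<or> b \<in> P)}"

definition wsigma :: "('a, 'b) whb_scheme \<Rightarrow> 'a \<Rightarrow> 'a set set" where
  "wsigma A a = {P \<in> prime_filters A. a \<in> P}"

definition wtop :: "('a, 'b) whb_scheme \<Rightarrow> 'a set topology" where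
  "wtop A = topology_generated_by
     ({prime_filters A} \<union> (wsigma A ` wcar A) \<union> ((\<lambda>a. prime_filters A - wsigma A a) ` wcar A))"

definition wR :: "('a, 'b) whb_scheme \<Rightarrow> ('a set \<times> 'a set) set" where
  "wR A = {(P, Q). P \<in> prime_filters A \<and> Q \<in> prime_filters A \<and>
     (\<forall>a\<in>wcar A. \<forall>b\<in>wcar A. wimp A a b \<in> P \<longrightarrow> a \<in> Q \<longrightarrow> b \<in> Q)}"

definition wS :: "('a, 'b) whb_scheme \<Rightarrow> ('a set \<times> 'a set) set" where
  "wS A = {(P, Q). P \<in> prime_filters A \<and> Q \<in> prime_filters A \<and>
     (\<forall>a\<in>wcar A. \<forall>b\<in>wcar A. a \<in> Q \<longrightarrow> b \<notin> Q \<longrightarrow> wcoimp A a b \<in> P)}"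

definition T_alg :: "('a, 'b) whb_scheme \<Rightarrow> 'a set set tba" where
  "T_alg A = \<lparr>tcar = {U. openin (wtop A) U \<and> closedin (wtop A) U},
     tmeet = (\<inter>), tjoin = (\<union>),
     tneg = (\<lambda>U. prime_filters A - U),
     tzero = {}, tone = prime_filters A,
     tG = (\<lambda>U. {P \<in> prime_filters A. wR A `` {P} \<subseteq> U}),
     tH = (\<lambda>U. {P \<in> prime_filters A. wS A `` {P} \<subseteq> U})\<rparr>"

definition T_map :: "('a, 'c) whb_scheme \<Rightarrow> ('b, 'd) whb_scheme \<Rightarrow> ('a \<Rightarrow> 'b) \<Rightarrow> 'a set set \<Rightarrow> 'b set set" where
  "T_map A B h U = {Q \<in> prime_filters B. {a \<in> wcar A. h a \<in> Q} \<in> U}"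

end

theory Submission
  imports Defs
begin

definition lpf :: "'a set \<Rightarrow> ('a \<Rightarrow> 'a \<Rightarrow> 'a) \<Rightarrow> ('a \<Rightarrow> 'a \<Rightarrow> 'a) \<Rightarrow> 'a \<Rightarrow> 'a \<Rightarrow> 'a set \<Rightarrow> bool" where
  "lpf C m j z u P \<longleftrightarrow> P \<subseteq> C \<and> u \<in> P \<and> z \<notin> P \<and>
      (\<forall>a\<in>P. \<forall>b\<in>C. m a b = a \<longrightarrow> b \<in> P) \<and>
      (\<forall>a\<in>P. \<forall>b\<in>P. m a b \<in> P) \<and>
      (\<forall>a\<in>C. \<forall>b\<in>C. j a b \<in> P \<longrightarrow> a \<in> P \<or> b \<in> P)"

locale dlat =
  fixes C :: "'a set" and m j :: "'a \<Rightarrow> 'a \<Rightarrow> 'a" and z u :: 'a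
  assumes bd: "bdlattice C m j z u"
begin

lemma zC[simp]: "z \<in> C" and uC[simp]: "u \<in> C"
  using bd unfolding bdlattice_def by blast+
lemma mC[simp]: "a \<in> C \<Longrightarrow> b \<in> C \<Longrightarrow> m a b \<in> C"
  and jC[simp]: "a \<in> C \<Longrightarrow> b \<in> C \<Longrightarrow> j a b \<in> C"
  using bd unfolding bdlattice_def by blast+
lemma mcomm: "a \<in> C \<Longrightarrow> b \<in> C \<Longrightarrow> m a b = m b a"
  and jcomm: "a \<in> C \<Longrightarrow> b \<in> C \<Longrightarrow> j a b = j b a"
  using bd unfolding bdlattice_def by blast+
lemma massoc: "a \<in> C \<Longrightarrow> b \<in> C \<Longrightarrow> c \<in> C \<Longrightarrow> m a (m b c) = m (m a b) c"
  and jassoc: "a \<in> C \<Longrightarrow> b \<in> C \<Longrightarrow> c \<in> C \<Longrightarrow> j a (j b c) = j (j a b) c"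
  using bd unfolding bdlattice_def by blast+
lemma absorb1: "a \<in> C \<Longrightarrow> b \<in> C \<Longrightarrow> m a (j a b) = a"
  and absorb2: "a \<in> C \<Longrightarrow> b \<in> C \<Longrightarrow> j a (m a b) = a"
  using bd unfolding bdlattice_def by blast+
lemma distr: "a \<in> C \<Longrightarrow> b \<in> C \<Longrightarrow> c \<in> C \<Longrightarrow> m a (j b c) = j (m a b) (m a c)"
  using bd unfolding bdlattice_def by blast+
lemma mz[simp]: "a \<in> C \<Longrightarrow> m z a = z" and ju[simp]: "a \<in> C \<Longrightarrow> j u a = u"
  using bd unfolding bdlattice_def by blast+

lemma midem[simp]: "a \<in> C \<Longrightarrow> m a a = a"
  by (metis absorb1 absorb2 mC)
lemma jidem[simp]: "a \<in> C \<Longrightarrow> j a a = a"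
  by (metis absorb1 absorb2 jC)
lemma mz2[simp]: "a \<in> C \<Longrightarrow> m a z = z" using mcomm mz zC by metis
lemma ju2[simp]: "a \<in> C \<Longrightarrow> j a u = u" using jcomm ju uC by metis
lemma jz[simp]: "a \<in> C \<Longrightarrow> j z a = a"
  by (metis absorb2 jcomm mz2 zC)
lemma jz2[simp]: "a \<in> C \<Longrightarrow> j a z = a" using jcomm jz zC by metis
lemma mu[simp]: "a \<in> C \<Longrightarrow> m u a = a"
  by (metis absorb1 mcomm ju2 uC)
lemma mu2[simp]: "a \<in> C \<Longrightarrow> m a u = a" using mcomm mu uC by metis

definition le where "le a b \<longleftrightarrow> m a b = a"

lemma le_refl[simp]: "a \<in> C \<Longrightarrow> le a a" by (simp add: le_def)
lemma le_antisym: "a \<in> C \<Longrightarrow> b \<in> C \<Longrightarrow> le a b \<Longrightarrow> le b a \<Longrightarrow> a = b"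
  unfolding le_def by (metis mcomm)
lemma le_trans: "a \<in> C \<Longrightarrow> b \<in> C \<Longrightarrow> c \<in> C \<Longrightarrow> le a b \<Longrightarrow> le b c \<Longrightarrow> le a c"
  unfolding le_def by (metis massoc)
lemma le_iff_j: "a \<in> C \<Longrightarrow> b \<in> C \<Longrightarrow> le a b \<longleftrightarrow> j a b = b"
  unfolding le_def by (metis absorb1 absorb2 jcomm mcomm)
lemma m_le1[simp]: "a \<in> C \<Longrightarrow> b \<in> C \<Longrightarrow> le (m a b) a"
  unfolding le_def by (metis massoc mcomm midem)
lemma m_le2[simp]: "a \<in> C \<Longrightarrow> b \<in> C \<Longrightarrow> le (m a b) b"
  unfolding le_def by (metis massoc midem)
lemma le_m_iff: "a \<in> C \<Longrightarrow> b \<in> C \<Longrightarrow> c \<in> C \<Longrightarrow> le c (m a b) \<longleftrightarrow> le c a \<and> le c b"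
  by (metis le_def le_trans mC m_le1 m_le2 massoc)
lemma j_ge1[simp]: "a \<in> C \<Longrightarrow> b \<in> C \<Longrightarrow> le a (j a b)"
  by (simp add: absorb1 le_def)
lemma j_ge2[simp]: "a \<in> C \<Longrightarrow> b \<in> C \<Longrightarrow> le b (j a b)"
  by (metis j_ge1 jcomm)
lemma j_le_iff: "a \<in> C \<Longrightarrow> b \<in> C \<Longrightarrow> c \<in> C \<Longrightarrow> le (j a b) c \<longleftrightarrow> le a c \<and> le b c"
  by (metis jC j_ge1 j_ge2 jassoc le_iff_j le_trans)
lemma z_le[simp]: "a \<in> C \<Longrightarrow> le z a" by (simp add: le_def)
lemma le_u[simp]: "a \<in> C \<Longrightarrow> le a u" by (simp add: le_def)
lemma distr2: "a \<in> C \<Longrightarrow> b \<in> C \<Longrightarrow> c \<in> C \<Longrightarrow> j a (m b c) = m (j a b) (j a c)"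
proof -
  assume C: "a \<in> C" "b \<in> C" "c \<in> C"
  have "m (j a b) (j a c) = j (m (j a b) a) (m (j a b) c)" using C by (simp add: distr)
  also have "m (j a b) a = a" using C by (metis absorb1 mcomm jC)
  also have "m (j a b) c = j (m c a) (m c b)" using C by (metis distr mcomm jC)
  also have "j a (j (m c a) (m c b)) = j (j a (m a c)) (m b c)" using C by (metis jassoc mC mcomm)
  also have "j a (m a c) = a" using C by (simp add: absorb2)
  finally show ?thesis by simp
qed
lemma m_mono: "a \<in> C \<Longrightarrow> b \<in> C \<Longrightarrow> a' \<in> C \<Longrightarrow> b' \<in> C \<Longrightarrow> le a a' \<Longrightarrow> le b b' \<Longrightarrow> le (m a b) (m a' b')"
proof -
  assume C: "a \<in> C" "b \<in> C" "a' \<in> C" "b' \<in> C" and l: "le a a'" "le b b'"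
  have "le (m a b) a'" using le_trans[of "m a b" a a'] C l by simp
  moreover have "le (m a b) b'" using le_trans[of "m a b" b b'] C l by simp
  ultimately show ?thesis using le_m_iff C by simp
qed
lemma j_mono: "a \<in> C \<Longrightarrow> b \<in> C \<Longrightarrow> a' \<in> C \<Longrightarrow> b' \<in> C \<Longrightarrow> le a a' \<Longrightarrow> le b b' \<Longrightarrow> le (j a b) (j a' b')"
proof -
  assume C: "a \<in> C" "b \<in> C" "a' \<in> C" "b' \<in> C" and l: "le a a'" "le b b'"
  have "le a (j a' b')" using le_trans[of a a' "j a' b'"] C l by simp
  moreover have "le b (j a' b')" using le_trans[of b b' "j a' b'"] C l by simp
  ultimately show ?thesis using j_le_iff C by simp
qed

abbreviation pf where "pf \<equiv> lpf C m j z u"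

lemma pfD: assumes P: "pf P"
  shows "P \<subseteq> C" "u \<in> P" "z \<notin> P"
    "\<And>a b. a \<in> P \<Longrightarrow> b \<in> C \<Longrightarrow> le a b \<Longrightarrow> b \<in> P"
    "\<And>a b. a \<in> C \<Longrightarrow> b \<in> C \<Longrightarrow> m a b \<in> P \<longleftrightarrow> a \<in> P \<and> b \<in> P"
    "\<And>a b. a \<in> C \<Longrightarrow> b \<in> C \<Longrightarrow> j a b \<in> P \<longleftrightarrow> a \<in> P \<or> b \<in> P"
proof -
  show PC: "P \<subseteq> C" "u \<in> P" "z \<notin> P" using P unfolding lpf_def by auto
  show up: "\<And>a b. a \<in> P \<Longrightarrow> b \<in> C \<Longrightarrow> le a b \<Longrightarrow> b \<in> P" using P unfolding lpf_def le_def by blast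
  show "m a b \<in> P \<longleftrightarrow> a \<in> P \<and> b \<in> P" if "a \<in> C" "b \<in> C" for a b
    using up[of "m a b" a] up[of "m a b" b] that P unfolding lpf_def by auto
  show "j a b \<in> P \<longleftrightarrow> a \<in> P \<or> b \<in> P" if "a \<in> C" "b \<in> C" for a b
    using up[of a "j a b"] up[of b "j a b"] that P unfolding lpf_def by auto
qed

lemma pf_le: "pf P \<Longrightarrow> a \<in> C \<Longrightarrow> b \<in> C \<Longrightarrow> le a b \<Longrightarrow> a \<in> P \<Longrightarrow> b \<in> P"
  using pfD(4) by blast

definition filt where "filt Q \<longleftrightarrow> Q \<subseteq> C \<and> Q \<noteq> {} \<and> (\<forall>a\<in>Q. \<forall>b\<in>C. le a b \<longrightarrow> b \<in> Q) \<and> (\<forall>a\<in>Q. \<forall>b\<in>Q. m a b \<in> Q)"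
definition idl where "idl J \<longleftrightarrow> J \<subseteq> C \<and> J \<noteq> {} \<and> (\<forall>a\<in>J. \<forall>b\<in>C. le b a \<longrightarrow> b \<in> J) \<and> (\<forall>a\<in>J. \<forall>b\<in>J. j a b \<in> J)"

end

context dlat begin

lemma ext_lemma:
  fixes \<Phi> :: "'a \<Rightarrow> 'a \<Rightarrow> bool"
  assumes mono: "\<And>c d c' d'. c \<in> C \<Longrightarrow> d \<in> C \<Longrightarrow> c' \<in> C \<Longrightarrow> d' \<in> C \<Longrightarrow> \<Phi> c d \<Longrightarrow> le c c' \<Longrightarrow> le d' d \<Longrightarrow> \<Phi> c' d'"
    and key: "\<And>c d x. c \<in> C \<Longrightarrow> d \<in> C \<Longrightarrow> x \<in> C \<Longrightarrow> \<not> \<Phi> (m c x) d \<Longrightarrow> \<not> \<Phi> c (j d x) \<Longrightarrow> \<not> \<Phi> c d"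
    and irr: "\<And>c. c \<in> C \<Longrightarrow> \<not> \<Phi> c c"
    and Q0: "filt Q0" and J0: "idl J0" and QJ0: "\<forall>c\<in>Q0. \<forall>d\<in>J0. \<Phi> c d"
  shows "\<exists>Q. pf Q \<and> Q0 \<subseteq> Q \<and> J0 \<inter> Q = {} \<and> (\<forall>c\<in>Q. \<forall>d\<in>C - Q. \<Phi> c d)"
proof -
  define fs :: "('a \<times> bool) set \<Rightarrow> 'a set" where "fs M = {c. (c, True) \<in> M}" for M
  define ids :: "('a \<times> bool) set \<Rightarrow> 'a set" where "ids M = {c. (c, False) \<in> M}" for M
  define enc :: "'a set \<Rightarrow> 'a set \<Rightarrow> ('a \<times> bool) set" where "enc Q J = Q \<times> {True} \<union> J \<times> {False}" for Q J
  have fs_enc[simp]: "fs (enc Q J) = Q" and ids_enc[simp]: "ids (enc Q J) = J" for Q J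
    by (auto simp: fs_def ids_def enc_def)
  define A where "A = {M. M = enc (fs M) (ids M) \<and> filt (fs M) \<and> idl (ids M) \<and> Q0 \<subseteq> fs M \<and> J0 \<subseteq> ids M
      \<and> (\<forall>c\<in>fs M. \<forall>d\<in>ids M. \<Phi> c d)}"
  have encA: "enc Q J \<in> A \<longleftrightarrow> filt Q \<and> idl J \<and> Q0 \<subseteq> Q \<and> J0 \<subseteq> J \<and> (\<forall>c\<in>Q. \<forall>d\<in>J. \<Phi> c d)" for Q J
    by (simp add: A_def)
  have "\<exists>M\<in>A. \<forall>X\<in>A. M \<subseteq> X \<longrightarrow> X = M"
  proof (rule Zorn_Lemma2, intro ballI)
    fix Ch assume Ch: "Ch \<in> chains A"
    show "\<exists>U\<in>A. \<forall>X\<in>Ch. X \<subseteq> U"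
    proof (cases "Ch = {}")
      case True
      then show ?thesis using Q0 J0 QJ0 by (intro bexI[of _ "enc Q0 J0"]) (auto simp: encA)
    next
      case False
      have sub: "Ch \<subseteq> A" and ch: "\<forall>X\<in>Ch. \<forall>Y\<in>Ch. X \<subseteq> Y \<or> Y \<subseteq> X"
        using Ch by (auto simp: chains_def chain_subset_def)
      have Mfs: "\<And>M. M \<in> Ch \<Longrightarrow> M = enc (fs M) (ids M)" using sub by (auto simp: A_def)
      have fsU: "fs (\<Union>Ch) = (\<Union>M\<in>Ch. fs M)" and isU: "ids (\<Union>Ch) = (\<Union>M\<in>Ch. ids M)"
        by (auto simp: fs_def ids_def)
      have eU: "\<Union>Ch = enc (fs (\<Union>Ch)) (ids (\<Union>Ch))"
        unfolding fsU isU enc_def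
        apply (rule set_eqI) apply (case_tac x) subgoal for x a b
          using Mfs[unfolded enc_def] by (cases b; auto; blast) done
      have mono_fs: "M \<subseteq> N \<Longrightarrow> fs M \<subseteq> fs N" and mono_ids: "M \<subseteq> N \<Longrightarrow> ids M \<subseteq> ids N" for M N
        by (auto simp: fs_def ids_def)
      have two: "\<And>x y. x \<in> \<Union>Ch \<Longrightarrow> y \<in> \<Union>Ch \<Longrightarrow> \<exists>M\<in>Ch. x \<in> M \<and> y \<in> M"
        using ch by blast
      have inA: "\<And>M. M \<in> Ch \<Longrightarrow> filt (fs M) \<and> idl (ids M) \<and> Q0 \<subseteq> fs M \<and> J0 \<subseteq> ids M \<and> (\<forall>c\<in>fs M. \<forall>d\<in>ids M. \<Phi> c d)"
        using sub by (auto simp: A_def)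
      obtain M0 where M0: "M0 \<in> Ch" using False by blast
      have "filt (fs (\<Union>Ch))"
        unfolding filt_def
      proof (intro conjI ballI impI)
        show "fs (\<Union> Ch) \<subseteq> C" unfolding fsU
        proof (intro UN_least)
          fix M assume "M \<in> Ch" then show "fs M \<subseteq> C" using inA[of M] by (simp add: filt_def)
        qed
        show "fs (\<Union> Ch) \<noteq> {}" using inA[OF M0] M0 unfolding fsU filt_def by blast
        show "b \<in> fs (\<Union> Ch)" if "a \<in> fs (\<Union> Ch)" "b \<in> C" "le a b" for a b
        proof -
          from that(1) obtain M where "M \<in> Ch" "a \<in> fs M" unfolding fsU by blast
          then have "b \<in> fs M" using inA[of M] that unfolding filt_def by blast
          then show ?thesis using \<open>M \<in> Ch\<close> unfolding fsU by blast
        qed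
        show "m a b \<in> fs (\<Union> Ch)" if "a \<in> fs (\<Union> Ch)" "b \<in> fs (\<Union> Ch)" for a b
        proof -
          from that two[of "(a,True)" "(b,True)"] obtain M where "M \<in> Ch" "(a,True) \<in> M" "(b,True) \<in> M"
            by (auto simp: fs_def)
          then have "a \<in> fs M" "b \<in> fs M" by (auto simp: fs_def)
          then have "m a b \<in> fs M" using inA[of M] \<open>M \<in> Ch\<close> unfolding filt_def by blast
          then show ?thesis using \<open>M \<in> Ch\<close> unfolding fsU by blast
        qed
      qed
      moreover have "idl (ids (\<Union>Ch))"
        unfolding idl_def
      proof (intro conjI ballI impI)
        show "ids (\<Union> Ch) \<subseteq> C" unfolding isU
        proof (intro UN_least)
          fix M assume "M \<in> Ch" then show "ids M \<subseteq> C" using inA[of M] by (simp add: idl_def)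
        qed
        show "ids (\<Union> Ch) \<noteq> {}" using inA[OF M0] M0 unfolding isU idl_def by blast
        show "b \<in> ids (\<Union> Ch)" if "a \<in> ids (\<Union> Ch)" "b \<in> C" "le b a" for a b
        proof -
          from that(1) obtain M where "M \<in> Ch" "a \<in> ids M" unfolding isU by blast
          then have "b \<in> ids M" using inA[of M] that unfolding idl_def by blast
          then show ?thesis using \<open>M \<in> Ch\<close> unfolding isU by blast
        qed
        show "j a b \<in> ids (\<Union> Ch)" if "a \<in> ids (\<Union> Ch)" "b \<in> ids (\<Union> Ch)" for a b
        proof -
          from that two[of "(a,False)" "(b,False)"] obtain M where "M \<in> Ch" "(a,False) \<in> M" "(b,False) \<in> M"
            by (auto simp: ids_def)
          then have "a \<in> ids M" "b \<in> ids M" by (auto simp: ids_def)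
          then have "j a b \<in> ids M" using inA[of M] \<open>M \<in> Ch\<close> unfolding idl_def by blast
          then show ?thesis using \<open>M \<in> Ch\<close> unfolding isU by blast
        qed
      qed
      moreover have "\<forall>c\<in>fs (\<Union>Ch). \<forall>d\<in>ids (\<Union>Ch). \<Phi> c d"
      proof (intro ballI)
        fix c d assume "c \<in> fs (\<Union>Ch)" "d \<in> ids (\<Union>Ch)"
        with two[of "(c,True)" "(d,False)"] obtain M where "M \<in> Ch" "(c,True) \<in> M" "(d,False) \<in> M"
          by (auto simp: fs_def ids_def)
        then have "c \<in> fs M" "d \<in> ids M" by (auto simp: fs_def ids_def)
        then show "\<Phi> c d" using inA[of M] \<open>M \<in> Ch\<close> by blast
      qed
      moreover have "Q0 \<subseteq> fs (\<Union>Ch)" "J0 \<subseteq> ids (\<Union>Ch)" using inA[OF M0] M0 unfolding fsU isU by auto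
      ultimately have "\<Union>Ch \<in> A" using eU unfolding A_def by auto
      then show ?thesis by blast
    qed
  qed
  then obtain M where MA: "M \<in> A" and Mmax: "\<forall>X\<in>A. M \<subseteq> X \<longrightarrow> X = M" by blast
  define Q where "Q = fs M"
  define J where "J = ids M"
  have M: "M = enc Q J" and fQ: "filt Q" and iJ: "idl J" and "Q0 \<subseteq> Q" "J0 \<subseteq> J"
    and QJ: "\<forall>c\<in>Q. \<forall>d\<in>J. \<Phi> c d"
    using MA by (auto simp: A_def Q_def J_def)
  have max: "Q \<subseteq> Q' \<Longrightarrow> J \<subseteq> J' \<Longrightarrow> enc Q' J' \<in> A \<Longrightarrow> Q' = Q \<and> J' = J" for Q' J'
  proof -
    assume "Q \<subseteq> Q'" "J \<subseteq> J'" "enc Q' J' \<in> A"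
    moreover have "M \<subseteq> enc Q' J'" using \<open>Q \<subseteq> Q'\<close> \<open>J \<subseteq> J'\<close> M by (auto simp: enc_def)
    ultimately have "enc Q' J' = M" using Mmax by blast
    then show ?thesis using M by (metis fs_enc ids_enc)
  qed
  have QC: "Q \<subseteq> C" and JC: "J \<subseteq> C" using fQ iJ by (auto simp: filt_def idl_def)
  have cover: "x \<in> Q \<or> x \<in> J" if xC: "x \<in> C" for x
  proof (rule ccontr)
    assume nx: "\<not> (x \<in> Q \<or> x \<in> J)"
    define Q' where "Q' = {e \<in> C. \<exists>q\<in>Q. le (m q x) e}"
    define J' where "J' = {e \<in> C. \<exists>d\<in>J. le e (j d x)}"
    have QQ': "Q \<subseteq> Q'"
    proof
      fix e assume "e \<in> Q" then have "e \<in> C" using QC by auto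
      moreover have "le (m e x) e" using \<open>e \<in> C\<close> xC by simp
      ultimately show "e \<in> Q'" using \<open>e \<in> Q\<close> unfolding Q'_def by blast
    qed
    have xQ': "x \<in> Q'"
    proof -
      obtain q where "q \<in> Q" using fQ by (auto simp: filt_def)
      moreover have "le (m q x) x" using \<open>q \<in> Q\<close> QC xC by auto
      ultimately show ?thesis unfolding Q'_def using xC by blast
    qed
    have JJ': "J \<subseteq> J'"
    proof
      fix e assume "e \<in> J" then have "e \<in> C" using JC by auto
      moreover have "le e (j e x)" using \<open>e \<in> C\<close> xC by simp
      ultimately show "e \<in> J'" using \<open>e \<in> J\<close> unfolding J'_def by blast
    qed
    have xJ': "x \<in> J'"
    proof -
      obtain d where "d \<in> J" using iJ by (auto simp: idl_def)
      moreover have "le x (j d x)" using \<open>d \<in> J\<close> JC xC by auto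
      ultimately show ?thesis unfolding J'_def using xC by blast
    qed
    have fQ': "filt Q'" unfolding filt_def
    proof (intro conjI ballI impI)
      show "Q' \<subseteq> C" by (auto simp: Q'_def)
      show "Q' \<noteq> {}" using xQ' by auto
      show "b \<in> Q'" if "a \<in> Q'" "b \<in> C" "le a b" for a b
      proof -
        from that obtain q where q: "q \<in> Q" "le (m q x) a" "a \<in> C" unfolding Q'_def by auto
        then have "le (m q x) b" using le_trans[of "m q x" a b] QC xC that by auto
        then show ?thesis using q that unfolding Q'_def by blast
      qed
      show "m a b \<in> Q'" if "a \<in> Q'" "b \<in> Q'" for a b
      proof -
        from that obtain q q' where q: "q \<in> Q" "le (m q x) a" "q' \<in> Q" "le (m q' x) b" "a \<in> C" "b \<in> C"
          unfolding Q'_def by auto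
        have "m q q' \<in> Q" using q fQ by (auto simp: filt_def)
        moreover have "le (m (m q q') x) (m a b)"
        proof -
          have C: "q \<in> C" "q' \<in> C" using q QC by auto
          have 1: "le (m (m q q') x) (m q x)" using C xC m_mono[of "m q q'" x q x] by simp
          have 2: "le (m (m q q') x) (m q' x)" using C xC m_mono[of "m q q'" x q' x] by simp
          have "le (m (m q q') x) a" using le_trans[OF _ _ _ 1 q(2)] C xC q by simp
          moreover have "le (m (m q q') x) b" using le_trans[OF _ _ _ 2 q(4)] C xC q by simp
          ultimately show ?thesis using le_m_iff C xC q by simp
        qed
        ultimately show ?thesis using q unfolding Q'_def by auto
      qed
    qed
    have iJ': "idl J'" unfolding idl_def
    proof (intro conjI ballI impI)
      show "J' \<subseteq> C" by (auto simp: J'_def)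
      show "J' \<noteq> {}" using xJ' by auto
      show "b \<in> J'" if "a \<in> J'" "b \<in> C" "le b a" for a b
      proof -
        from that obtain d where d: "d \<in> J" "le a (j d x)" "a \<in> C" unfolding J'_def by auto
        then have "le b (j d x)" using le_trans[of b a "j d x"] JC xC that by auto
        then show ?thesis using d that unfolding J'_def by blast
      qed
      show "j a b \<in> J'" if "a \<in> J'" "b \<in> J'" for a b
      proof -
        from that obtain d d' where d: "d \<in> J" "le a (j d x)" "d' \<in> J" "le b (j d' x)" "a \<in> C" "b \<in> C"
          unfolding J'_def by auto
        have "j d d' \<in> J" using d iJ by (auto simp: idl_def)
        moreover have "le (j a b) (j (j d d') x)"
        proof -
          have C: "d \<in> C" "d' \<in> C" using d JC by auto
          have 1: "le (j d x) (j (j d d') x)" using C xC j_mono[of d x "j d d'" x] by simp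
          have 2: "le (j d' x) (j (j d d') x)" using C xC j_mono[of d' x "j d d'" x] by simp
          have "le a (j (j d d') x)" using le_trans[OF _ _ _ d(2) 1] C xC d by simp
          moreover have "le b (j (j d d') x)" using le_trans[OF _ _ _ d(4) 2] C xC d by simp
          ultimately show ?thesis using j_le_iff C xC d by simp
        qed
        ultimately show ?thesis using d unfolding J'_def by auto
      qed
    qed
    have "\<not> (\<forall>c\<in>Q'. \<forall>d\<in>J. \<Phi> c d)"
    proof
      assume "\<forall>c\<in>Q'. \<forall>d\<in>J. \<Phi> c d"
      then have "enc Q' J \<in> A" using fQ' iJ \<open>Q0 \<subseteq> Q\<close> \<open>J0 \<subseteq> J\<close> QQ' by (auto simp: encA)
      then have "Q' = Q" using max QQ' by blast
      then show False using xQ' nx by blast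
    qed
    then obtain c d where cd: "c \<in> Q'" "d \<in> J" "\<not> \<Phi> c d" by blast
    then obtain q where q: "q \<in> Q" "le (m q x) c" "c \<in> C" unfolding Q'_def by auto
    have qd: "q \<in> C" "d \<in> C" using q cd QC JC by auto
    have n1: "\<not> \<Phi> (m q x) d"
      using mono[of "m q x" d c d] q cd qd xC by auto
    have "\<not> (\<forall>c\<in>Q. \<forall>d\<in>J'. \<Phi> c d)"
    proof
      assume "\<forall>c\<in>Q. \<forall>d\<in>J'. \<Phi> c d"
      then have "enc Q J' \<in> A" using fQ iJ' \<open>Q0 \<subseteq> Q\<close> \<open>J0 \<subseteq> J\<close> JJ' by (auto simp: encA)
      then have "J' = J" using max JJ' by blast
      then show False using xJ' nx by blast
    qed
    then obtain c' e where ce: "c' \<in> Q" "e \<in> J'" "\<not> \<Phi> c' e" by blast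
    then obtain d' where d': "d' \<in> J" "le e (j d' x)" "e \<in> C" unfolding J'_def by auto
    have cd': "c' \<in> C" "d' \<in> C" using ce d' QC JC by auto
    have n2: "\<not> \<Phi> c' (j d' x)"
      using mono[of c' "j d' x" c' e] d' ce cd' xC by auto
    define q'' where "q'' = m q c'"
    define d'' where "d'' = j d d'"
    have q''Q: "q'' \<in> Q" using q ce fQ by (auto simp: filt_def q''_def)
    have d''J: "d'' \<in> J" using cd d' iJ by (auto simp: idl_def d''_def)
    have qC: "q \<in> C" "c' \<in> C" "d \<in> C" "d' \<in> C" using q ce cd d' QC JC by auto
    have "\<not> \<Phi> (m q'' x) d''"
    proof
      assume "\<Phi> (m q'' x) d''"
      moreover have "le (m q'' x) (m q x)" using qC xC unfolding q''_def by (meson m_mono le_refl mC m_le1)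
      moreover have "le d d''" using qC unfolding d''_def by simp
      ultimately have "\<Phi> (m q x) d" using mono[of "m q'' x" d'' "m q x" d] qC xC by (auto simp: q''_def d''_def)
      then show False using n1 by blast
    qed
    moreover have "\<not> \<Phi> q'' (j d'' x)"
    proof
      assume "\<Phi> q'' (j d'' x)"
      moreover have "le q'' c'" using qC unfolding q''_def by simp
      moreover have "le (j d' x) (j d'' x)" using qC xC unfolding d''_def by (meson j_mono le_refl jC j_ge2)
      ultimately have "\<Phi> c' (j d' x)" using mono[of q'' "j d'' x" c' "j d' x"] qC xC by (auto simp: q''_def d''_def)
      then show False using n2 by blast
    qed
    ultimately have "\<not> \<Phi> q'' d''" using key[of q'' d'' x] qC xC by (auto simp: q''_def d''_def)
    then show False using QJ q''Q d''J by blast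
  qed
  have disj: "Q \<inter> J = {}" using QJ irr QC by blast
  have "pf Q"
    unfolding lpf_def
  proof (intro conjI ballI impI)
    show "Q \<subseteq> C" by (rule QC)
    show "u \<in> Q" using fQ unfolding filt_def by (metis all_not_in_conv le_u subsetD uC)
    have "z \<in> J" using iJ unfolding idl_def by (metis all_not_in_conv z_le subsetD zC)
    then show "z \<notin> Q" using disj by blast
    show "b \<in> Q" if "a \<in> Q" "b \<in> C" "m a b = a" for a b using that fQ unfolding filt_def le_def by blast
    show "m a b \<in> Q" if "a \<in> Q" "b \<in> Q" for a b using that fQ unfolding filt_def by blast
    show "a \<in> Q \<or> b \<in> Q" if "a \<in> C" "b \<in> C" "j a b \<in> Q" for a b
    proof (rule ccontr)
      assume "\<not> (a \<in> Q \<or> b \<in> Q)"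
      then have "a \<in> J" "b \<in> J" using cover that by auto
      then have "j a b \<in> J" using iJ by (auto simp: idl_def)
      then show False using that disj by blast
    qed
  qed
  moreover have "J0 \<inter> Q = {}" using \<open>J0 \<subseteq> J\<close> disj by blast
  moreover have "\<forall>c\<in>Q. \<forall>d\<in>C - Q. \<Phi> c d" using QJ cover by blast
  ultimately show ?thesis using \<open>Q0 \<subseteq> Q\<close> by blast
qed

end

context dlat begin

fun meetl where "meetl [] = u" | "meetl (x # xs) = m x (meetl xs)"
fun joinl where "joinl [] = z" | "joinl (x # xs) = j x (joinl xs)"

lemma meetlC[simp]: "set xs \<subseteq> C \<Longrightarrow> meetl xs \<in> C" by (induction xs) auto
lemma joinlC[simp]: "set xs \<subseteq> C \<Longrightarrow> joinl xs \<in> C" by (induction xs) auto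

lemma meetl_append: "set xs \<subseteq> C \<Longrightarrow> set ys \<subseteq> C \<Longrightarrow> meetl (xs @ ys) = m (meetl xs) (meetl ys)"
  by (induction xs) (auto simp: massoc)
lemma joinl_append: "set xs \<subseteq> C \<Longrightarrow> set ys \<subseteq> C \<Longrightarrow> joinl (xs @ ys) = j (joinl xs) (joinl ys)"
  by (induction xs) (auto simp: jassoc)

lemma pf_meetl: assumes "pf P" shows "set xs \<subseteq> C \<Longrightarrow> meetl xs \<in> P \<longleftrightarrow> (\<forall>x\<in>set xs. x \<in> P)"
  by (induction xs) (simp_all add: pfD(2)[OF assms] pfD(5)[OF assms])
lemma pf_joinl: assumes "pf P" shows "set xs \<subseteq> C \<Longrightarrow> joinl xs \<in> P \<longleftrightarrow> (\<exists>x\<in>set xs. x \<in> P)"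
  by (induction xs) (simp_all add: pfD(3)[OF assms] pfD(6)[OF assms])

lemma le_key: assumes C: "c \<in> C" "d \<in> C" "x \<in> C" and 1: "le (m c x) d" and 2: "le c (j d x)"
  shows "le c d"
proof -
  have "c = m c (j d x)" using 2 by (simp add: le_def)
  also have "\<dots> = j (m c d) (m c x)" using C by (simp add: distr)
  finally have e: "c = j (m c d) (m c x)" .
  have "le (m c d) d" using C by simp
  then have "le (j (m c d) (m c x)) d" using 1 C j_le_iff by simp
  then show ?thesis using e by simp
qed

lemma sep_lists:
  assumes As: "As \<subseteq> C" and Bs: "Bs \<subseteq> C"
    and no: "\<not> (\<exists>xs ys. set xs \<subseteq> Bs \<and> set ys \<subseteq> As \<and> le (meetl xs) (joinl ys))"
  shows "\<exists>P. pf P \<and> Bs \<subseteq> P \<and> As \<inter> P = {}"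
proof -
  define Q0 where "Q0 = {e \<in> C. \<exists>xs. set xs \<subseteq> Bs \<and> le (meetl xs) e}"
  define J0 where "J0 = {e \<in> C. \<exists>ys. set ys \<subseteq> As \<and> le e (joinl ys)}"
  have BQ: "Bs \<subseteq> Q0"
  proof
    fix b assume b: "b \<in> Bs"
    then have "b \<in> C" using Bs by auto
    then have "le (meetl [b]) b" by simp
    then show "b \<in> Q0" using b \<open>b \<in> C\<close> unfolding Q0_def by (metis (mono_tags, lifting) empty_set empty_subsetI insert_subset list.simps(15) mem_Collect_eq)
  qed
  have AJ: "As \<subseteq> J0"
  proof
    fix b assume b: "b \<in> As"
    then have "b \<in> C" using As by auto
    then have "le b (joinl [b])" by simp
    then show "b \<in> J0" using b \<open>b \<in> C\<close> unfolding J0_def by (metis (mono_tags, lifting) empty_set empty_subsetI insert_subset list.simps(15) mem_Collect_eq)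
  qed
  have fQ: "filt Q0" unfolding filt_def
  proof (intro conjI ballI impI)
    show "Q0 \<subseteq> C" by (auto simp: Q0_def)
    have "u \<in> Q0" unfolding Q0_def by (metis (mono_tags, lifting) empty_set empty_subsetI le_refl mem_Collect_eq meetl.simps(1) uC)
    then show "Q0 \<noteq> {}" by auto
    show "b \<in> Q0" if "a \<in> Q0" "b \<in> C" "le a b" for a b
    proof -
      from that obtain xs where xs: "set xs \<subseteq> Bs" "le (meetl xs) a" "a \<in> C" unfolding Q0_def by auto
      have "le (meetl xs) b" using le_trans[OF _ _ _ xs(2) that(3)] xs that Bs by auto
      then show ?thesis using xs that unfolding Q0_def by blast
    qed
    show "m a b \<in> Q0" if "a \<in> Q0" "b \<in> Q0" for a b
    proof -
      from that obtain xs ys where xs: "set xs \<subseteq> Bs" "le (meetl xs) a" "a \<in> C" "set ys \<subseteq> Bs" "le (meetl ys) b" "b \<in> C"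
        unfolding Q0_def by auto
      have C: "set xs \<subseteq> C" "set ys \<subseteq> C" using xs Bs by auto
      have "le (meetl (xs @ ys)) (m a b)" using meetl_append[OF C] m_mono[OF _ _ _ _ xs(2) xs(5)] C xs by simp
      moreover have "set (xs @ ys) \<subseteq> Bs" using xs by auto
      moreover have "m a b \<in> C" using xs by simp
      ultimately show ?thesis unfolding Q0_def by blast
    qed
  qed
  have iJ: "idl J0" unfolding idl_def
  proof (intro conjI ballI impI)
    show "J0 \<subseteq> C" by (auto simp: J0_def)
    have "z \<in> J0" unfolding J0_def by (metis (mono_tags, lifting) empty_set empty_subsetI le_refl mem_Collect_eq joinl.simps(1) zC)
    then show "J0 \<noteq> {}" by auto
    show "b \<in> J0" if "a \<in> J0" "b \<in> C" "le b a" for a b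
    proof -
      from that obtain xs where xs: "set xs \<subseteq> As" "le a (joinl xs)" "a \<in> C" unfolding J0_def by auto
      have "le b (joinl xs)" using le_trans[OF _ _ _ that(3) xs(2)] xs that As by auto
      then show ?thesis using xs that unfolding J0_def by blast
    qed
    show "j a b \<in> J0" if "a \<in> J0" "b \<in> J0" for a b
    proof -
      from that obtain xs ys where xs: "set xs \<subseteq> As" "le a (joinl xs)" "a \<in> C" "set ys \<subseteq> As" "le b (joinl ys)" "b \<in> C"
        unfolding J0_def by auto
      have C: "set xs \<subseteq> C" "set ys \<subseteq> C" using xs As by auto
      have "le (j a b) (joinl (xs @ ys))" using joinl_append[OF C] j_mono[OF _ _ _ _ xs(2) xs(5)] C xs by simp
      moreover have "set (xs @ ys) \<subseteq> As" using xs by auto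
      moreover have "j a b \<in> C" using xs by simp
      ultimately show ?thesis unfolding J0_def by blast
    qed
  qed
  have QJ: "\<forall>c\<in>Q0. \<forall>d\<in>J0. \<not> le c d"
  proof (intro ballI notI)
    fix c d assume "c \<in> Q0" "d \<in> J0" "le c d"
    then obtain xs ys where xs: "set xs \<subseteq> Bs" "le (meetl xs) c" "c \<in> C" "set ys \<subseteq> As" "le d (joinl ys)" "d \<in> C"
      unfolding Q0_def J0_def by auto
    have C: "set xs \<subseteq> C" "set ys \<subseteq> C" using xs As Bs by auto
    have "le (meetl xs) d" using le_trans[OF _ _ _ xs(2) \<open>le c d\<close>] C xs by simp
    then have "le (meetl xs) (joinl ys)" using le_trans[OF _ _ _ _ xs(5)] C xs by simp
    then show False using no xs by blast
  qed
  have "\<exists>Q. pf Q \<and> Q0 \<subseteq> Q \<and> J0 \<inter> Q = {} \<and> (\<forall>c\<in>Q. \<forall>d\<in>C - Q. \<not> le c d)"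
  proof (rule ext_lemma[OF _ _ _ fQ iJ QJ])
    show "\<not> le c' d'" if "c \<in> C" "d \<in> C" "c' \<in> C" "d' \<in> C" "\<not> le c d" "le c c'" "le d' d" for c d c' d'
      using that by (meson le_trans)
    show "\<not> \<not> le c d" if "c \<in> C" "d \<in> C" "x \<in> C" "\<not> \<not> le (m c x) d" "\<not> \<not> le c (j d x)" for c d x
      using le_key that by blast
    show "\<not> \<not> le c c" if "c \<in> C" for c using that by simp
  qed
  then show ?thesis using BQ AJ by blast
qed

lemma sep: assumes "a \<in> C" "b \<in> C" "\<not> le a b" shows "\<exists>P. pf P \<and> a \<in> P \<and> b \<notin> P"
proof -
  have "\<not> (\<exists>xs ys. set xs \<subseteq> {a} \<and> set ys \<subseteq> {b} \<and> le (meetl xs) (joinl ys))"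
  proof
    assume "\<exists>xs ys. set xs \<subseteq> {a} \<and> set ys \<subseteq> {b} \<and> le (meetl xs) (joinl ys)"
    then obtain xs ys where xs: "set xs \<subseteq> {a}" "set ys \<subseteq> {b}" "le (meetl xs) (joinl ys)" by blast
    have C: "set xs \<subseteq> C" "set ys \<subseteq> C" using xs assms by auto
    have "le a (meetl xs) \<and> meetl xs \<in> C" using xs(1) assms(1) by (induction xs) (auto simp: le_m_iff)
    moreover have "le (joinl ys) b \<and> joinl ys \<in> C" using xs(2) assms(2) by (induction ys) (auto simp: j_le_iff)
    ultimately have "le a b" using xs(3) C assms by (meson le_trans meetlC joinlC)
    then show False using assms by blast
  qed
  from sep_lists[of "{b}" "{a}", OF _ _ this] assms show ?thesis by auto
qed

lemma le_pf: "a \<in> C \<Longrightarrow> b \<in> C \<Longrightarrow> le a b \<longleftrightarrow> (\<forall>P. pf P \<longrightarrow> a \<in> P \<longrightarrow> b \<in> P)"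
  using sep pf_le by blast

lemma eq_pf: "a \<in> C \<Longrightarrow> b \<in> C \<Longrightarrow> (\<And>P. pf P \<Longrightarrow> a \<in> P \<longleftrightarrow> b \<in> P) \<Longrightarrow> a = b"
  using le_pf le_antisym by metis

definition upset where "upset a = {e \<in> C. le a e}"
definition downset where "downset a = {e \<in> C. le e a}"

lemma filt_upset: "a \<in> C \<Longrightarrow> filt (upset a)"
  unfolding filt_def upset_def by (auto intro: le_trans simp: le_m_iff)
lemma idl_downset: "a \<in> C \<Longrightarrow> idl (downset a)"
  unfolding idl_def downset_def by (auto intro: le_trans simp: j_le_iff)

end

locale whb_alg =
  fixes A :: "('a, 'b) whb_scheme"
  assumes whb: "is_whb A"
begin

sublocale dlat "wcar A" "wmeet A" "wjoin A" "wzero A" "wone A"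
  using whb by (unfold_locales) (simp add: is_whb_def)

lemma wle_le: "wle A a b \<longleftrightarrow> le a b" by (simp add: wle_def le_def)
lemma pfs_eq: "prime_filters A = Collect pf" unfolding prime_filters_def lpf_def wle_def by simp

abbreviation "imp \<equiv> wimp A"
abbreviation "coimp \<equiv> wcoimp A"

lemma impC[simp]: "a \<in> wcar A \<Longrightarrow> b \<in> wcar A \<Longrightarrow> imp a b \<in> wcar A"
  and coimpC[simp]: "a \<in> wcar A \<Longrightarrow> b \<in> wcar A \<Longrightarrow> coimp a b \<in> wcar A"
  using whb unfolding is_whb_def by blast+

context
  fixes a b c assumes abc: "a \<in> wcar A" "b \<in> wcar A" "c \<in> wcar A"
begin
lemma ax: "imp a a = wone A"
    "imp a (wmeet A b c) = wmeet A (imp a b) (imp a c)"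
    "imp (wjoin A a b) c = wmeet A (imp a c) (imp b c)"
    "le (wmeet A (imp a b) (imp b c)) (imp a c)"
    "coimp a a = wzero A"
    "coimp (wjoin A a b) c = wjoin A (coimp a c) (coimp b c)"
    "coimp a (wmeet A b c) = wjoin A (coimp a b) (coimp a c)"
    "le (coimp a c) (wjoin A (coimp a b) (coimp b c))"
    "le (wmeet A a (coimp (imp a b) (wzero A))) b"
    "le a (wjoin A b (imp (wone A) (coimp a b)))"
  using whb abc unfolding is_whb_def wle_le by blast+
end

lemma imp_refl[simp]: "a \<in> wcar A \<Longrightarrow> imp a a = wone A" using ax(1) by blast
lemma coimp_refl[simp]: "a \<in> wcar A \<Longrightarrow> coimp a a = wzero A" using ax(5) by blast

lemma imp_le: assumes "a \<in> wcar A" "b \<in> wcar A" "le a b" shows "imp a b = wone A"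
proof -
  have "wjoin A a b = b" using assms le_iff_j by blast
  then have "imp b b = wmeet A (imp a b) (imp b b)" using ax(3)[of a b b] assms by simp
  then show ?thesis using assms by simp
qed

lemma coimp_le: assumes "a \<in> wcar A" "b \<in> wcar A" "le a b" shows "coimp a b = wzero A"
proof -
  have "wjoin A a b = b" using assms le_iff_j by blast
  then have "coimp b b = wjoin A (coimp a b) (coimp b b)" using ax(6)[of a b b] assms by simp
  then show ?thesis using assms by simp
qed

lemma imp_mono2: assumes "a \<in> wcar A" "b \<in> wcar A" "b' \<in> wcar A" "le b b'" shows "le (imp a b) (imp a b')"
proof -
  have "wmeet A b b' = b" using assms by (simp add: le_def)
  then have "imp a b = wmeet A (imp a b) (imp a b')" using ax(2)[of a b b'] assms by simp
  then show ?thesis by (simp add: le_def)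
qed

lemma imp_anti1: assumes "a \<in> wcar A" "a' \<in> wcar A" "b \<in> wcar A" "le a a'" shows "le (imp a' b) (imp a b)"
proof -
  have "wjoin A a a' = a'" using assms le_iff_j by blast
  then have "imp a' b = wmeet A (imp a b) (imp a' b)" using ax(3)[of a a' b] assms by simp
  then show ?thesis using assms by (metis le_def mcomm impC)
qed

lemma coimp_mono1: assumes "a \<in> wcar A" "a' \<in> wcar A" "b \<in> wcar A" "le a a'" shows "le (coimp a b) (coimp a' b)"
proof -
  have "wjoin A a a' = a'" using assms le_iff_j by blast
  then have "coimp a' b = wjoin A (coimp a b) (coimp a' b)" using ax(6)[of a a' b] assms by simp
  then show ?thesis using assms le_iff_j by simp
qed

lemma coimp_anti2: assumes "a \<in> wcar A" "b \<in> wcar A" "b' \<in> wcar A" "le b b'" shows "le (coimp a b') (coimp a b)"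
proof -
  have "wmeet A b b' = b" using assms by (simp add: le_def)
  then have "coimp a b = wjoin A (coimp a b) (coimp a b')" using ax(7)[of a b b'] assms by simp
  then show ?thesis using assms le_iff_j by (metis jcomm coimpC)
qed

lemma R_lemma:
  assumes P: "pf P" and ab: "a \<in> wcar A" "b \<in> wcar A" and nab: "imp a b \<notin> P"
  shows "\<exists>Q. pf Q \<and> (P, Q) \<in> wR A \<and> a \<in> Q \<and> b \<notin> Q"
proof -
  define \<Phi> where "\<Phi> c d \<longleftrightarrow> imp c d \<notin> P" for c d
  have mono: "\<Phi> c' d'" if "c \<in> wcar A" "d \<in> wcar A" "c' \<in> wcar A" "d' \<in> wcar A" "\<Phi> c d" "le c c'" "le d' d" for c d c' d'
  proof (rule ccontr)
    assume "\<not> \<Phi> c' d'"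
    then have 1: "imp c' d' \<in> P" by (simp add: \<Phi>_def)
    have "le (imp c' d') (imp c d')" using imp_anti1 that by simp
    moreover have "le (imp c d') (imp c d)" using imp_mono2 that by simp
    ultimately have "le (imp c' d') (imp c d)" using that le_trans impC by meson
    then have "imp c d \<in> P" using pf_le[OF P _ _ _ 1] that by simp
    then show False using that by (simp add: \<Phi>_def)
  qed
  have key: "\<not> \<Phi> c d" if C: "c \<in> wcar A" "d \<in> wcar A" "x \<in> wcar A" and 1: "\<not> \<Phi> (wmeet A c x) d" and 2: "\<not> \<Phi> c (wjoin A d x)" for c d x
  proof -
    define m' where "m' = wmeet A c (wjoin A d x)"
    have m'C: "m' \<in> wcar A" using C by (simp add: m'_def)
    have "imp c m' = wmeet A (imp c c) (imp c (wjoin A d x))" using ax(2) C by (simp add: m'_def)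
    then have e1: "imp c m' = imp c (wjoin A d x)" using C by simp
    have "m' = wjoin A (wmeet A c d) (wmeet A c x)" using C distr by (simp add: m'_def)
    then have "imp m' d = wmeet A (imp (wmeet A c d) d) (imp (wmeet A c x) d)" using ax(3) C by simp
    also have "imp (wmeet A c d) d = wone A" using imp_le C by simp
    finally have e2: "imp m' d = imp (wmeet A c x) d" using C by simp
    have "wmeet A (imp c m') (imp m' d) \<in> P"
      using 1 2 e1 e2 P pfD(5)[OF P] C m'C by (simp add: \<Phi>_def)
    moreover have "le (wmeet A (imp c m') (imp m' d)) (imp c d)" using ax(4) C m'C by blast
    ultimately show ?thesis using pf_le[OF P] C m'C by (simp add: \<Phi>_def) (meson impC mC)
  qed
  have irr: "\<not> \<Phi> c c" if "c \<in> wcar A" for c using that pfD(2)[OF P] by (simp add: \<Phi>_def)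
  have QJ: "\<forall>c\<in>upset a. \<forall>d\<in>downset b. \<Phi> c d"
    using mono[of a b] ab nab by (auto simp: upset_def downset_def \<Phi>_def)
  obtain Q where Q: "pf Q" "upset a \<subseteq> Q" "downset b \<inter> Q = {}" "\<forall>c\<in>Q. \<forall>d\<in>wcar A - Q. \<Phi> c d"
  proof -
    have "\<exists>Q. pf Q \<and> upset a \<subseteq> Q \<and> downset b \<inter> Q = {} \<and> (\<forall>c\<in>Q. \<forall>d\<in>wcar A - Q. \<Phi> c d)"
      by (rule ext_lemma[where \<Phi>=\<Phi>, OF _ _ _ filt_upset[OF ab(1)] idl_downset[OF ab(2)] QJ]) (fact mono, fact key, fact irr)
    then show ?thesis using that by blast
  qed
  have "a \<in> Q" "b \<notin> Q" using Q(2,3) ab by (auto simp: upset_def downset_def)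
  moreover have "(P, Q) \<in> wR A"
    unfolding wR_def pfs_eq using P Q(1,4) by (auto simp: \<Phi>_def)
  ultimately show ?thesis using Q(1) by blast
qed

lemma S_lemma:
  assumes P: "pf P" and ab: "a \<in> wcar A" "b \<in> wcar A" and nab: "coimp a b \<in> P"
  shows "\<exists>Q. pf Q \<and> (P, Q) \<in> wS A \<and> a \<in> Q \<and> b \<notin> Q"
proof -
  define \<Phi> where "\<Phi> c d \<longleftrightarrow> coimp c d \<in> P" for c d
  have mono: "\<Phi> c' d'" if "c \<in> wcar A" "d \<in> wcar A" "c' \<in> wcar A" "d' \<in> wcar A" "\<Phi> c d" "le c c'" "le d' d" for c d c' d'
  proof -
    have 1: "coimp c d \<in> P" using that by (simp add: \<Phi>_def)
    have "le (coimp c d) (coimp c d')" using coimp_anti2 that by simp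
    moreover have "le (coimp c d') (coimp c' d')" using coimp_mono1 that by simp
    ultimately have "le (coimp c d) (coimp c' d')" using that le_trans coimpC by meson
    then have "coimp c' d' \<in> P" using pf_le[OF P _ _ _ 1] that by simp
    then show ?thesis by (simp add: \<Phi>_def)
  qed
  have key: "\<not> \<Phi> c d" if C: "c \<in> wcar A" "d \<in> wcar A" "x \<in> wcar A" and 1: "\<not> \<Phi> (wmeet A c x) d" and 2: "\<not> \<Phi> c (wjoin A d x)" for c d x
  proof -
    define m' where "m' = wmeet A c (wjoin A d x)"
    have m'C: "m' \<in> wcar A" using C by (simp add: m'_def)
    have "coimp c m' = wjoin A (coimp c c) (coimp c (wjoin A d x))" using ax(7) C by (simp add: m'_def)
    then have e1: "coimp c m' = coimp c (wjoin A d x)" using C by simp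
    have "m' = wjoin A (wmeet A c d) (wmeet A c x)" using C distr by (simp add: m'_def)
    then have "coimp m' d = wjoin A (coimp (wmeet A c d) d) (coimp (wmeet A c x) d)" using ax(6) C by simp
    also have "coimp (wmeet A c d) d = wzero A" using coimp_le C by simp
    finally have e2: "coimp m' d = coimp (wmeet A c x) d" using C by simp
    have "wjoin A (coimp c m') (coimp m' d) \<notin> P"
      using 1 2 e1 e2 P pfD(6)[OF P] C m'C by (simp add: \<Phi>_def)
    moreover have "le (coimp c d) (wjoin A (coimp c m') (coimp m' d))" using ax(8) C m'C by blast
    ultimately show ?thesis using pf_le[OF P] C m'C by (simp add: \<Phi>_def) (meson coimpC jC)
  qed
  have irr: "\<not> \<Phi> c c" if "c \<in> wcar A" for c using that pfD(3)[OF P] by (simp add: \<Phi>_def)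
  have QJ: "\<forall>c\<in>upset a. \<forall>d\<in>downset b. \<Phi> c d"
    using mono[of a b] ab nab by (auto simp: upset_def downset_def \<Phi>_def)
  obtain Q where Q: "pf Q" "upset a \<subseteq> Q" "downset b \<inter> Q = {}" "\<forall>c\<in>Q. \<forall>d\<in>wcar A - Q. \<Phi> c d"
  proof -
    have "\<exists>Q. pf Q \<and> upset a \<subseteq> Q \<and> downset b \<inter> Q = {} \<and> (\<forall>c\<in>Q. \<forall>d\<in>wcar A - Q. \<Phi> c d)"
      by (rule ext_lemma[where \<Phi>=\<Phi>, OF _ _ _ filt_upset[OF ab(1)] idl_downset[OF ab(2)] QJ]) (fact mono, fact key, fact irr)
    then show ?thesis using that by blast
  qed
  have "a \<in> Q" "b \<notin> Q" using Q(2,3) ab by (auto simp: upset_def downset_def)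
  moreover have "(P, Q) \<in> wS A"
    unfolding wS_def pfs_eq using P Q(1,4) by (auto simp: \<Phi>_def)
  ultimately show ?thesis using Q(1) by blast
qed

lemma S_R_conv: "(P, Q) \<in> wS A \<longleftrightarrow> (Q, P) \<in> wR A"
proof
  assume S: "(P, Q) \<in> wS A"
  then have PQ: "pf P" "pf Q" by (auto simp: wS_def pfs_eq)
  show "(Q, P) \<in> wR A" unfolding wR_def pfs_eq
  proof (clarsimp simp: PQ)
    fix c d assume cd: "c \<in> wcar A" "d \<in> wcar A" "imp c d \<in> Q" "c \<in> P"
    have "coimp (imp c d) (wzero A) \<in> P" using S cd pfD(3)[OF PQ(2)] unfolding wS_def by auto
    then have "wmeet A c (coimp (imp c d) (wzero A)) \<in> P" using cd pfD(5)[OF PQ(1)] by simp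
    then show "d \<in> P" using ax(9)[of c d] cd pf_le[OF PQ(1)] by (meson coimpC impC mC zC)
  qed
next
  assume R: "(Q, P) \<in> wR A"
  then have PQ: "pf P" "pf Q" by (auto simp: wR_def pfs_eq)
  show "(P, Q) \<in> wS A" unfolding wS_def pfs_eq
  proof (clarsimp simp: PQ)
    fix c d assume cd: "c \<in> wcar A" "d \<in> wcar A" "c \<in> Q" "d \<notin> Q"
    have "wjoin A d (imp (wone A) (coimp c d)) \<in> Q" using ax(10)[of c d] cd pf_le[OF PQ(2)] by (meson coimpC impC jC uC)
    then have "imp (wone A) (coimp c d) \<in> Q" using cd pfD(6)[OF PQ(2)] by simp
    moreover have "\<forall>a\<in>wcar A. \<forall>b\<in>wcar A. imp a b \<in> Q \<longrightarrow> a \<in> P \<longrightarrow> b \<in> P" using R unfolding wR_def by blast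
    ultimately show "coimp c d \<in> P" using cd pfD(2)[OF PQ(1)] uC coimpC by blast
  qed
qed

end

definition cnf :: "('a, 'b) whb_scheme \<Rightarrow> ('a \<times> 'a) list \<Rightarrow> 'a set set" where
  "cnf A ps = {P \<in> prime_filters A. \<forall>(a, b) \<in> set ps. a \<in> P \<longrightarrow> b \<in> P}"

definition box :: "('a, 'b) whb_scheme \<Rightarrow> 'a \<Rightarrow> 'a \<Rightarrow> 'a set set" where
  "box A a b = {P \<in> prime_filters A. a \<in> P \<and> b \<notin> P}"

context whb_alg begin

abbreviation "pfs \<equiv> prime_filters A"

definition SB where "SB = ({pfs} \<union> (wsigma A ` wcar A) \<union> ((\<lambda>a. pfs - wsigma A a) ` wcar A))"

lemma wtop_SB: "wtop A = topology_generated_by SB" by (simp add: wtop_def SB_def)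

lemma topspace_wtop[simp]: "topspace (wtop A) = pfs"
  unfolding wtop_SB by (auto simp: SB_def wsigma_def)

lemma SB_open: "s \<in> SB \<Longrightarrow> openin (wtop A) s"
  unfolding wtop_SB by (rule topology_generated_by_Basis)

lemma sigma_open: "a \<in> wcar A \<Longrightarrow> openin (wtop A) (wsigma A a)"
  by (rule SB_open) (auto simp: SB_def)
lemma nsigma_open: "a \<in> wcar A \<Longrightarrow> openin (wtop A) (pfs - wsigma A a)"
  by (rule SB_open) (auto simp: SB_def)
lemma sigma_closed: "a \<in> wcar A \<Longrightarrow> closedin (wtop A) (wsigma A a)"
proof -
  assume a: "a \<in> wcar A"
  have "pfs - (pfs - wsigma A a) = wsigma A a" by (auto simp: wsigma_def)
  then show ?thesis using nsigma_open[OF a] unfolding closedin_def by (auto simp: wsigma_def)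
qed
lemma nsigma_closed: "a \<in> wcar A \<Longrightarrow> closedin (wtop A) (pfs - wsigma A a)"
proof -
  assume a: "a \<in> wcar A"
  have "pfs - (pfs - wsigma A a) = wsigma A a" by (auto simp: wsigma_def)
  then show ?thesis using sigma_open[OF a] unfolding closedin_def by auto
qed

lemma cnf_Cons: "cnf A ((a, b) # ps) = ((pfs - wsigma A a) \<union> wsigma A b) \<inter> cnf A ps"
  by (auto simp: cnf_def wsigma_def)
lemma cnf_Nil: "cnf A [] = pfs" by (simp add: cnf_def)
lemma cnf_sub: "cnf A ps \<subseteq> pfs" by (auto simp: cnf_def)

lemma cnf_clopen: "set ps \<subseteq> wcar A \<times> wcar A \<Longrightarrow> openin (wtop A) (cnf A ps) \<and> closedin (wtop A) (cnf A ps)"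
proof (induction ps)
  case Nil
  then show ?case using openin_topspace[of "wtop A"] closedin_topspace[of "wtop A"] by (simp add: cnf_Nil)
next
  case (Cons p ps)
  obtain a b where p: "p = (a, b)" by fastforce
  have ab: "a \<in> wcar A" "b \<in> wcar A" using Cons.prems p by auto
  have IH: "openin (wtop A) (cnf A ps)" "closedin (wtop A) (cnf A ps)" using Cons by auto
  show ?case unfolding p cnf_Cons
    using IH sigma_open[OF ab(2)] nsigma_open[OF ab(1)] sigma_closed[OF ab(2)] nsigma_closed[OF ab(1)]
    by blast
qed

lemma open_boxes:
  assumes "openin (wtop A) W" "P \<in> W"
  shows "\<exists>a\<in>wcar A. \<exists>b\<in>wcar A. P \<in> box A a b \<and> box A a b \<subseteq> W"
proof -
  have "generate_topology_on SB W" using assms(1) unfolding wtop_SB by (rule openin_topology_generated_by)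
  then show ?thesis using assms(2)
  proof (induction arbitrary: P rule: generate_topology_on.induct)
    case Empty then show ?case by simp
  next
    case (Int s t)
    from Int.IH(1)[OF IntD1[OF Int.prems]] obtain a b where ab: "a \<in> wcar A" "b \<in> wcar A" "P \<in> box A a b" "box A a b \<subseteq> s" by blast
    from Int.IH(2)[OF IntD2[OF Int.prems]] obtain a' b' where ab': "a' \<in> wcar A" "b' \<in> wcar A" "P \<in> box A a' b'" "box A a' b' \<subseteq> t" by blast
    have Ppf: "pf P" using ab(3) by (auto simp: box_def pfs_eq)
    have "box A (wmeet A a a') (wjoin A b b') \<subseteq> box A a b \<inter> box A a' b'"
      using ab ab' by (auto simp: box_def pfs_eq pfD)
    moreover have "P \<in> box A (wmeet A a a') (wjoin A b b')"
      using ab ab' Ppf by (auto simp: box_def pfs_eq pfD)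
    ultimately show ?case using ab ab' by (intro bexI[of _ "wmeet A a a'"] bexI[of _ "wjoin A b b'"]) auto
  next
    case (UN K)
    then obtain k where "k \<in> K" "P \<in> k" by blast
    with UN.IH[of k P] show ?case by blast
  next
    case (Basis s)
    then consider "s = pfs" | c where "c \<in> wcar A" "s = wsigma A c" | c where "c \<in> wcar A" "s = pfs - wsigma A c"
      unfolding SB_def by blast
    then show ?case
    proof cases
      case 1
      then have "P \<in> box A (wone A) (wzero A)" "box A (wone A) (wzero A) \<subseteq> s" using Basis.prems
        by (auto simp: box_def pfs_eq pfD)
      then show ?thesis using uC zC by blast
    next
      case (2 c)
      then have "P \<in> box A c (wzero A)" "box A c (wzero A) \<subseteq> s" using Basis.prems
        by (auto simp: box_def pfs_eq pfD wsigma_def)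
      then show ?thesis using 2 zC by blast
    next
      case (3 c)
      then have "P \<in> box A (wone A) c" "box A (wone A) c \<subseteq> s" using Basis.prems
        by (auto simp: box_def pfs_eq pfD wsigma_def)
      then show ?thesis using 3 uC by blast
    qed
  qed
qed

definition cov where "cov K \<longleftrightarrow> (\<forall>P. pf P \<longrightarrow> (\<exists>(a, b) \<in> K. a \<in> P \<and> b \<notin> P))"

lemma compact_boxes:
  assumes K: "K \<subseteq> wcar A \<times> wcar A" and cK: "cov K"
  shows "\<exists>K0. finite K0 \<and> K0 \<subseteq> K \<and> cov K0"
proof (rule ccontr)
  assume nf: "\<not> (\<exists>K0. finite K0 \<and> K0 \<subseteq> K \<and> cov K0)"
  define \<A> where "\<A> = {M. K \<subseteq> M \<and> M \<subseteq> wcar A \<times> wcar A \<and> \<not> (\<exists>M0. finite M0 \<and> M0 \<subseteq> M \<and> cov M0)}"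
  have KA: "K \<in> \<A>" using nf K by (auto simp: \<A>_def)
  have "\<exists>M\<in>\<A>. \<forall>X\<in>\<A>. M \<subseteq> X \<longrightarrow> X = M"
  proof (rule Zorn_Lemma2, intro ballI)
    fix Ch assume Ch: "Ch \<in> chains \<A>"
    show "\<exists>U\<in>\<A>. \<forall>X\<in>Ch. X \<subseteq> U"
    proof (cases "Ch = {}")
      case True then show ?thesis using KA by blast
    next
      case False
      have sub: "Ch \<subseteq> \<A>" using Ch by (auto simp: chains_def)
      have sch: "subset.chain \<A> Ch" using Ch by (simp add: chains_alt_def)
      have "\<Union>Ch \<in> \<A>"
        unfolding \<A>_def
      proof (intro CollectI conjI notI)
        obtain M1 where "M1 \<in> Ch" using False by blast
        then have "K \<subseteq> M1" using sub by (auto simp: \<A>_def)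
        then show "K \<subseteq> \<Union>Ch" using \<open>M1 \<in> Ch\<close> by blast
        show "\<Union>Ch \<subseteq> wcar A \<times> wcar A" using sub by (auto simp: \<A>_def)
        assume "\<exists>M0. finite M0 \<and> M0 \<subseteq> \<Union>Ch \<and> cov M0"
        then obtain M0 where M0: "finite M0" "M0 \<subseteq> \<Union>Ch" "cov M0" by blast
        obtain B where "B \<in> Ch" "M0 \<subseteq> B" using finite_subset_Union_chain[OF M0(1,2) False sch] by blast
        then show False using sub M0 by (auto simp: \<A>_def)
      qed
      then show ?thesis by blast
    qed
  qed
  then obtain M where MA: "M \<in> \<A>" and Mmax: "\<forall>X\<in>\<A>. M \<subseteq> X \<longrightarrow> X = M" by blast
  have MK: "K \<subseteq> M" and MC: "M \<subseteq> wcar A \<times> wcar A" and Mnf: "\<not> (\<exists>M0. finite M0 \<and> M0 \<subseteq> M \<and> cov M0)"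
    using MA by (auto simp: \<A>_def)
  have covM: "cov M" using cK MK unfolding cov_def by blast
  have ext: "\<exists>M1. finite M1 \<and> M1 \<subseteq> insert p M \<and> cov M1" if "p \<notin> M" "p \<in> wcar A \<times> wcar A" for p
  proof (rule ccontr)
    assume "\<not> (\<exists>M1. finite M1 \<and> M1 \<subseteq> insert p M \<and> cov M1)"
    then have "insert p M \<in> \<A>" using MK MC that by (auto simp: \<A>_def)
    then have "insert p M = M" using Mmax by blast
    then show False using that by blast
  qed
  have split: "(a, wzero A) \<in> M \<or> (wone A, b) \<in> M" if ab: "(a, b) \<in> M" for a b
  proof (rule ccontr)
    assume n: "\<not> ((a, wzero A) \<in> M \<or> (wone A, b) \<in> M)"
    have abC: "a \<in> wcar A" "b \<in> wcar A" using ab MC by auto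
    obtain M1 where M1: "finite M1" "M1 \<subseteq> insert (a, wzero A) M" "cov M1" using ext[of "(a, wzero A)"] n abC by auto
    obtain M2 where M2: "finite M2" "M2 \<subseteq> insert (wone A, b) M" "cov M2" using ext[of "(wone A, b)"] n abC by auto
    define M0 where "M0 = (M1 - {(a, wzero A)}) \<union> (M2 - {(wone A, b)}) \<union> {(a, b)}"
    have "finite M0" "M0 \<subseteq> M" using M1 M2 ab by (auto simp: M0_def)
    moreover have "cov M0"
      unfolding cov_def
    proof (intro allI impI)
      fix P assume P: "pf P"
      obtain c d where cd1: "(c, d) \<in> M1" "c \<in> P" "d \<notin> P" using M1(3) P unfolding cov_def by blast
      obtain c' d' where cd2: "(c', d') \<in> M2" "c' \<in> P" "d' \<notin> P" using M2(3) P unfolding cov_def by blast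
      show "\<exists>(c, d)\<in>M0. c \<in> P \<and> d \<notin> P"
      proof (cases "(c, d) = (a, wzero A)")
        case False then show ?thesis using cd1 by (auto simp: M0_def)
      next
        case True
        show ?thesis
        proof (cases "(c', d') = (wone A, b)")
          case False then show ?thesis using cd2 by (auto simp: M0_def)
        next
          case True2: True
          then show ?thesis using True cd1 cd2 by (auto simp: M0_def)
        qed
      qed
    qed
    ultimately show False using Mnf by blast
  qed
  define As where "As = {a. (a, wzero A) \<in> M}"
  define Bs where "Bs = {b. (wone A, b) \<in> M}"
  have AsC: "As \<subseteq> wcar A" and BsC: "Bs \<subseteq> wcar A" using MC by (auto simp: As_def Bs_def)
  have "\<exists>xs ys. set xs \<subseteq> Bs \<and> set ys \<subseteq> As \<and> le (meetl xs) (joinl ys)"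
  proof (rule ccontr)
    assume "\<not> (\<exists>xs ys. set xs \<subseteq> Bs \<and> set ys \<subseteq> As \<and> le (meetl xs) (joinl ys))"
    from sep_lists[OF AsC BsC this] obtain P where P: "pf P" "Bs \<subseteq> P" "As \<inter> P = {}" by blast
    from covM P(1) obtain a b where ab: "(a, b) \<in> M" "a \<in> P" "b \<notin> P" unfolding cov_def by blast
    from split[OF ab(1)] show False using ab P by (auto simp: As_def Bs_def)
  qed
  then obtain xs ys where xy: "set xs \<subseteq> Bs" "set ys \<subseteq> As" "le (meetl xs) (joinl ys)" by blast
  define M0 where "M0 = (\<lambda>b. (wone A, b)) ` set xs \<union> (\<lambda>a. (a, wzero A)) ` set ys"
  have "finite M0" "M0 \<subseteq> M" using xy by (auto simp: M0_def As_def Bs_def)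
  moreover have "cov M0"
    unfolding cov_def
  proof (intro allI impI)
    fix P assume P: "pf P"
    have xyC: "set xs \<subseteq> wcar A" "set ys \<subseteq> wcar A" using xy AsC BsC by auto
    show "\<exists>(c, d)\<in>M0. c \<in> P \<and> d \<notin> P"
    proof (cases "\<forall>x\<in>set xs. x \<in> P")
      case True
      then have "meetl xs \<in> P" using pf_meetl[OF P xyC(1)] by simp
      then have "joinl ys \<in> P" using pf_le[OF P _ _ xy(3)] xyC by simp
      then obtain y where "y \<in> set ys" "y \<in> P" using pf_joinl[OF P xyC(2)] by blast
      then show ?thesis using pfD(3)[OF P] by (auto simp: M0_def)
    next
      case False
      then obtain x where "x \<in> set xs" "x \<notin> P" by blast
      then show ?thesis using pfD(2)[OF P] by (auto simp: M0_def)
    qed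
  qed
  ultimately show False using Mnf by blast
qed

lemma clopen_cnf:
  assumes o: "openin (wtop A) U" and c: "closedin (wtop A) U"
  shows "\<exists>ps. set ps \<subseteq> wcar A \<times> wcar A \<and> U = cnf A ps"
proof -
  have Usub: "U \<subseteq> pfs" using o openin_subset by fastforce
  have oc: "openin (wtop A) (pfs - U)" using c unfolding closedin_def by simp
  define K where "K = {(a, b). a \<in> wcar A \<and> b \<in> wcar A \<and> (box A a b \<subseteq> U \<or> box A a b \<inter> U = {})}"
  have KC: "K \<subseteq> wcar A \<times> wcar A" by (auto simp: K_def)
  have "cov K" unfolding cov_def
  proof (intro allI impI)
    fix P assume P: "pf P"
    show "\<exists>(a, b)\<in>K. a \<in> P \<and> b \<notin> P"
    proof (cases "P \<in> U")
      case True
      from open_boxes[OF o True] obtain a b where "a \<in> wcar A" "b \<in> wcar A" "P \<in> box A a b" "box A a b \<subseteq> U" by blast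
      then show ?thesis by (auto simp: K_def box_def)
    next
      case False
      then have "P \<in> pfs - U" using P by (simp add: pfs_eq)
      from open_boxes[OF oc this] obtain a b where "a \<in> wcar A" "b \<in> wcar A" "P \<in> box A a b" "box A a b \<subseteq> pfs - U" by blast
      then show ?thesis unfolding K_def box_def by blast
    qed
  qed
  from compact_boxes[OF KC this] obtain K0 where K0: "finite K0" "K0 \<subseteq> K" "cov K0" by blast
  define K1 where "K1 = {(a, b) \<in> K0. box A a b \<inter> U = {}}"
  have "finite K1" by (rule finite_subset[OF _ K0(1)]) (auto simp: K1_def)
  then obtain ps where ps: "set ps = K1" using finite_list by blast
  have "set ps \<subseteq> wcar A \<times> wcar A" using ps K0 KC by (auto simp: K1_def)
  moreover have "U = cnf A ps"
  proof
    show "U \<subseteq> cnf A ps"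
    proof
      fix P assume "P \<in> U"
      then show "P \<in> cnf A ps" using Usub unfolding cnf_def ps K1_def box_def by blast
    qed
    show "cnf A ps \<subseteq> U"
    proof
      fix P assume P: "P \<in> cnf A ps"
      then have "pf P" by (simp add: cnf_def pfs_eq)
      then obtain a b where ab: "(a, b) \<in> K0" "a \<in> P" "b \<notin> P" using K0(3) unfolding cov_def by blast
      have "(a, b) \<notin> K1" using P ab ps unfolding cnf_def by blast
      then have "box A a b \<subseteq> U" using ab K0(2) unfolding K1_def K_def by blast
      moreover have "P \<in> box A a b" using P ab by (simp add: box_def cnf_def)
      ultimately show "P \<in> U" by blast
    qed
  qed
  ultimately show ?thesis by blast
qed

lemma Tcar: "tcar (T_alg A) = {cnf A ps | ps. set ps \<subseteq> wcar A \<times> wcar A}"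
  using clopen_cnf cnf_clopen by (auto simp: T_alg_def)

lemma Tcar_cnf: "set ps \<subseteq> wcar A \<times> wcar A \<Longrightarrow> cnf A ps \<in> tcar (T_alg A)"
  using Tcar by blast

lemma G_cnf: assumes "set ps \<subseteq> wcar A \<times> wcar A"
  shows "tG (T_alg A) (cnf A ps) = cnf A (map (\<lambda>(a, b). (wone A, imp a b)) ps)"
proof -
  have "{P \<in> pfs. wR A `` {P} \<subseteq> cnf A ps} = cnf A (map (\<lambda>(a, b). (wone A, imp a b)) ps)"
  proof (intro set_eqI iffI)
    fix P assume P: "P \<in> {P \<in> pfs. wR A `` {P} \<subseteq> cnf A ps}"
    have Ppf: "pf P" using P by (simp add: pfs_eq)
    have "imp a b \<in> P" if ab: "(a, b) \<in> set ps" for a b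
    proof (rule ccontr)
      assume "imp a b \<notin> P"
      then obtain Q where Q: "pf Q" "(P, Q) \<in> wR A" "a \<in> Q" "b \<notin> Q" using R_lemma[OF Ppf] ab assms by blast
      then have "Q \<in> cnf A ps" using P by blast
      then show False using Q ab unfolding cnf_def by blast
    qed
    then show "P \<in> cnf A (map (\<lambda>(a, b). (wone A, imp a b)) ps)" using P by (auto simp: cnf_def)
  next
    fix P assume P: "P \<in> cnf A (map (\<lambda>(a, b). (wone A, imp a b)) ps)"
    have Ppf: "pf P" using P by (simp add: cnf_def pfs_eq)
    have imps: "imp a b \<in> P" if "(a, b) \<in> set ps" for a b
      using P that pfD(2)[OF Ppf] unfolding cnf_def by fastforce
    have "wR A `` {P} \<subseteq> cnf A ps"
    proof
      fix Q assume "Q \<in> wR A `` {P}"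
      then have Q: "(P, Q) \<in> wR A" by blast
      then have "Q \<in> pfs" by (simp add: wR_def)
      moreover have "b \<in> Q" if "(a, b) \<in> set ps" "a \<in> Q" for a b
        using Q imps[OF that(1)] that assms unfolding wR_def by blast
      ultimately show "Q \<in> cnf A ps" unfolding cnf_def by blast
    qed
    then show "P \<in> {P \<in> pfs. wR A `` {P} \<subseteq> cnf A ps}" using P by (simp add: cnf_def)
  qed
  then show ?thesis by (simp add: T_alg_def)
qed

lemma H_cnf: assumes "set ps \<subseteq> wcar A \<times> wcar A"
  shows "tH (T_alg A) (cnf A ps) = cnf A (map (\<lambda>(a, b). (coimp a b, wzero A)) ps)"
proof -
  have "{P \<in> pfs. wS A `` {P} \<subseteq> cnf A ps} = cnf A (map (\<lambda>(a, b). (coimp a b, wzero A)) ps)"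
  proof (intro set_eqI iffI)
    fix P assume P: "P \<in> {P \<in> pfs. wS A `` {P} \<subseteq> cnf A ps}"
    have Ppf: "pf P" using P by (simp add: pfs_eq)
    have "coimp a b \<notin> P" if ab: "(a, b) \<in> set ps" for a b
    proof
      assume "coimp a b \<in> P"
      then obtain Q where Q: "pf Q" "(P, Q) \<in> wS A" "a \<in> Q" "b \<notin> Q" using S_lemma[OF Ppf] ab assms by blast
      then have "Q \<in> cnf A ps" using P by blast
      then show False using Q ab unfolding cnf_def by blast
    qed
    then show "P \<in> cnf A (map (\<lambda>(a, b). (coimp a b, wzero A)) ps)" using P by (auto simp: cnf_def)
  next
    fix P assume P: "P \<in> cnf A (map (\<lambda>(a, b). (coimp a b, wzero A)) ps)"
    have Ppf: "pf P" using P by (simp add: cnf_def pfs_eq)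
    have co: "coimp a b \<notin> P" if "(a, b) \<in> set ps" for a b
      using P that pfD(3)[OF Ppf] unfolding cnf_def by fastforce
    have "wS A `` {P} \<subseteq> cnf A ps"
    proof
      fix Q assume "Q \<in> wS A `` {P}"
      then have Q: "(P, Q) \<in> wS A" by blast
      then have "Q \<in> pfs" by (simp add: wS_def)
      moreover have "b \<in> Q" if "(a, b) \<in> set ps" "a \<in> Q" for a b
        using Q co[OF that(1)] that assms unfolding wS_def by blast
      ultimately show "Q \<in> cnf A ps" unfolding cnf_def by blast
    qed
    then show "P \<in> {P \<in> pfs. wS A `` {P} \<subseteq> cnf A ps}" using P by (simp add: cnf_def)
  qed
  then show ?thesis by (simp add: T_alg_def)
qed

lemma sigma_cnf: "wsigma A a = cnf A [(wone A, a)]"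
  by (auto simp: wsigma_def cnf_def pfs_eq pfD)

end

context whb_alg begin

abbreviation "TA \<equiv> T_alg A"

lemma T_simps: "tmeet TA = (\<inter>)" "tjoin TA = (\<union>)" "tneg TA = (\<lambda>U. pfs - U)" "tzero TA = {}" "tone TA = pfs"
  "tG TA = (\<lambda>U. {P \<in> pfs. wR A `` {P} \<subseteq> U})" "tH TA = (\<lambda>U. {P \<in> pfs. wS A `` {P} \<subseteq> U})"
  by (simp_all add: T_alg_def)

lemma Tcar_def2: "tcar TA = {U. openin (wtop A) U \<and> closedin (wtop A) U}" by (simp add: T_alg_def)

lemma Tcar_sub: "U \<in> tcar TA \<Longrightarrow> U \<subseteq> pfs"
  unfolding Tcar_def2 using closedin_subset by fastforce

lemma Tcar_Int: "U \<in> tcar TA \<Longrightarrow> V \<in> tcar TA \<Longrightarrow> U \<inter> V \<in> tcar TA"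
  unfolding Tcar_def2 by blast
lemma Tcar_Un: "U \<in> tcar TA \<Longrightarrow> V \<in> tcar TA \<Longrightarrow> U \<union> V \<in> tcar TA"
  unfolding Tcar_def2 by blast
lemma Tcar_empty: "{} \<in> tcar TA" unfolding Tcar_def2 by simp
lemma Tcar_top: "pfs \<in> tcar TA" unfolding Tcar_def2 using openin_topspace closedin_topspace
  by (metis (mono_tags, lifting) mem_Collect_eq topspace_wtop)
lemma Tcar_neg: "U \<in> tcar TA \<Longrightarrow> pfs - U \<in> tcar TA"
proof -
  assume U: "U \<in> tcar TA"
  then have "U \<subseteq> pfs" by (rule Tcar_sub)
  then have "pfs - (pfs - U) = U" by blast
  then show ?thesis using U unfolding Tcar_def2 closedin_def by auto
qed

lemma Tcar_G: "U \<in> tcar TA \<Longrightarrow> tG TA U \<in> tcar TA"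
proof -
  assume "U \<in> tcar TA"
  then obtain ps where ps: "set ps \<subseteq> wcar A \<times> wcar A" "U = cnf A ps" using Tcar by blast
  have "set (map (\<lambda>(a, b). (wone A, imp a b)) ps) \<subseteq> wcar A \<times> wcar A" using ps(1) by auto
  then show ?thesis using G_cnf[OF ps(1)] ps(2) Tcar_cnf by simp
qed

lemma Tcar_H: "U \<in> tcar TA \<Longrightarrow> tH TA U \<in> tcar TA"
proof -
  assume "U \<in> tcar TA"
  then obtain ps where ps: "set ps \<subseteq> wcar A \<times> wcar A" "U = cnf A ps" using Tcar by blast
  have "set (map (\<lambda>(a, b). (coimp a b, wzero A)) ps) \<subseteq> wcar A \<times> wcar A" using ps(1) by auto
  then show ?thesis using H_cnf[OF ps(1)] ps(2) Tcar_cnf by simp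
qed

lemma R_sub: "(P, Q) \<in> wR A \<Longrightarrow> P \<in> pfs \<and> Q \<in> pfs" by (simp add: wR_def)
lemma S_sub: "(P, Q) \<in> wS A \<Longrightarrow> P \<in> pfs \<and> Q \<in> pfs" by (simp add: wS_def)

lemma T_is_tba: "is_tba TA"
proof -
  have bd: "bdlattice (tcar TA) (\<inter>) (\<union>) {} pfs"
    unfolding bdlattice_def using Tcar_empty Tcar_top Tcar_Int Tcar_Un Tcar_sub by blast
  have adj1: "(pfs - {P \<in> pfs. wS A `` {P} \<subseteq> pfs - U} \<subseteq> V) \<longleftrightarrow> (U \<subseteq> {P \<in> pfs. wR A `` {P} \<subseteq> V})"
    if "U \<subseteq> pfs" "V \<subseteq> pfs" for U V
    using that S_R_conv R_sub S_sub by blast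
  have adj2: "(pfs - {P \<in> pfs. wR A `` {P} \<subseteq> pfs - U} \<subseteq> V) \<longleftrightarrow> (U \<subseteq> {P \<in> pfs. wS A `` {P} \<subseteq> V})"
    if "U \<subseteq> pfs" "V \<subseteq> pfs" for U V
    using that S_R_conv R_sub S_sub by blast
  show ?thesis
    unfolding is_tba_def tle_def tP_def tF_def T_simps
    apply (intro conjI ballI)
    subgoal by (rule bd)
    subgoal by (rule Tcar_neg)
    subgoal by blast
    subgoal for a using Tcar_sub[of a] by blast
    subgoal for a using Tcar_G[of a] by (simp add: T_simps)
    subgoal for a using Tcar_H[of a] by (simp add: T_simps)
    subgoal for x y using Tcar_sub[of x] Tcar_sub[of y] adj1[of x y] by (simp only: flip: inf.absorb_iff1)
    subgoal for x y using Tcar_sub[of x] Tcar_sub[of y] adj2[of x y] by (simp only: flip: inf.absorb_iff1)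
    done
qed

lemma sig_C: "a \<in> wcar A \<Longrightarrow> wsigma A a \<in> tcar TA"
  using sigma_cnf Tcar_cnf by (metis (no_types, lifting) empty_iff empty_set insert_iff list.simps(15) mem_Sigma_iff subsetI uC)

lemma sig_meet: "a \<in> wcar A \<Longrightarrow> b \<in> wcar A \<Longrightarrow> wsigma A (wmeet A a b) = wsigma A a \<inter> wsigma A b"
  by (auto simp: wsigma_def pfs_eq pfD(5))
lemma sig_join: "a \<in> wcar A \<Longrightarrow> b \<in> wcar A \<Longrightarrow> wsigma A (wjoin A a b) = wsigma A a \<union> wsigma A b"
  by (auto simp: wsigma_def pfs_eq pfD(6))
lemma sig_zero: "wsigma A (wzero A) = {}" by (auto simp: wsigma_def pfs_eq pfD(3))
lemma sig_one: "wsigma A (wone A) = pfs" by (auto simp: wsigma_def pfs_eq pfD(2))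

lemma sig_imp: assumes "a \<in> wcar A" "b \<in> wcar A"
  shows "wsigma A (imp a b) = tG TA (tjoin TA (tneg TA (wsigma A a)) (wsigma A b))"
proof -
  have "tjoin TA (tneg TA (wsigma A a)) (wsigma A b) = cnf A [(a, b)]"
    by (auto simp: T_simps cnf_def wsigma_def)
  then show ?thesis using G_cnf[of "[(a, b)]"] assms sigma_cnf by simp
qed

lemma sig_coimp: assumes "a \<in> wcar A" "b \<in> wcar A"
  shows "wsigma A (coimp a b) = tP TA (tmeet TA (wsigma A a) (tneg TA (wsigma A b)))"
proof -
  have "tneg TA (tmeet TA (wsigma A a) (tneg TA (wsigma A b))) = cnf A [(a, b)]"
    by (auto simp: T_simps cnf_def wsigma_def)
  moreover have "tH TA (cnf A [(a, b)]) = cnf A [(coimp a b, wzero A)]" using H_cnf[of "[(a, b)]"] assms by simp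
  moreover have "cnf A [(coimp a b, wzero A)] = pfs - wsigma A (coimp a b)"
    by (auto simp: cnf_def wsigma_def pfs_eq pfD(3))
  ultimately show ?thesis unfolding tP_def T_simps by (auto simp: wsigma_def)
qed

lemma sig_inj: "a \<in> wcar A \<Longrightarrow> b \<in> wcar A \<Longrightarrow> wsigma A a = wsigma A b \<Longrightarrow> a = b"
  by (rule eq_pf) (auto simp: wsigma_def pfs_eq)

end

definition Wb :: "('a, 'b) tba_scheme \<Rightarrow> 'a whb" where
  "Wb B = \<lparr>wcar = tcar B, wmeet = tmeet B, wjoin = tjoin B,
     wimp = (\<lambda>a b. tG B (tjoin B (tneg B a) b)),
     wcoimp = (\<lambda>a b. tP B (tmeet B a (tneg B b))),
     wzero = tzero B, wone = tone B\<rparr>"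

locale tba_alg =
  fixes B :: "('a, 'b) tba_scheme"
  assumes tba: "is_tba B"
begin

sublocale dlat "tcar B" "tmeet B" "tjoin B" "tzero B" "tone B"
  using tba by (unfold_locales) (simp add: is_tba_def)

abbreviation "neg \<equiv> tneg B"
abbreviation "G \<equiv> tG B"
abbreviation "H \<equiv> tH B"
abbreviation "PP \<equiv> tP B"
abbreviation "FF \<equiv> tF B"

lemma tle_le: "tle B a b \<longleftrightarrow> le a b" by (simp add: tle_def le_def)

lemma negC[simp]: "a \<in> tcar B \<Longrightarrow> neg a \<in> tcar B"
  and neg1: "a \<in> tcar B \<Longrightarrow> tmeet B a (neg a) = tzero B"
  and neg2: "a \<in> tcar B \<Longrightarrow> tjoin B a (neg a) = tone B"
  using tba unfolding is_tba_def by blast+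

lemma GC[simp]: "a \<in> tcar B \<Longrightarrow> G a \<in> tcar B" and HC[simp]: "a \<in> tcar B \<Longrightarrow> H a \<in> tcar B"
  using tba unfolding is_tba_def by blast+
lemma PC[simp]: "a \<in> tcar B \<Longrightarrow> PP a \<in> tcar B" by (simp add: tP_def)
lemma FC[simp]: "a \<in> tcar B \<Longrightarrow> FF a \<in> tcar B" by (simp add: tF_def)

lemma adjP: "x \<in> tcar B \<Longrightarrow> y \<in> tcar B \<Longrightarrow> le (PP x) y \<longleftrightarrow> le x (G y)"
  and adjF: "x \<in> tcar B \<Longrightarrow> y \<in> tcar B \<Longrightarrow> le (FF x) y \<longleftrightarrow> le x (H y)"
  using tba unfolding is_tba_def tle_le by blast+

lemma pf_neg: "pf P \<Longrightarrow> a \<in> tcar B \<Longrightarrow> neg a \<in> P \<longleftrightarrow> a \<notin> P"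
proof -
  assume P: "pf P" and a: "a \<in> tcar B"
  have "tmeet B a (neg a) \<notin> P" using neg1[OF a] pfD(3)[OF P] by simp
  moreover have "tjoin B a (neg a) \<in> P" using neg2[OF a] pfD(2)[OF P] by simp
  ultimately show ?thesis using pfD(5,6)[OF P] a by auto
qed

lemmas mem_simps = pfD(2) pfD(3) pfD(5) pfD(6) pf_neg

lemma G_mono: "x \<in> tcar B \<Longrightarrow> y \<in> tcar B \<Longrightarrow> le x y \<Longrightarrow> le (G x) (G y)"
  by (meson GC PC adjP le_refl le_trans)
lemma H_mono: "x \<in> tcar B \<Longrightarrow> y \<in> tcar B \<Longrightarrow> le x y \<Longrightarrow> le (H x) (H y)"
  by (meson HC FC adjF le_refl le_trans)
lemma P_mono: "x \<in> tcar B \<Longrightarrow> y \<in> tcar B \<Longrightarrow> le x y \<Longrightarrow> le (PP x) (PP y)"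
  by (meson GC PC adjP le_refl le_trans)

lemma G_meet: assumes "x \<in> tcar B" "y \<in> tcar B" shows "G (tmeet B x y) = tmeet B (G x) (G y)"
proof (rule le_antisym)
  show "le (G (tmeet B x y)) (tmeet B (G x) (G y))" using assms G_mono le_m_iff by simp
  define w where "w = tmeet B (G x) (G y)"
  have wC: "w \<in> tcar B" using assms by (simp add: w_def)
  have "le w (G x)" "le w (G y)" using assms by (simp_all add: w_def)
  then have "le (PP w) x" "le (PP w) y" using adjP[OF wC assms(1)] adjP[OF wC assms(2)] by simp_all
  then have "le (PP w) (tmeet B x y)" using le_m_iff assms wC by simp
  then show "le (tmeet B (G x) (G y)) (G (tmeet B x y))" using adjP[of w "tmeet B x y"] assms wC by (simp add: w_def)
qed (use assms in simp_all)

lemma H_meet: assumes "x \<in> tcar B" "y \<in> tcar B" shows "H (tmeet B x y) = tmeet B (H x) (H y)"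
proof (rule le_antisym)
  show "le (H (tmeet B x y)) (tmeet B (H x) (H y))" using assms H_mono le_m_iff by simp
  define w where "w = tmeet B (H x) (H y)"
  have wC: "w \<in> tcar B" using assms by (simp add: w_def)
  have "le w (H x)" "le w (H y)" using assms by (simp_all add: w_def)
  then have "le (FF w) x" "le (FF w) y" using adjF[OF wC assms(1)] adjF[OF wC assms(2)] by simp_all
  then have "le (FF w) (tmeet B x y)" using le_m_iff assms wC by simp
  then show "le (tmeet B (H x) (H y)) (H (tmeet B x y))" using adjF[of w "tmeet B x y"] assms wC by (simp add: w_def)
qed (use assms in simp_all)

lemma G_one: "G (tone B) = tone B"
  using adjP[of "tone B" "tone B"] by (simp add: le_antisym)
lemma H_one: "H (tone B) = tone B"
  using adjF[of "tone B" "tone B"] by (simp add: le_antisym)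

lemma P_join: assumes "x \<in> tcar B" "y \<in> tcar B" shows "PP (tjoin B x y) = tjoin B (PP x) (PP y)"
proof (rule le_antisym)
  show "le (tjoin B (PP x) (PP y)) (PP (tjoin B x y))" using assms P_mono j_le_iff by simp
  define w where "w = tjoin B (PP x) (PP y)"
  have wC: "w \<in> tcar B" using assms by (simp add: w_def)
  have "le (PP x) w" "le (PP y) w" using assms by (simp_all add: w_def)
  then have "le x (G w)" "le y (G w)" using adjP[OF assms(1) wC] adjP[OF assms(2) wC] by simp_all
  then have "le (tjoin B x y) (G w)" using j_le_iff assms wC by simp
  then show "le (PP (tjoin B x y)) (tjoin B (PP x) (PP y))" using adjP[of "tjoin B x y" w] assms wC by (simp add: w_def)
qed (use assms in simp_all)

lemma P_zero: "PP (tzero B) = tzero B"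
  using adjP[of "tzero B" "tzero B"] by (simp add: le_antisym)

lemma PG: "y \<in> tcar B \<Longrightarrow> le (PP (G y)) y" using adjP[of "G y" y] by simp
lemma GP: "x \<in> tcar B \<Longrightarrow> le x (G (PP x))" using adjP[of x "PP x"] by simp

lemma G_meetl: "set xs \<subseteq> tcar B \<Longrightarrow> G (meetl xs) = meetl (map G xs)"
  by (induction xs) (simp_all add: G_one G_meet)
lemma H_meetl: "set xs \<subseteq> tcar B \<Longrightarrow> H (meetl xs) = meetl (map H xs)"
  by (induction xs) (simp_all add: H_one H_meet)

lemma beq: "a \<in> tcar B \<Longrightarrow> b \<in> tcar B \<Longrightarrow> (\<And>P. pf P \<Longrightarrow> a \<in> P \<longleftrightarrow> b \<in> P) \<Longrightarrow> a = b"
  by (rule eq_pf)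
lemma ble: "a \<in> tcar B \<Longrightarrow> b \<in> tcar B \<Longrightarrow> (\<And>P. pf P \<Longrightarrow> a \<in> P \<Longrightarrow> b \<in> P) \<Longrightarrow> le a b"
  using le_pf by blast

lemma W_whb: "is_whb (Wb B)"
proof -
  have bd: "bdlattice (tcar B) (tmeet B) (tjoin B) (tzero B) (tone B)" by (rule bd)
  show ?thesis
    unfolding is_whb_def wle_def
  proof (simp add: Wb_def bd, intro conjI ballI)
    fix a b c assume C: "a \<in> tcar B" "b \<in> tcar B" "c \<in> tcar B"
    show "G (tjoin B (neg a) a) = tone B"
      using neg2[OF C(1)] C by (simp add: jcomm G_one)
    show "G (tjoin B (neg a) (tmeet B b c)) = tmeet B (G (tjoin B (neg a) b)) (G (tjoin B (neg a) c))"
      using C by (simp add: distr2 G_meet)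
    have "tjoin B (neg (tjoin B a b)) c = tmeet B (tjoin B (neg a) c) (tjoin B (neg b) c)"
      using C by (intro beq) (auto simp: mem_simps)
    then show "G (tjoin B (neg (tjoin B a b)) c) = tmeet B (G (tjoin B (neg a) c)) (G (tjoin B (neg b) c))"
      using C by (simp add: G_meet)
    have "le (tmeet B (tjoin B (neg a) b) (tjoin B (neg b) c)) (tjoin B (neg a) c)"
      using C by (intro ble) (auto simp: mem_simps)
    then have "le (G (tmeet B (tjoin B (neg a) b) (tjoin B (neg b) c))) (G (tjoin B (neg a) c))"
      using C by (intro G_mono) auto
    then show "tmeet B (tmeet B (G (tjoin B (neg a) b)) (G (tjoin B (neg b) c))) (G (tjoin B (neg a) c)) =
               tmeet B (G (tjoin B (neg a) b)) (G (tjoin B (neg b) c))"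
      using C by (simp add: G_meet le_def)
    show "PP (tmeet B a (neg a)) = tzero B" using neg1[OF C(1)] P_zero by simp
    have "tmeet B (tjoin B a b) (neg c) = tjoin B (tmeet B a (neg c)) (tmeet B b (neg c))"
      using C by (intro beq) (auto simp: mem_simps)
    then show "PP (tmeet B (tjoin B a b) (neg c)) = tjoin B (PP (tmeet B a (neg c))) (PP (tmeet B b (neg c)))"
      using C by (simp add: P_join)
    have "tmeet B a (neg (tmeet B b c)) = tjoin B (tmeet B a (neg b)) (tmeet B a (neg c))"
      using C by (intro beq) (auto simp: mem_simps)
    then show "PP (tmeet B a (neg (tmeet B b c))) = tjoin B (PP (tmeet B a (neg b))) (PP (tmeet B a (neg c)))"
      using C by (simp add: P_join)
    have "le (tmeet B a (neg c)) (tjoin B (tmeet B a (neg b)) (tmeet B b (neg c)))"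
      using C by (intro ble) (auto simp: mem_simps)
    then have "le (PP (tmeet B a (neg c))) (PP (tjoin B (tmeet B a (neg b)) (tmeet B b (neg c))))"
      using C by (intro P_mono) auto
    then show "tmeet B (PP (tmeet B a (neg c))) (tjoin B (PP (tmeet B a (neg b))) (PP (tmeet B b (neg c)))) =
               PP (tmeet B a (neg c))"
      using C by (simp add: P_join le_def)
  next
    fix a b assume C: "a \<in> tcar B" "b \<in> tcar B"
    define y where "y = tjoin B (neg a) b"
    have yC: "y \<in> tcar B" using C by (simp add: y_def)
    have n0: "neg (tzero B) = tone B" by (intro beq) (auto simp: mem_simps)
    have "le (tmeet B a (PP (tmeet B (G y) (neg (tzero B))))) (tmeet B a y)"
      using C yC n0 PG[OF yC] by (intro m_mono) auto
    moreover have "le (tmeet B a y) b" using C unfolding y_def by (intro ble) (auto simp: mem_simps)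
    ultimately have "le (tmeet B a (PP (tmeet B (G y) (neg (tzero B))))) b"
      using C yC n0 le_trans by (metis GC PC mC mu2 uC)
    then show "tmeet B (tmeet B a (PP (tmeet B (G (tjoin B (neg a) b)) (neg (tzero B))))) b =
               tmeet B a (PP (tmeet B (G (tjoin B (neg a) b)) (neg (tzero B))))"
      by (simp add: le_def y_def)
  next
    fix a b assume C: "a \<in> tcar B" "b \<in> tcar B"
    define x where "x = tmeet B a (neg b)"
    have xC: "x \<in> tcar B" using C by (simp add: x_def)
    have n1: "tjoin B (neg (tone B)) (PP x) = PP x" using xC by (subst beq) (auto simp: mem_simps)
    have "le a (tjoin B b x)" using C unfolding x_def by (intro ble) (auto simp: mem_simps)
    moreover have "le (tjoin B b x) (tjoin B b (G (PP x)))" using C xC GP[OF xC] by (intro j_mono) auto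
    ultimately have "le a (tjoin B b (G (tjoin B (neg (tone B)) (PP x))))"
      using C xC n1 le_trans by (metis GC PC jC)
    then show "tmeet B a (tjoin B b (G (tjoin B (neg (tone B)) (PP (tmeet B a (neg b)))))) = a"
      by (simp add: le_def x_def)
  qed
qed

end

lemma ball_img: "(\<forall>x\<in>f ` A. P x) \<longleftrightarrow> (\<forall>x\<in>A. P (f x))" by blast

definition whb_copy :: "('b, 'c) whb_scheme \<Rightarrow> 'b set \<Rightarrow> ('b \<Rightarrow> 'd) \<Rightarrow> 'd whb" where
  "whb_copy B S g = (let h = inv_into S g in
    \<lparr>wcar = g ` S, wmeet = (\<lambda>p q. g (wmeet B (h p) (h q))), wjoin = (\<lambda>p q. g (wjoin B (h p) (h q))),
     wimp = (\<lambda>p q. g (wimp B (h p) (h q))), wcoimp = (\<lambda>p q. g (wcoimp B (h p) (h q))),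
     wzero = g (wzero B), wone = g (wone B)\<rparr>)"

lemma whb_copy_simps:
  assumes "inj_on g S" "a \<in> S" "b \<in> S"
  shows "wmeet (whb_copy B S g) (g a) (g b) = g (wmeet B a b)"
    "wjoin (whb_copy B S g) (g a) (g b) = g (wjoin B a b)"
    "wimp (whb_copy B S g) (g a) (g b) = g (wimp B a b)"
    "wcoimp (whb_copy B S g) (g a) (g b) = g (wcoimp B a b)"
  using assms by (simp_all add: whb_copy_def Let_def)

lemma whb_copy_simps2: "wcar (whb_copy B S g) = g ` S" "wzero (whb_copy B S g) = g (wzero B)" "wone (whb_copy B S g) = g (wone B)"
  by (simp_all add: whb_copy_def Let_def)

lemma whb_copy_is_whb:
  assumes B: "is_whb B" and SC: "S \<subseteq> wcar B" and inj: "inj_on g S"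
    and cl: "\<And>a b. a \<in> S \<Longrightarrow> b \<in> S \<Longrightarrow> wmeet B a b \<in> S"
      "\<And>a b. a \<in> S \<Longrightarrow> b \<in> S \<Longrightarrow> wjoin B a b \<in> S"
      "\<And>a b. a \<in> S \<Longrightarrow> b \<in> S \<Longrightarrow> wimp B a b \<in> S"
      "\<And>a b. a \<in> S \<Longrightarrow> b \<in> S \<Longrightarrow> wcoimp B a b \<in> S"
      "wzero B \<in> S" "wone B \<in> S"
  shows "is_whb (whb_copy B S g)"
proof -
  have ax: "\<forall>a\<in>S. \<forall>b\<in>S. \<forall>c\<in>S.
        wmeet B a b = wmeet B b a \<and> wjoin B a b = wjoin B b a \<and>
        wmeet B a (wmeet B b c) = wmeet B (wmeet B a b) c \<and> wjoin B a (wjoin B b c) = wjoin B (wjoin B a b) c \<and>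
        wmeet B a (wjoin B a b) = a \<and> wjoin B a (wmeet B a b) = a \<and>
        wmeet B a (wjoin B b c) = wjoin B (wmeet B a b) (wmeet B a c) \<and>
        wmeet B (wzero B) a = wzero B \<and> wjoin B (wone B) a = wone B \<and>
        wimp B a a = wone B \<and>
        wimp B a (wmeet B b c) = wmeet B (wimp B a b) (wimp B a c) \<and>
        wimp B (wjoin B a b) c = wmeet B (wimp B a c) (wimp B b c) \<and>
        wmeet B (wmeet B (wimp B a b) (wimp B b c)) (wimp B a c) = wmeet B (wimp B a b) (wimp B b c) \<and>
        wcoimp B a a = wzero B \<and>
        wcoimp B (wjoin B a b) c = wjoin B (wcoimp B a c) (wcoimp B b c) \<and>
        wcoimp B a (wmeet B b c) = wjoin B (wcoimp B a b) (wcoimp B a c) \<and>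
        wmeet B (wcoimp B a c) (wjoin B (wcoimp B a b) (wcoimp B b c)) = wcoimp B a c \<and>
        wmeet B (wmeet B a (wcoimp B (wimp B a b) (wzero B))) b = wmeet B a (wcoimp B (wimp B a b) (wzero B)) \<and>
        wmeet B a (wjoin B b (wimp B (wone B) (wcoimp B a b))) = a"
    using B SC unfolding is_whb_def bdlattice_def wle_def by (intro ballI) (meson subsetD)
  have gS: "\<And>p. p \<in> g ` S \<longleftrightarrow> (\<exists>a\<in>S. p = g a)" by blast
  show ?thesis
    unfolding is_whb_def bdlattice_def wle_def whb_copy_simps2 ball_img
    apply (intro conjI ballI)
    apply (simp_all add: whb_copy_simps inj inj_on_eq_iff[OF inj] cl)
    apply (use ax in blast)+
    done
qed

lemma weval_C:
  assumes "is_whb B" "v \<in> X \<rightarrow> wcar B" "t \<in> wterms X"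
  shows "weval B v t \<in> wcar B"
proof -
  interpret whb_alg B using assms(1) by (simp add: whb_alg_def)
  show ?thesis using assms(3) by (induction t) (use assms(2) in \<open>auto simp: wterms_def\<close>)
qed

lemma whb_rel_sem:
  fixes B :: "('b, 'c) whb_scheme" and s t :: "'x wterm"
  assumes st: "(s, t) \<in> whb_rel X" and B: "is_whb B" and v: "v \<in> X \<rightarrow> wcar B"
  shows "weval B v s = weval B v t"
proof -
  interpret whb_alg B using B by (simp add: whb_alg_def)
  define S where "S = weval B v ` wterms X"
  define g :: "'b \<Rightarrow> 'x wterm set" where "g b = {SOME t. t \<in> wterms X \<and> weval B v t = b}" for b
  have g_ex: "b \<in> S \<Longrightarrow> (SOME t. t \<in> wterms X \<and> weval B v t = b) \<in> wterms X \<and> weval B v (SOME t. t \<in> wterms X \<and> weval B v t = b) = b" for b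
    unfolding S_def by (rule someI_ex) blast
  have inj: "inj_on g S"
  proof (rule inj_onI)
    fix a b assume "a \<in> S" "b \<in> S" "g a = g b"
    then have e: "(SOME t. t \<in> wterms X \<and> weval B v t = a) = (SOME t. t \<in> wterms X \<and> weval B v t = b)"
      unfolding g_def by simp
    have "weval B v (SOME t. t \<in> wterms X \<and> weval B v t = a) = a" using g_ex \<open>a \<in> S\<close> by blast
    moreover have "weval B v (SOME t. t \<in> wterms X \<and> weval B v t = b) = b" using g_ex \<open>b \<in> S\<close> by blast
    ultimately show "a = b" using e by metis
  qed
  have SC: "S \<subseteq> wcar B" unfolding S_def using weval_C[OF B v] by blast
  have wt: "WMeet s t \<in> wterms X" "WJoin s t \<in> wterms X" "WImp s t \<in> wterms X" "WCoimp s t \<in> wterms X"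
    if "s \<in> wterms X" "t \<in> wterms X" for s t using that by (auto simp: wterms_def)
  have ST: "\<exists>s t. s \<in> wterms X \<and> t \<in> wterms X \<and> a = weval B v s \<and> b = weval B v t" if "a \<in> S" "b \<in> S" for a b
    using that unfolding S_def by blast
  have cl: "\<And>a b. a \<in> S \<Longrightarrow> b \<in> S \<Longrightarrow> wmeet B a b \<in> S"
      "\<And>a b. a \<in> S \<Longrightarrow> b \<in> S \<Longrightarrow> wjoin B a b \<in> S"
      "\<And>a b. a \<in> S \<Longrightarrow> b \<in> S \<Longrightarrow> wimp B a b \<in> S"
      "\<And>a b. a \<in> S \<Longrightarrow> b \<in> S \<Longrightarrow> wcoimp B a b \<in> S"
      "wzero B \<in> S" "wone B \<in> S"
  proof -
    fix a b assume "a \<in> S" "b \<in> S"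
    then obtain s t where st: "s \<in> wterms X" "t \<in> wterms X" "a = weval B v s" "b = weval B v t" using ST by blast
    show "wmeet B a b \<in> S" unfolding S_def using st wt[OF st(1,2)] by (auto intro!: image_eqI[where x="WMeet s t"])
    show "wjoin B a b \<in> S" unfolding S_def using st wt[OF st(1,2)] by (auto intro!: image_eqI[where x="WJoin s t"])
    show "wimp B a b \<in> S" unfolding S_def using st wt[OF st(1,2)] by (auto intro!: image_eqI[where x="WImp s t"])
    show "wcoimp B a b \<in> S" unfolding S_def using st wt[OF st(1,2)] by (auto intro!: image_eqI[where x="WCoimp s t"])
  next
    show "wzero B \<in> S" unfolding S_def by (auto intro!: image_eqI[where x="WZero"] simp: wterms_def)
    show "wone B \<in> S" unfolding S_def by (auto intro!: image_eqI[where x="WOne"] simp: wterms_def)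
  qed
  define A' where "A' = whb_copy B S g"
  have A': "is_whb A'" unfolding A'_def by (rule whb_copy_is_whb[OF B SC inj cl])
  have vS: "v x \<in> S" if "x \<in> X" for x
  proof -
    have "WVar x \<in> wterms X" using that by (simp add: wterms_def)
    then show ?thesis unfolding S_def by (metis image_eqI weval.simps(1))
  qed
  have ev: "weval A' (g \<circ> v) r = g (weval B v r) \<and> weval B v r \<in> S" if "r \<in> wterms X" for r
    using that
  proof (induction r)
    case (WVar x) then show ?case using vS by (simp add: wterms_def)
  next
    case (WMeet r1 r2) then show ?case using cl(1) by (simp add: wterms_def A'_def whb_copy_simps inj)
  next
    case (WJoin r1 r2) then show ?case using cl(2) by (simp add: wterms_def A'_def whb_copy_simps inj)
  next
    case (WImp r1 r2) then show ?case using cl(3) by (simp add: wterms_def A'_def whb_copy_simps inj)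
  next
    case (WCoimp r1 r2) then show ?case using cl(4) by (simp add: wterms_def A'_def whb_copy_simps inj)
  next
    case WZero then show ?case using cl(5) by (simp add: A'_def whb_copy_simps2)
  next
    case WOne then show ?case using cl(6) by (simp add: A'_def whb_copy_simps2)
  qed
  have gv: "g \<circ> v \<in> X \<rightarrow> wcar A'" using vS by (auto simp: A'_def whb_copy_simps2)
  have sX: "s \<in> wterms X" "t \<in> wterms X" using st by (auto simp: whb_rel_def)
  have "weval A' (g \<circ> v) s = weval A' (g \<circ> v) t" using st A' gv unfolding whb_rel_def by blast
  then have "g (weval B v s) = g (weval B v t)" using ev sX by simp
  then show ?thesis using inj ev sX by (meson inj_onD)
qed

definition tba_copy :: "('b, 'c) tba_scheme \<Rightarrow> 'b set \<Rightarrow> ('b \<Rightarrow> 'd) \<Rightarrow> 'd tba" where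
  "tba_copy B S g = (let h = inv_into S g in
    \<lparr>tcar = g ` S, tmeet = (\<lambda>p q. g (tmeet B (h p) (h q))), tjoin = (\<lambda>p q. g (tjoin B (h p) (h q))),
     tneg = (\<lambda>p. g (tneg B (h p))), tzero = g (tzero B), tone = g (tone B),
     tG = (\<lambda>p. g (tG B (h p))), tH = (\<lambda>p. g (tH B (h p)))\<rparr>)"

lemma tba_copy_simps:
  assumes "inj_on g S" "a \<in> S" "b \<in> S"
  shows "tmeet (tba_copy B S g) (g a) (g b) = g (tmeet B a b)"
    "tjoin (tba_copy B S g) (g a) (g b) = g (tjoin B a b)"
  using assms by (simp_all add: tba_copy_def Let_def)

lemma tba_copy_simps1:
  assumes "inj_on g S" "a \<in> S"
  shows "tneg (tba_copy B S g) (g a) = g (tneg B a)"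
    "tG (tba_copy B S g) (g a) = g (tG B a)"
    "tH (tba_copy B S g) (g a) = g (tH B a)"
  using assms by (simp_all add: tba_copy_def Let_def)

lemma tba_copy_simps2: "tcar (tba_copy B S g) = g ` S" "tzero (tba_copy B S g) = g (tzero B)" "tone (tba_copy B S g) = g (tone B)"
  by (simp_all add: tba_copy_def Let_def)

lemma tba_copy_is_tba:
  assumes B: "is_tba B" and SC: "S \<subseteq> tcar B" and inj: "inj_on g S"
    and cl: "\<And>a b. a \<in> S \<Longrightarrow> b \<in> S \<Longrightarrow> tmeet B a b \<in> S"
      "\<And>a b. a \<in> S \<Longrightarrow> b \<in> S \<Longrightarrow> tjoin B a b \<in> S"
      "\<And>a. a \<in> S \<Longrightarrow> tneg B a \<in> S"
      "\<And>a. a \<in> S \<Longrightarrow> tG B a \<in> S"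
      "\<And>a. a \<in> S \<Longrightarrow> tH B a \<in> S"
      "tzero B \<in> S" "tone B \<in> S"
  shows "is_tba (tba_copy B S g)"
proof -
  have ax: "\<forall>a\<in>S. \<forall>b\<in>S. \<forall>c\<in>S.
        tmeet B a b = tmeet B b a \<and> tjoin B a b = tjoin B b a \<and>
        tmeet B a (tmeet B b c) = tmeet B (tmeet B a b) c \<and> tjoin B a (tjoin B b c) = tjoin B (tjoin B a b) c \<and>
        tmeet B a (tjoin B a b) = a \<and> tjoin B a (tmeet B a b) = a \<and>
        tmeet B a (tjoin B b c) = tjoin B (tmeet B a b) (tmeet B a c) \<and>
        tmeet B (tzero B) a = tzero B \<and> tjoin B (tone B) a = tone B \<and>
        tmeet B a (tneg B a) = tzero B \<and> tjoin B a (tneg B a) = tone B \<and>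
        ((tmeet B (tneg B (tH B (tneg B a))) b = tneg B (tH B (tneg B a))) \<longleftrightarrow> (tmeet B a (tG B b) = a)) \<and>
        ((tmeet B (tneg B (tG B (tneg B a))) b = tneg B (tG B (tneg B a))) \<longleftrightarrow> (tmeet B a (tH B b) = a))"
    using B SC unfolding is_tba_def bdlattice_def tle_def tP_def tF_def by (intro ballI) (meson subsetD)
  show ?thesis
    unfolding is_tba_def bdlattice_def tle_def tP_def tF_def tba_copy_simps2 ball_img
    apply (intro conjI ballI)
    apply (simp_all add: tba_copy_simps tba_copy_simps1 inj inj_on_eq_iff[OF inj] cl)
    apply (use ax in blast)+
    done
qed

lemma teval_C:
  assumes "is_tba B" "v \<in> X \<rightarrow> tcar B" "t \<in> tterms X"
  shows "teval B v t \<in> tcar B"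
proof -
  interpret tba_alg B using assms(1) by (simp add: tba_alg_def)
  show ?thesis using assms(3) by (induction t) (use assms(2) in \<open>auto simp: tterms_def\<close>)
qed

lemma tba_rel_sem:
  fixes B :: "('b, 'c) tba_scheme" and s t :: "'x tterm"
  assumes st: "(s, t) \<in> tba_rel X" and B: "is_tba B" and v: "v \<in> X \<rightarrow> tcar B"
  shows "teval B v s = teval B v t"
proof -
  interpret tba_alg B using B by (simp add: tba_alg_def)
  define S where "S = teval B v ` tterms X"
  define g :: "'b \<Rightarrow> 'x tterm set" where "g b = {SOME t. t \<in> tterms X \<and> teval B v t = b}" for b
  have g_ex: "b \<in> S \<Longrightarrow> (SOME t. t \<in> tterms X \<and> teval B v t = b) \<in> tterms X \<and> teval B v (SOME t. t \<in> tterms X \<and> teval B v t = b) = b" for b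
    unfolding S_def by (rule someI_ex) blast
  have inj: "inj_on g S"
  proof (rule inj_onI)
    fix a b assume "a \<in> S" "b \<in> S" "g a = g b"
    then have e: "(SOME t. t \<in> tterms X \<and> teval B v t = a) = (SOME t. t \<in> tterms X \<and> teval B v t = b)"
      unfolding g_def by simp
    have "teval B v (SOME t. t \<in> tterms X \<and> teval B v t = a) = a" using g_ex \<open>a \<in> S\<close> by blast
    moreover have "teval B v (SOME t. t \<in> tterms X \<and> teval B v t = b) = b" using g_ex \<open>b \<in> S\<close> by blast
    ultimately show "a = b" using e by metis
  qed
  have SC: "S \<subseteq> tcar B" unfolding S_def using teval_C[OF B v] by blast
  have wt: "TMeet s t \<in> tterms X" "TJoin s t \<in> tterms X" "TNeg s \<in> tterms X" "TGt s \<in> tterms X" "THt s \<in> tterms X"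
    if "s \<in> tterms X" "t \<in> tterms X" for s t using that by (auto simp: tterms_def)
  have ST: "\<exists>s t. s \<in> tterms X \<and> t \<in> tterms X \<and> a = teval B v s \<and> b = teval B v t" if "a \<in> S" "b \<in> S" for a b
    using that unfolding S_def by blast
  have cl: "\<And>a b. a \<in> S \<Longrightarrow> b \<in> S \<Longrightarrow> tmeet B a b \<in> S"
      "\<And>a b. a \<in> S \<Longrightarrow> b \<in> S \<Longrightarrow> tjoin B a b \<in> S"
      "\<And>a. a \<in> S \<Longrightarrow> tneg B a \<in> S"
      "\<And>a. a \<in> S \<Longrightarrow> tG B a \<in> S"
      "\<And>a. a \<in> S \<Longrightarrow> tH B a \<in> S"
      "tzero B \<in> S" "tone B \<in> S"
  proof -
    fix a b assume "a \<in> S" "b \<in> S"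
    then obtain s t where st: "s \<in> tterms X" "t \<in> tterms X" "a = teval B v s" "b = teval B v t" using ST by blast
    show "tmeet B a b \<in> S" unfolding S_def using st wt[OF st(1,2)] by (auto intro!: image_eqI[where x="TMeet s t"])
    show "tjoin B a b \<in> S" unfolding S_def using st wt[OF st(1,2)] by (auto intro!: image_eqI[where x="TJoin s t"])
  next
    fix a assume "a \<in> S"
    then obtain s where st: "s \<in> tterms X" "a = teval B v s" unfolding S_def by blast
    show "tneg B a \<in> S" unfolding S_def using st wt[OF st(1,1)] by (auto intro!: image_eqI[where x="TNeg s"])
    show "tG B a \<in> S" unfolding S_def using st wt[OF st(1,1)] by (auto intro!: image_eqI[where x="TGt s"])
    show "tH B a \<in> S" unfolding S_def using st wt[OF st(1,1)] by (auto intro!: image_eqI[where x="THt s"])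
  next
    show "tzero B \<in> S" unfolding S_def by (auto intro!: image_eqI[where x="TZero"] simp: tterms_def)
    show "tone B \<in> S" unfolding S_def by (auto intro!: image_eqI[where x="TOne"] simp: tterms_def)
  qed
  define A' where "A' = tba_copy B S g"
  have A': "is_tba A'" unfolding A'_def by (rule tba_copy_is_tba[OF B SC inj cl])
  have vS: "v x \<in> S" if "x \<in> X" for x
  proof -
    have "TVar x \<in> tterms X" using that by (simp add: tterms_def)
    then show ?thesis unfolding S_def by (metis image_eqI teval.simps(1))
  qed
  have ev: "teval A' (g \<circ> v) r = g (teval B v r) \<and> teval B v r \<in> S" if "r \<in> tterms X" for r
    using that
  proof (induction r)
    case (TVar x) then show ?case using vS by (simp add: tterms_def)
  next
    case (TMeet r1 r2) then show ?case using cl(1) by (simp add: tterms_def A'_def tba_copy_simps tba_copy_simps1 inj)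
  next
    case (TJoin r1 r2) then show ?case using cl(2) by (simp add: tterms_def A'_def tba_copy_simps tba_copy_simps1 inj)
  next
    case (TNeg r1) then show ?case using cl(3) by (simp add: tterms_def A'_def tba_copy_simps tba_copy_simps1 inj)
  next
    case TZero then show ?case using cl(6) by (simp add: A'_def tba_copy_simps2)
  next
    case TOne then show ?case using cl(7) by (simp add: A'_def tba_copy_simps2)
  next
    case (TGt r1) then show ?case using cl(4) by (simp add: tterms_def A'_def tba_copy_simps tba_copy_simps1 inj)
  next
    case (THt r1) then show ?case using cl(5) by (simp add: tterms_def A'_def tba_copy_simps tba_copy_simps1 inj)
  qed
  have gv: "g \<circ> v \<in> X \<rightarrow> tcar A'" using vS by (auto simp: A'_def tba_copy_simps2)
  have sX: "s \<in> tterms X" "t \<in> tterms X" using st by (auto simp: tba_rel_def)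
  have "teval A' (g \<circ> v) s = teval A' (g \<circ> v) t" using st A' gv unfolding tba_rel_def by blast
  then have "g (teval B v s) = g (teval B v t)" using ev sX by simp
  then show ?thesis using inj ev sX by (meson inj_onD)
qed

definition wcls :: "'x set \<Rightarrow> 'x wterm \<Rightarrow> 'x wterm set" where "wcls X t = whb_rel X `` {t}"

lemma wterms_simps[simp]:
  "WVar x \<in> wterms X \<longleftrightarrow> x \<in> X"
  "WMeet s t \<in> wterms X \<longleftrightarrow> s \<in> wterms X \<and> t \<in> wterms X"
  "WJoin s t \<in> wterms X \<longleftrightarrow> s \<in> wterms X \<and> t \<in> wterms X"
  "WImp s t \<in> wterms X \<longleftrightarrow> s \<in> wterms X \<and> t \<in> wterms X"
  "WCoimp s t \<in> wterms X \<longleftrightarrow> s \<in> wterms X \<and> t \<in> wterms X"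
  "WZero \<in> wterms X" "WOne \<in> wterms X"
  by (auto simp: wterms_def)

lemma whb_rel_equiv: "equiv (wterms X) (whb_rel X)"
  unfolding equiv_def refl_on_def sym_def trans_def whb_rel_def by auto

lemma whb_rel_sub: "(s, t) \<in> whb_rel X \<Longrightarrow> s \<in> wterms X \<and> t \<in> wterms X"
  by (simp add: whb_rel_def)

lemma rel_by_sem:
  fixes X :: "'x set"
  shows "s \<in> wterms X \<Longrightarrow> t \<in> wterms X \<Longrightarrow>
   (\<And>(A :: 'x wterm set whb) v. is_whb A \<Longrightarrow> v \<in> X \<rightarrow> wcar A \<Longrightarrow> weval A v s = weval A v t) \<Longrightarrow> (s, t) \<in> whb_rel X"
proof -
  assume a: "s \<in> wterms X" "t \<in> wterms X" and
    b: "\<And>(A :: 'x wterm set whb) v. is_whb A \<Longrightarrow> v \<in> X \<rightarrow> wcar A \<Longrightarrow> weval A v s = weval A v t"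
  have "\<forall>(A :: 'x wterm set whb) v. is_whb A \<longrightarrow> v \<in> X \<rightarrow> wcar A \<longrightarrow> weval A v s = weval A v t"
    using b by blast
  then show ?thesis using a unfolding whb_rel_def by simp
qed

lemma wcls_eq: "s \<in> wterms X \<Longrightarrow> t \<in> wterms X \<Longrightarrow> wcls X s = wcls X t \<longleftrightarrow> (s, t) \<in> whb_rel X"
  unfolding wcls_def using eq_equiv_class_iff[OF whb_rel_equiv] by blast

lemma wcls_in: "t \<in> wterms X \<Longrightarrow> wcls X t \<in> wterms X // whb_rel X"
  unfolding wcls_def by (rule quotientI)

lemma wrep_in: "t \<in> wterms X \<Longrightarrow> wrep (wcls X t) \<in> wcls X t"
proof -
  assume "t \<in> wterms X"
  then have "t \<in> wcls X t" unfolding wcls_def using whb_rel_equiv by (metis equiv_class_self)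
  then show ?thesis unfolding wrep_def by (rule someI)
qed

lemma wrep_rel: "t \<in> wterms X \<Longrightarrow> (t, wrep (wcls X t)) \<in> whb_rel X"
  using wrep_in by (simp add: wcls_def)

lemma wrep_terms: "t \<in> wterms X \<Longrightarrow> wrep (wcls X t) \<in> wterms X"
  using wrep_rel whb_rel_sub by blast

lemma wquot_cases: "a \<in> wterms X // whb_rel X \<Longrightarrow> \<exists>t\<in>wterms X. a = wcls X t"
  unfolding wcls_def by (auto elim: quotientE)

lemma ball_wquot: "(\<forall>a\<in>wterms X // whb_rel X. P a) \<longleftrightarrow> (\<forall>t\<in>wterms X. P (wcls X t))"
  using wquot_cases wcls_in by metis

lemma weval_wrep:
  fixes A :: "('b, 'c) whb_scheme"
  assumes "is_whb A" "v \<in> X \<rightarrow> wcar A" "t \<in> wterms X"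
  shows "weval A v (wrep (wcls X t)) = weval A v t"
  using whb_rel_sem[OF wrep_rel[OF assms(3)] assms(1,2)] by simp

lemma free_whb_simps:
  fixes X :: "'x set"
  assumes st: "s \<in> wterms X" "t \<in> wterms X"
  shows "wmeet (free_whb X) (wcls X s) (wcls X t) = wcls X (WMeet s t)"
    "wjoin (free_whb X) (wcls X s) (wcls X t) = wcls X (WJoin s t)"
    "wimp (free_whb X) (wcls X s) (wcls X t) = wcls X (WImp s t)"
    "wcoimp (free_whb X) (wcls X s) (wcls X t) = wcls X (WCoimp s t)"
proof -
  have r: "wrep (wcls X s) \<in> wterms X" "wrep (wcls X t) \<in> wterms X" using st wrep_terms by auto
  have e: "weval A v (wrep (wcls X s)) = weval A v s" "weval A v (wrep (wcls X t)) = weval A v t"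
    if "is_whb A" "v \<in> X \<rightarrow> wcar A" for A :: "'x wterm set whb" and v
    using weval_wrep[OF that] st by auto
  show "wmeet (free_whb X) (wcls X s) (wcls X t) = wcls X (WMeet s t)"
    unfolding free_whb_def wcls_def[symmetric] using r st by (simp add: wcls_eq) (rule rel_by_sem, simp_all add: e)
  show "wjoin (free_whb X) (wcls X s) (wcls X t) = wcls X (WJoin s t)"
    unfolding free_whb_def wcls_def[symmetric] using r st by (simp add: wcls_eq) (rule rel_by_sem, simp_all add: e)
  show "wimp (free_whb X) (wcls X s) (wcls X t) = wcls X (WImp s t)"
    unfolding free_whb_def wcls_def[symmetric] using r st by (simp add: wcls_eq) (rule rel_by_sem, simp_all add: e)
  show "wcoimp (free_whb X) (wcls X s) (wcls X t) = wcls X (WCoimp s t)"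
    unfolding free_whb_def wcls_def[symmetric] using r st by (simp add: wcls_eq) (rule rel_by_sem, simp_all add: e)
qed

lemma free_whb_simps2: "wcar (free_whb X) = wterms X // whb_rel X" "wzero (free_whb X) = wcls X WZero"
  "wone (free_whb X) = wcls X WOne"
  by (simp_all add: free_whb_def wcls_def)

definition whb_ax where "whb_ax A a b c \<longleftrightarrow> (wmeet A a b = wmeet A b a \<and> wjoin A a b = wjoin A b a \<and>
        wmeet A a (wmeet A b c) = wmeet A (wmeet A a b) c \<and> wjoin A a (wjoin A b c) = wjoin A (wjoin A a b) c \<and>
        wmeet A a (wjoin A a b) = a \<and> wjoin A a (wmeet A a b) = a \<and>
        wmeet A a (wjoin A b c) = wjoin A (wmeet A a b) (wmeet A a c) \<and>
        wmeet A (wzero A) a = wzero A \<and> wjoin A (wone A) a = wone A \<and>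
        wimp A a a = wone A \<and>
        wimp A a (wmeet A b c) = wmeet A (wimp A a b) (wimp A a c) \<and>
        wimp A (wjoin A a b) c = wmeet A (wimp A a c) (wimp A b c) \<and>
        wmeet A (wmeet A (wimp A a b) (wimp A b c)) (wimp A a c) = wmeet A (wimp A a b) (wimp A b c) \<and>
        wcoimp A a a = wzero A \<and>
        wcoimp A (wjoin A a b) c = wjoin A (wcoimp A a c) (wcoimp A b c) \<and>
        wcoimp A a (wmeet A b c) = wjoin A (wcoimp A a b) (wcoimp A a c) \<and>
        wmeet A (wcoimp A a c) (wjoin A (wcoimp A a b) (wcoimp A b c)) = wcoimp A a c \<and>
        wmeet A (wmeet A a (wcoimp A (wimp A a b) (wzero A))) b = wmeet A a (wcoimp A (wimp A a b) (wzero A)) \<and>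
        wmeet A a (wjoin A b (wimp A (wone A) (wcoimp A a b))) = a)"

lemma whb_ax_inst:
  fixes A :: "('b, 'c) whb_scheme"
  assumes A: "is_whb A" and C: "a \<in> wcar A" "b \<in> wcar A" "c \<in> wcar A"
  shows "wmeet A a b = wmeet A b a \<and> wjoin A a b = wjoin A b a \<and>
        wmeet A a (wmeet A b c) = wmeet A (wmeet A a b) c \<and> wjoin A a (wjoin A b c) = wjoin A (wjoin A a b) c \<and>
        wmeet A a (wjoin A a b) = a \<and> wjoin A a (wmeet A a b) = a \<and>
        wmeet A a (wjoin A b c) = wjoin A (wmeet A a b) (wmeet A a c) \<and>
        wmeet A (wzero A) a = wzero A \<and> wjoin A (wone A) a = wone A \<and>
        wimp A a a = wone A \<and>
        wimp A a (wmeet A b c) = wmeet A (wimp A a b) (wimp A a c) \<and>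
        wimp A (wjoin A a b) c = wmeet A (wimp A a c) (wimp A b c) \<and>
        wmeet A (wmeet A (wimp A a b) (wimp A b c)) (wimp A a c) = wmeet A (wimp A a b) (wimp A b c) \<and>
        wcoimp A a a = wzero A \<and>
        wcoimp A (wjoin A a b) c = wjoin A (wcoimp A a c) (wcoimp A b c) \<and>
        wcoimp A a (wmeet A b c) = wjoin A (wcoimp A a b) (wcoimp A a c) \<and>
        wmeet A (wcoimp A a c) (wjoin A (wcoimp A a b) (wcoimp A b c)) = wcoimp A a c \<and>
        wmeet A (wmeet A a (wcoimp A (wimp A a b) (wzero A))) b = wmeet A a (wcoimp A (wimp A a b) (wzero A)) \<and>
        wmeet A a (wjoin A b (wimp A (wone A) (wcoimp A a b))) = a"
  using A C unfolding is_whb_def bdlattice_def wle_def by blast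

lemma whb_rel_iff: fixes X :: "'x set" shows "(s, t) \<in> whb_rel X \<longleftrightarrow> s \<in> wterms X \<and> t \<in> wterms X \<and>
     (\<forall>(A :: 'x wterm set whb) v. is_whb A \<longrightarrow> v \<in> X \<rightarrow> wcar A \<longrightarrow> weval A v s = weval A v t)"
  by (simp add: whb_rel_def)

lemma free_whb_is_whb: "is_whb (free_whb (X :: 'x set))"
proof -
  have inst: "\<And>(A :: 'x wterm set whb) v s t r. is_whb A \<Longrightarrow> v \<in> X \<rightarrow> wcar A \<Longrightarrow> s \<in> wterms X \<Longrightarrow> t \<in> wterms X \<Longrightarrow> r \<in> wterms X \<Longrightarrow>
      whb_ax A (weval A v s) (weval A v t) (weval A v r)"
    unfolding whb_ax_def by (rule whb_ax_inst[OF _ weval_C weval_C weval_C])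
  note inst' = inst[unfolded whb_ax_def]
  show ?thesis
    unfolding is_whb_def bdlattice_def wle_def free_whb_simps2 ball_wquot
    apply (intro conjI ballI)
    apply (simp_all add: free_whb_simps wcls_in wcls_eq)
    apply (simp_all only: whb_rel_iff wterms_simps simp_thms)
    apply (simp_all)
    apply ((intro allI impI), (metis inst'))+
    done
qed

lemma weval_map: "weval A v (map_wterm l s) = weval A (v \<circ> l) s"
  by (induction s) auto

lemma whb_rel_map: fixes X :: "'x set" and Y :: "'y set" assumes "(s, t) \<in> whb_rel X" "l \<in> X \<rightarrow> Y"
  shows "(map_wterm l s, map_wterm l t) \<in> whb_rel Y"
proof -
  have st: "s \<in> wterms X" "t \<in> wterms X" using assms(1) by (auto simp: whb_rel_def)
  have "map_wterm l s \<in> wterms Y" "map_wterm l t \<in> wterms Y" using st assms(2)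
    by (auto simp: wterms_def wterm.set_map)
  moreover have "weval A v (map_wterm l s) = weval A v (map_wterm l t)" if "is_whb A" "v \<in> Y \<rightarrow> wcar A" for A :: "'y wterm set whb" and v
  proof -
    have "v \<circ> l \<in> X \<rightarrow> wcar A" using that assms(2) by auto
    then show ?thesis unfolding weval_map using whb_rel_sem[OF assms(1) that(1)] by blast
  qed
  ultimately show ?thesis by (rule rel_by_sem)
qed

lemma free_whb_map_cls: assumes l: "l \<in> X \<rightarrow> Y" and t: "t \<in> wterms X"
  shows "free_whb_map Y l (wcls X t) = wcls Y (map_wterm l t)"
proof -
  have "(map_wterm l t, map_wterm l (wrep (wcls X t))) \<in> whb_rel Y" using whb_rel_map[OF wrep_rel[OF t] l] .
  then have "wcls Y (map_wterm l (wrep (wcls X t))) = wcls Y (map_wterm l t)"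
    using whb_rel_sub wcls_eq by metis
  then show ?thesis unfolding free_whb_map_def wcls_def by simp
qed

definition tcls :: "'x set \<Rightarrow> 'x tterm \<Rightarrow> 'x tterm set" where "tcls X t = tba_rel X `` {t}"

lemma tterms_simps[simp]:
  "TVar x \<in> tterms X \<longleftrightarrow> x \<in> X"
  "TMeet s t \<in> tterms X \<longleftrightarrow> s \<in> tterms X \<and> t \<in> tterms X"
  "TJoin s t \<in> tterms X \<longleftrightarrow> s \<in> tterms X \<and> t \<in> tterms X"
  "TNeg s \<in> tterms X \<longleftrightarrow> s \<in> tterms X"
  "TGt s \<in> tterms X \<longleftrightarrow> s \<in> tterms X"
  "THt s \<in> tterms X \<longleftrightarrow> s \<in> tterms X"
  "TZero \<in> tterms X" "TOne \<in> tterms X"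
  by (auto simp: tterms_def)

lemma tba_rel_equiv: "equiv (tterms X) (tba_rel X)"
  unfolding equiv_def refl_on_def sym_def trans_def tba_rel_def by auto

lemma tba_rel_sub: "(s, t) \<in> tba_rel X \<Longrightarrow> s \<in> tterms X \<and> t \<in> tterms X"
  by (simp add: tba_rel_def)

lemma tba_rel_iff: fixes X :: "'x set" shows "(s, t) \<in> tba_rel X \<longleftrightarrow> s \<in> tterms X \<and> t \<in> tterms X \<and>
     (\<forall>(A :: 'x tterm set tba) v. is_tba A \<longrightarrow> v \<in> X \<rightarrow> tcar A \<longrightarrow> teval A v s = teval A v t)"
  by (simp add: tba_rel_def)

lemma trel_by_sem:
  fixes X :: "'x set"
  shows "s \<in> tterms X \<Longrightarrow> t \<in> tterms X \<Longrightarrow>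
   (\<And>(A :: 'x tterm set tba) v. is_tba A \<Longrightarrow> v \<in> X \<rightarrow> tcar A \<Longrightarrow> teval A v s = teval A v t) \<Longrightarrow> (s, t) \<in> tba_rel X"
  unfolding tba_rel_iff by blast

lemma tcls_eq: "s \<in> tterms X \<Longrightarrow> t \<in> tterms X \<Longrightarrow> tcls X s = tcls X t \<longleftrightarrow> (s, t) \<in> tba_rel X"
  unfolding tcls_def using eq_equiv_class_iff[OF tba_rel_equiv] by blast

lemma tcls_in: "t \<in> tterms X \<Longrightarrow> tcls X t \<in> tterms X // tba_rel X"
  unfolding tcls_def by (rule quotientI)

lemma trep_in: "t \<in> tterms X \<Longrightarrow> trep (tcls X t) \<in> tcls X t"
proof -
  assume "t \<in> tterms X"
  then have "t \<in> tcls X t" unfolding tcls_def using tba_rel_equiv by (metis equiv_class_self)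
  then show ?thesis unfolding trep_def by (rule someI)
qed

lemma trep_rel: "t \<in> tterms X \<Longrightarrow> (t, trep (tcls X t)) \<in> tba_rel X"
  using trep_in by (simp add: tcls_def)

lemma trep_terms: "t \<in> tterms X \<Longrightarrow> trep (tcls X t) \<in> tterms X"
  using trep_rel tba_rel_sub by blast

lemma tquot_cases: "a \<in> tterms X // tba_rel X \<Longrightarrow> \<exists>t\<in>tterms X. a = tcls X t"
  unfolding tcls_def by (auto elim: quotientE)

lemma ball_tquot: "(\<forall>a\<in>tterms X // tba_rel X. P a) \<longleftrightarrow> (\<forall>t\<in>tterms X. P (tcls X t))"
  using tquot_cases tcls_in by metis

lemma teval_trep:
  fixes A :: "('b, 'c) tba_scheme"
  assumes "is_tba A" "v \<in> X \<rightarrow> tcar A" "t \<in> tterms X"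
  shows "teval A v (trep (tcls X t)) = teval A v t"
  using tba_rel_sem[OF trep_rel[OF assms(3)] assms(1,2)] by simp

lemma free_tba_simps:
  fixes X :: "'x set"
  assumes st: "s \<in> tterms X" "t \<in> tterms X"
  shows "tmeet (free_tba X) (tcls X s) (tcls X t) = tcls X (TMeet s t)"
    "tjoin (free_tba X) (tcls X s) (tcls X t) = tcls X (TJoin s t)"
proof -
  have r: "trep (tcls X s) \<in> tterms X" "trep (tcls X t) \<in> tterms X" using st trep_terms by auto
  have e: "teval A v (trep (tcls X s)) = teval A v s" "teval A v (trep (tcls X t)) = teval A v t"
    if "is_tba A" "v \<in> X \<rightarrow> tcar A" for A :: "'x tterm set tba" and v
    using teval_trep[OF that] st by auto
  show "tmeet (free_tba X) (tcls X s) (tcls X t) = tcls X (TMeet s t)"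
    unfolding free_tba_def tcls_def[symmetric] using r st by (simp add: tcls_eq) (rule trel_by_sem, simp_all add: e)
  show "tjoin (free_tba X) (tcls X s) (tcls X t) = tcls X (TJoin s t)"
    unfolding free_tba_def tcls_def[symmetric] using r st by (simp add: tcls_eq) (rule trel_by_sem, simp_all add: e)
qed

lemma free_tba_simps1:
  fixes X :: "'x set"
  assumes s: "s \<in> tterms X"
  shows "tneg (free_tba X) (tcls X s) = tcls X (TNeg s)"
    "tG (free_tba X) (tcls X s) = tcls X (TGt s)"
    "tH (free_tba X) (tcls X s) = tcls X (THt s)"
proof -
  have r: "trep (tcls X s) \<in> tterms X" using s trep_terms by auto
  have e: "teval A v (trep (tcls X s)) = teval A v s"
    if "is_tba A" "v \<in> X \<rightarrow> tcar A" for A :: "'x tterm set tba" and v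
    using teval_trep[OF that] s by auto
  show "tneg (free_tba X) (tcls X s) = tcls X (TNeg s)"
    unfolding free_tba_def tcls_def[symmetric] using r s by (simp add: tcls_eq) (rule trel_by_sem, simp_all add: e)
  show "tG (free_tba X) (tcls X s) = tcls X (TGt s)"
    unfolding free_tba_def tcls_def[symmetric] using r s by (simp add: tcls_eq) (rule trel_by_sem, simp_all add: e)
  show "tH (free_tba X) (tcls X s) = tcls X (THt s)"
    unfolding free_tba_def tcls_def[symmetric] using r s by (simp add: tcls_eq) (rule trel_by_sem, simp_all add: e)
qed

lemma free_tba_simps2: "tcar (free_tba X) = tterms X // tba_rel X" "tzero (free_tba X) = tcls X TZero"
  "tone (free_tba X) = tcls X TOne"
  by (simp_all add: free_tba_def tcls_def)

definition tba_ax where "tba_ax A a b c \<longleftrightarrow> (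
        tmeet A a b = tmeet A b a \<and> tjoin A a b = tjoin A b a \<and>
        tmeet A a (tmeet A b c) = tmeet A (tmeet A a b) c \<and> tjoin A a (tjoin A b c) = tjoin A (tjoin A a b) c \<and>
        tmeet A a (tjoin A a b) = a \<and> tjoin A a (tmeet A a b) = a \<and>
        tmeet A a (tjoin A b c) = tjoin A (tmeet A a b) (tmeet A a c) \<and>
        tmeet A (tzero A) a = tzero A \<and> tjoin A (tone A) a = tone A \<and>
        tmeet A a (tneg A a) = tzero A \<and> tjoin A a (tneg A a) = tone A \<and>
        ((tmeet A (tneg A (tH A (tneg A a))) b = tneg A (tH A (tneg A a))) \<longleftrightarrow> (tmeet A a (tG A b) = a)) \<and>
        ((tmeet A (tneg A (tG A (tneg A a))) b = tneg A (tG A (tneg A a))) \<longleftrightarrow> (tmeet A a (tH A b) = a)))"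

lemma tba_ax_inst:
  fixes A :: "('b, 'c) tba_scheme"
  assumes A: "is_tba A" and C: "a \<in> tcar A" "b \<in> tcar A" "c \<in> tcar A"
  shows "tba_ax A a b c"
  using A C unfolding is_tba_def bdlattice_def tle_def tP_def tF_def tba_ax_def by blast

lemma free_tba_is_tba: "is_tba (free_tba (X :: 'x set))"
proof -
  have inst: "\<And>(A :: 'x tterm set tba) v s t r. is_tba A \<Longrightarrow> v \<in> X \<rightarrow> tcar A \<Longrightarrow> s \<in> tterms X \<Longrightarrow> t \<in> tterms X \<Longrightarrow> r \<in> tterms X \<Longrightarrow>
      tba_ax A (teval A v s) (teval A v t) (teval A v r)"
    by (rule tba_ax_inst[OF _ teval_C teval_C teval_C])
  note inst' = inst[unfolded tba_ax_def]
  show ?thesis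
    unfolding is_tba_def bdlattice_def tle_def tP_def tF_def free_tba_simps2 ball_tquot
    apply (intro conjI ballI)
    apply (simp_all add: free_tba_simps free_tba_simps1 tcls_in tcls_eq)
    apply (simp_all only: tba_rel_iff tterms_simps simp_thms)
    apply (simp_all)
    apply ((intro allI impI)?, (metis inst'))+
    done
qed

lemma teval_map: "teval A v (map_tterm l s) = teval A (v \<circ> l) s"
  by (induction s) auto

lemma tba_rel_map: fixes X :: "'x set" and Y :: "'y set" assumes "(s, t) \<in> tba_rel X" "l \<in> X \<rightarrow> Y"
  shows "(map_tterm l s, map_tterm l t) \<in> tba_rel Y"
proof -
  have st: "s \<in> tterms X" "t \<in> tterms X" using assms(1) by (auto simp: tba_rel_def)
  have "map_tterm l s \<in> tterms Y" "map_tterm l t \<in> tterms Y" using st assms(2)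
    by (auto simp: tterms_def tterm.set_map)
  moreover have "teval A v (map_tterm l s) = teval A v (map_tterm l t)" if "is_tba A" "v \<in> Y \<rightarrow> tcar A" for A :: "'y tterm set tba" and v
  proof -
    have "v \<circ> l \<in> X \<rightarrow> tcar A" using that assms(2) by auto
    then show ?thesis unfolding teval_map using tba_rel_sem[OF assms(1) that(1)] by blast
  qed
  ultimately show ?thesis by (rule trel_by_sem)
qed

lemma free_tba_map_cls: assumes l: "l \<in> X \<rightarrow> Y" and t: "t \<in> tterms X"
  shows "free_tba_map Y l (tcls X t) = tcls Y (map_tterm l t)"
proof -
  have "(map_tterm l t, map_tterm l (trep (tcls X t))) \<in> tba_rel Y" using tba_rel_map[OF trep_rel[OF t] l] .
  then have "tcls Y (map_tterm l (trep (tcls X t))) = tcls Y (map_tterm l t)"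
    using tba_rel_sub tcls_eq by metis
  then show ?thesis unfolding free_tba_map_def tcls_def by simp
qed

definition fhat :: "('a, 'c) whb_scheme \<Rightarrow> ('b, 'd) tba_scheme \<Rightarrow> ('a \<Rightarrow> 'b) \<Rightarrow> 'a set set \<Rightarrow> 'b" where
  "fhat A B f U = (THE x. x \<in> tcar B \<and> (\<forall>q. lpf (tcar B) (tmeet B) (tjoin B) (tzero B) (tone B) q \<longrightarrow>
      (x \<in> q \<longleftrightarrow> {a \<in> wcar A. f a \<in> q} \<in> U)))"

locale ext = W: whb_alg A + T: tba_alg B
  for A :: "('a, 'c) whb_scheme" and B :: "('b, 'd) tba_scheme" +
  fixes f :: "'a \<Rightarrow> 'b"
  assumes fC: "\<And>a. a \<in> wcar A \<Longrightarrow> f a \<in> tcar B"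
    and f_meet: "\<And>a b. a \<in> wcar A \<Longrightarrow> b \<in> wcar A \<Longrightarrow> f (wmeet A a b) = tmeet B (f a) (f b)"
    and f_join: "\<And>a b. a \<in> wcar A \<Longrightarrow> b \<in> wcar A \<Longrightarrow> f (wjoin A a b) = tjoin B (f a) (f b)"
    and f_imp: "\<And>a b. a \<in> wcar A \<Longrightarrow> b \<in> wcar A \<Longrightarrow> f (wimp A a b) = tG B (tjoin B (tneg B (f a)) (f b))"
    and f_coimp: "\<And>a b. a \<in> wcar A \<Longrightarrow> b \<in> wcar A \<Longrightarrow> f (wcoimp A a b) = tP B (tmeet B (f a) (tneg B (f b)))"
    and f_zero: "f (wzero A) = tzero B" and f_one: "f (wone A) = tone B"
    and f_inj: "inj_on f (wcar A)"
begin

definition pull where "pull q = {a \<in> wcar A. f a \<in> q}"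

lemma pull_pf: assumes q: "T.pf q" shows "W.pf (pull q)"
  unfolding lpf_def
proof (intro conjI ballI impI)
  show "pull q \<subseteq> wcar A" by (auto simp: pull_def)
  show "wone A \<in> pull q" using T.pfD(2)[OF q] by (simp add: pull_def f_one)
  show "wzero A \<notin> pull q" using T.pfD(3)[OF q] by (simp add: pull_def f_zero)
  show "b \<in> pull q" if "a \<in> pull q" "b \<in> wcar A" "wmeet A a b = a" for a b
  proof -
    have "f a = tmeet B (f a) (f b)" using that f_meet[of a b] by (simp add: pull_def)
    then have "f a \<in> q \<Longrightarrow> f b \<in> q" using T.pfD(5)[OF q] fC that by (metis (no_types, lifting) mem_Collect_eq pull_def)
    then show ?thesis using that by (simp add: pull_def)
  qed
  show "wmeet A a b \<in> pull q" if "a \<in> pull q" "b \<in> pull q" for a b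
    using that T.pfD(5)[OF q] fC f_meet by (simp add: pull_def)
  show "a \<in> pull q \<or> b \<in> pull q" if "a \<in> wcar A" "b \<in> wcar A" "wjoin A a b \<in> pull q" for a b
    using that T.pfD(6)[OF q] fC f_join by (simp add: pull_def)
qed

lemma f_meetl: "set xs \<subseteq> wcar A \<Longrightarrow> f (W.meetl xs) = T.meetl (map f xs)"
  by (induction xs) (simp_all add: f_one f_meet)
lemma f_joinl: "set xs \<subseteq> wcar A \<Longrightarrow> f (W.joinl xs) = T.joinl (map f xs)"
  by (induction xs) (simp_all add: f_zero f_join)

lemma lift_list: "set xs \<subseteq> f ` S \<Longrightarrow> \<exists>xs'. set xs' \<subseteq> S \<and> xs = map f xs'"
proof (induction xs)
  case Nil then show ?case by simp
next
  case (Cons x xs)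
  then obtain xs' where "set xs' \<subseteq> S" "xs = map f xs'" by auto
  moreover obtain y where "y \<in> S" "x = f y" using Cons.prems by auto
  ultimately show ?case by (intro exI[of _ "y # xs'"]) auto
qed

lemma pull_surj: assumes P: "W.pf P" shows "\<exists>q. T.pf q \<and> pull q = P"
proof -
  have PC: "P \<subseteq> wcar A" using W.pfD(1)[OF P] .
  have "\<not> (\<exists>xs ys. set xs \<subseteq> f ` P \<and> set ys \<subseteq> f ` (wcar A - P) \<and> T.le (T.meetl xs) (T.joinl ys))"
  proof
    assume "\<exists>xs ys. set xs \<subseteq> f ` P \<and> set ys \<subseteq> f ` (wcar A - P) \<and> T.le (T.meetl xs) (T.joinl ys)"
    then obtain xs ys where xy: "set xs \<subseteq> f ` P" "set ys \<subseteq> f ` (wcar A - P)" "T.le (T.meetl xs) (T.joinl ys)" by blast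
    obtain xs' where xs': "set xs' \<subseteq> P" "xs = map f xs'" using lift_list[OF xy(1)] by blast
    obtain ys' where ys': "set ys' \<subseteq> wcar A - P" "ys = map f ys'" using lift_list[OF xy(2)] by blast
    have C: "set xs' \<subseteq> wcar A" "set ys' \<subseteq> wcar A" using xs' ys' PC by auto
    define mm where "mm = W.meetl xs'"
    define jj where "jj = W.joinl ys'"
    have mjC: "mm \<in> wcar A" "jj \<in> wcar A" using C by (simp_all add: mm_def jj_def)
    have "T.le (f mm) (f jj)" using xy(3) xs' ys' C by (simp add: mm_def jj_def f_meetl f_joinl)
    then have "f (wmeet A mm jj) = f mm" using mjC by (simp add: f_meet T.le_def)
    then have "wmeet A mm jj = mm" using f_inj mjC by (meson W.mC inj_onD)
    then have "W.le mm jj" by (simp add: W.le_def)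
    moreover have "mm \<in> P" using W.pf_meetl[OF P C(1)] xs'(1) unfolding mm_def by blast
    ultimately have "jj \<in> P" using W.pf_le[OF P] mjC by blast
    then obtain y where "y \<in> set ys'" "y \<in> P" using W.pf_joinl[OF P C(2)] by (auto simp: jj_def)
    then show False using ys' by blast
  qed
  moreover have s1: "f ` (wcar A - P) \<subseteq> tcar B" and s2: "f ` P \<subseteq> tcar B" using fC PC by auto
  ultimately obtain q where q: "T.pf q" "f ` P \<subseteq> q" "f ` (wcar A - P) \<inter> q = {}"
    using T.sep_lists[OF s1 s2] by blast
  have "pull q = P"
  proof
    show "pull q \<subseteq> P" using q(3) unfolding pull_def by blast
    show "P \<subseteq> pull q" using q(2) PC unfolding pull_def by blast
  qed
  then show ?thesis using q by blast
qed

abbreviation "clause \<equiv> (\<lambda>(a, b). tjoin B (tneg B (f a)) (f b))"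

lemma clauseC: "set ps \<subseteq> wcar A \<times> wcar A \<Longrightarrow> set (map clause ps) \<subseteq> tcar B"
  using fC by auto

lemma cnf_val:
  assumes ps: "set ps \<subseteq> wcar A \<times> wcar A" and q: "T.pf q"
  shows "T.meetl (map clause ps) \<in> q \<longleftrightarrow> pull q \<in> cnf A ps"
proof -
  have "T.meetl (map clause ps) \<in> q \<longleftrightarrow> (\<forall>p\<in>set ps. clause p \<in> q)"
    using T.pf_meetl[OF q clauseC[OF ps]] by simp
  also have "\<dots> \<longleftrightarrow> (\<forall>(a, b)\<in>set ps. f a \<in> q \<longrightarrow> f b \<in> q)"
  proof -
    have "clause (a, b) \<in> q \<longleftrightarrow> (f a \<in> q \<longrightarrow> f b \<in> q)" if "(a, b) \<in> set ps" for a b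
    proof -
      have "a \<in> wcar A" "b \<in> wcar A" using that ps by auto
      then show ?thesis using T.pfD(6)[OF q] T.pf_neg[OF q] fC by simp
    qed
    then show ?thesis by auto
  qed
  also have "\<dots> \<longleftrightarrow> pull q \<in> cnf A ps"
    using pull_pf[OF q] ps by (auto simp: cnf_def pull_def W.pfs_eq)
  finally show ?thesis .
qed

lemma fhat_eq:
  assumes x: "x \<in> tcar B" and ch: "\<And>q. T.pf q \<Longrightarrow> x \<in> q \<longleftrightarrow> pull q \<in> U"
  shows "fhat A B f U = x"
  unfolding fhat_def
proof (rule the_equality)
  show "x \<in> tcar B \<and> (\<forall>q. T.pf q \<longrightarrow> (x \<in> q \<longleftrightarrow> {a \<in> wcar A. f a \<in> q} \<in> U))"
    using x ch by (simp add: pull_def)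
  fix y assume y: "y \<in> tcar B \<and> (\<forall>q. T.pf q \<longrightarrow> (y \<in> q \<longleftrightarrow> {a \<in> wcar A. f a \<in> q} \<in> U))"
  show "y = x" using y x ch by (intro T.eq_pf) (auto simp: pull_def)
qed

lemma fhat_cnf: assumes ps: "set ps \<subseteq> wcar A \<times> wcar A" shows "fhat A B f (cnf A ps) = T.meetl (map clause ps)"
  by (rule fhat_eq) (simp_all add: T.meetlC[OF clauseC[OF ps]] cnf_val[OF ps])

lemma fhat_char:
  assumes U: "U \<in> tcar W.TA"
  shows "fhat A B f U \<in> tcar B \<and> (\<forall>q. T.pf q \<longrightarrow> (fhat A B f U \<in> q \<longleftrightarrow> pull q \<in> U))"
proof -
  obtain ps where ps: "set ps \<subseteq> wcar A \<times> wcar A" "U = cnf A ps" using U W.Tcar by blast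
  show ?thesis using fhat_cnf[OF ps(1)] cnf_val[OF ps(1)] clauseC[OF ps(1)] ps(2) by simp
qed

lemma fhatC: "U \<in> tcar W.TA \<Longrightarrow> fhat A B f U \<in> tcar B" using fhat_char by blast
lemma fhat_mem: "U \<in> tcar W.TA \<Longrightarrow> T.pf q \<Longrightarrow> fhat A B f U \<in> q \<longleftrightarrow> pull q \<in> U" using fhat_char by blast

lemma pull_in_pfs: "T.pf q \<Longrightarrow> pull q \<in> W.pfs" using pull_pf W.pfs_eq by blast

lemma fhat_meet: "U \<in> tcar W.TA \<Longrightarrow> V \<in> tcar W.TA \<Longrightarrow> fhat A B f (U \<inter> V) = tmeet B (fhat A B f U) (fhat A B f V)"
  by (rule fhat_eq) (auto simp: fhatC fhat_mem T.pfD(5))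
lemma fhat_join: "U \<in> tcar W.TA \<Longrightarrow> V \<in> tcar W.TA \<Longrightarrow> fhat A B f (U \<union> V) = tjoin B (fhat A B f U) (fhat A B f V)"
  by (rule fhat_eq) (auto simp: fhatC fhat_mem T.pfD(6))
lemma fhat_neg: "U \<in> tcar W.TA \<Longrightarrow> fhat A B f (W.pfs - U) = tneg B (fhat A B f U)"
  by (rule fhat_eq) (auto simp: fhatC fhat_mem T.pf_neg pull_in_pfs)
lemma fhat_zero: "fhat A B f {} = tzero B"
  by (rule fhat_eq) (auto simp: T.pfD(3))
lemma fhat_one: "fhat A B f W.pfs = tone B"
  by (rule fhat_eq) (auto simp: T.pfD(2) pull_in_pfs)

lemma fhat_sigma: "a \<in> wcar A \<Longrightarrow> fhat A B f (wsigma A a) = f a"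
  by (rule fhat_eq) (auto simp: fC W.sigma_cnf cnf_def pull_def W.pfs_eq pull_pf[unfolded pull_def] T.pfD(2) f_one)

lemma fhat_G: assumes U: "U \<in> tcar W.TA" shows "fhat A B f (tG W.TA U) = tG B (fhat A B f U)"
proof -
  obtain ps where ps: "set ps \<subseteq> wcar A \<times> wcar A" "U = cnf A ps" using U W.Tcar by blast
  have GU: "tG W.TA U = cnf A (map (\<lambda>(a, b). (wone A, wimp A a b)) ps)" using W.G_cnf[OF ps(1)] ps(2) by simp
  have e: "tG B (fhat A B f U) = T.meetl (map (tG B) (map clause ps))"
    using fhat_cnf[OF ps(1)] ps(2) T.G_meetl[OF clauseC[OF ps(1)]] by simp
  show ?thesis
  proof (rule fhat_eq)
    show "tG B (fhat A B f U) \<in> tcar B" using fhatC[OF U] by simp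
    fix q assume q: "T.pf q"
    have "tG B (fhat A B f U) \<in> q \<longleftrightarrow> (\<forall>p\<in>set ps. tG B (clause p) \<in> q)"
    proof -
      have gC: "set (map (tG B) (map clause ps)) \<subseteq> tcar B" using clauseC[OF ps(1)] by auto
      show ?thesis unfolding e T.pf_meetl[OF q gC] by simp
    qed
    also have "\<dots> \<longleftrightarrow> (\<forall>(a, b)\<in>set ps. f (wimp A a b) \<in> q)"
    proof -
      have "tG B (clause (a, b)) = f (wimp A a b)" if "(a, b) \<in> set ps" for a b
        using that ps(1) f_imp by auto
      then show ?thesis by auto
    qed
    also have "\<dots> \<longleftrightarrow> pull q \<in> tG W.TA U"
      unfolding GU using pull_in_pfs[OF q] W.pfD(2)[OF pull_pf[OF q]] ps(1) by (auto simp: cnf_def pull_def)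
    finally show "tG B (fhat A B f U) \<in> q \<longleftrightarrow> pull q \<in> tG W.TA U" .
  qed
qed

lemma fhat_H: assumes U: "U \<in> tcar W.TA" shows "fhat A B f (tH W.TA U) = tH B (fhat A B f U)"
proof -
  obtain ps where ps: "set ps \<subseteq> wcar A \<times> wcar A" "U = cnf A ps" using U W.Tcar by blast
  have HU: "tH W.TA U = cnf A (map (\<lambda>(a, b). (wcoimp A a b, wzero A)) ps)" using W.H_cnf[OF ps(1)] ps(2) by simp
  have e: "tH B (fhat A B f U) = T.meetl (map (tH B) (map clause ps))"
    using fhat_cnf[OF ps(1)] ps(2) T.H_meetl[OF clauseC[OF ps(1)]] by simp
  have co: "f (wcoimp A a b) = tneg B (tH B (tjoin B (tneg B (f a)) (f b)))" if "a \<in> wcar A" "b \<in> wcar A" for a b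
  proof -
    have "tneg B (tmeet B (f a) (tneg B (f b))) = tjoin B (tneg B (f a)) (f b)"
      using that fC by (intro T.beq) (auto simp: T.mem_simps)
    then show ?thesis using f_coimp[OF that] by (simp add: tP_def)
  qed
  show ?thesis
  proof (rule fhat_eq)
    show "tH B (fhat A B f U) \<in> tcar B" using fhatC[OF U] by simp
    fix q assume q: "T.pf q"
    have "tH B (fhat A B f U) \<in> q \<longleftrightarrow> (\<forall>p\<in>set ps. tH B (clause p) \<in> q)"
    proof -
      have gC: "set (map (tH B) (map clause ps)) \<subseteq> tcar B" using clauseC[OF ps(1)] by auto
      show ?thesis unfolding e T.pf_meetl[OF q gC] by simp
    qed
    also have "\<dots> \<longleftrightarrow> (\<forall>(a, b)\<in>set ps. f (wcoimp A a b) \<notin> q)"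
    proof -
      have "tH B (clause (a, b)) \<in> q \<longleftrightarrow> f (wcoimp A a b) \<notin> q" if "(a, b) \<in> set ps" for a b
      proof -
        have ab: "a \<in> wcar A" "b \<in> wcar A" using that ps(1) by auto
        then show ?thesis using co[OF ab] T.pf_neg[OF q] fC by simp
      qed
      then show ?thesis by auto
    qed
    also have "\<dots> \<longleftrightarrow> pull q \<in> tH W.TA U"
    proof -
      have "\<forall>(a, b)\<in>set ps. W.coimp a b \<in> wcar A" using ps(1) by auto
      then show ?thesis
        unfolding HU using pull_in_pfs[OF q] T.pfD(3)[OF q] f_zero ps(1) by (auto simp: cnf_def pull_def)
    qed
    finally show "tH B (fhat A B f U) \<in> q \<longleftrightarrow> pull q \<in> tH W.TA U" .
  qed
qed

lemma fhat_inj: "inj_on (fhat A B f) (tcar W.TA)"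
proof (rule inj_onI)
  fix U V assume U: "U \<in> tcar W.TA" and V: "V \<in> tcar W.TA" and e: "fhat A B f U = fhat A B f V"
  have "P \<in> U \<longleftrightarrow> P \<in> V" if "P \<in> W.pfs" for P
  proof -
    have "W.pf P" using that W.pfs_eq by simp
    then obtain q where q: "T.pf q" "pull q = P" using pull_surj by blast
    show ?thesis using fhat_mem[OF U q(1)] fhat_mem[OF V q(1)] e q(2) by simp
  qed
  then show "U = V" using W.Tcar_sub[OF U] W.Tcar_sub[OF V] by blast
qed

lemma fhat_hom: "tba_hom W.TA B (fhat A B f)"
  unfolding tba_hom_def
  using fhatC fhat_meet fhat_join fhat_neg fhat_G fhat_H fhat_zero fhat_one
  by (simp add: W.T_simps)

end

primrec tr :: "'x wterm \<Rightarrow> 'x tterm" where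
  "tr (WVar x) = TVar x"
| "tr (WMeet s t) = TMeet (tr s) (tr t)"
| "tr (WJoin s t) = TJoin (tr s) (tr t)"
| "tr (WImp s t) = TGt (TJoin (TNeg (tr s)) (tr t))"
| "tr (WCoimp s t) = TNeg (THt (TNeg (TMeet (tr s) (TNeg (tr t)))))"
| "tr WZero = TZero"
| "tr WOne = TOne"

lemma teval_tr: "teval B v (tr s) = weval (Wb B) v s"
  by (induction s) (simp_all add: Wb_def tP_def)

lemma tr_set: "set_tterm (tr s) = set_wterm s"
  by (induction s) auto

lemma tr_terms: "s \<in> wterms X \<Longrightarrow> tr s \<in> tterms X"
  by (simp add: wterms_def tterms_def tr_set)

lemma tr_map: "map_tterm l (tr s) = tr (map_wterm l s)"
  by (induction s) auto

lemma TR: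
  fixes X :: "'x set"
  assumes st: "(s, t) \<in> whb_rel X"
  shows "(tr s, tr t) \<in> tba_rel X"
proof (rule trel_by_sem)
  show "tr s \<in> tterms X" "tr t \<in> tterms X" using st tr_terms whb_rel_sub by blast+
  fix A :: "'x tterm set tba" and v assume A: "is_tba A" and v: "v \<in> X \<rightarrow> tcar A"
  interpret tba_alg A using A by (simp add: tba_alg_def)
  have "weval (Wb A) v s = weval (Wb A) v t"
    using whb_rel_sem[OF st W_whb] v by (simp add: Wb_def)
  then show "teval A v (tr s) = teval A v (tr t)" by (simp add: teval_tr)
qed

lemma (in whb_alg) sig_teval:
  assumes v: "v \<in> X \<rightarrow> wcar A" and s: "s \<in> wterms X"
  shows "teval TA (wsigma A \<circ> v) (tr s) = wsigma A (weval A v s)"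
  using s
proof (induction s)
  case (WVar x) then show ?case by simp
next
  case (WMeet s1 s2) then show ?case using weval_C[OF whb v] by (simp add: sig_meet T_simps)
next
  case (WJoin s1 s2) then show ?case using weval_C[OF whb v] by (simp add: sig_join T_simps)
next
  case (WImp s1 s2) then show ?case using weval_C[OF whb v] by (simp add: sig_imp)
next
  case (WCoimp s1 s2) then show ?case using weval_C[OF whb v] by (simp add: sig_coimp tP_def)
next
  case WZero then show ?case by (simp add: sig_zero T_simps)
next
  case WOne then show ?case by (simp add: sig_one T_simps)
qed

lemma TRinv:
  fixes X :: "'x set"
  assumes st: "s \<in> wterms X" "t \<in> wterms X" and r: "(tr s, tr t) \<in> tba_rel X"
  shows "(s, t) \<in> whb_rel X"
proof (rule rel_by_sem[OF st])
  fix A :: "'x wterm set whb" and v assume A: "is_whb A" and v: "v \<in> X \<rightarrow> wcar A"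
  interpret whb_alg A using A by (simp add: whb_alg_def)
  have sv: "wsigma A \<circ> v \<in> X \<rightarrow> tcar TA" using v sig_C by (auto simp: Pi_iff)
  have "teval TA (wsigma A \<circ> v) (tr s) = teval TA (wsigma A \<circ> v) (tr t)"
    by (rule tba_rel_sem[OF r T_is_tba sv])
  then have "wsigma A (weval A v s) = wsigma A (weval A v t)" using sig_teval[OF v] st by simp
  then show "weval A v s = weval A v t" using sig_inj weval_C[OF A v] st by blast
qed

definition fmap :: "'x set \<Rightarrow> 'x wterm set \<Rightarrow> 'x tterm set" where
  "fmap X a = tcls X (tr (wrep a))"

lemma fmap_cls: "s \<in> wterms X \<Longrightarrow> fmap X (wcls X s) = tcls X (tr s)"
proof -
  assume s: "s \<in> wterms X"
  have "(tr (wrep (wcls X s)), tr s) \<in> tba_rel X"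
    using TR[OF wrep_rel[OF s]] tba_rel_equiv by (meson equiv_def symD)
  then show ?thesis unfolding fmap_def using tcls_eq tba_rel_sub by metis
qed

lemma ext_free: "ext (free_whb X) (free_tba X) (fmap X)"
proof -
  interpret W: whb_alg "free_whb X" using free_whb_is_whb by (simp add: whb_alg_def)
  interpret T: tba_alg "free_tba X" using free_tba_is_tba by (simp add: tba_alg_def)
  have cases: "\<And>a. a \<in> wcar (free_whb X) \<Longrightarrow> \<exists>s\<in>wterms X. a = wcls X s"
    using wquot_cases free_whb_simps2(1) by metis
  show ?thesis
  proof (unfold_locales)
    fix a assume "a \<in> wcar (free_whb X)"
    then obtain s where s: "s \<in> wterms X" "a = wcls X s" using cases by blast
    show "fmap X a \<in> tcar (free_tba X)" using s fmap_cls tcls_in tr_terms free_tba_simps2 by metis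
  next
    fix a b assume "a \<in> wcar (free_whb X)" "b \<in> wcar (free_whb X)"
    then obtain s t where s: "s \<in> wterms X" "a = wcls X s" "t \<in> wterms X" "b = wcls X t" using cases by blast
    have tt: "tr s \<in> tterms X" "tr t \<in> tterms X" using s tr_terms by auto
    show "fmap X (wmeet (free_whb X) a b) = tmeet (free_tba X) (fmap X a) (fmap X b)"
      using s tt by (simp add: free_whb_simps fmap_cls free_tba_simps)
    show "fmap X (wjoin (free_whb X) a b) = tjoin (free_tba X) (fmap X a) (fmap X b)"
      using s tt by (simp add: free_whb_simps fmap_cls free_tba_simps)
    show "fmap X (wimp (free_whb X) a b) = tG (free_tba X) (tjoin (free_tba X) (tneg (free_tba X) (fmap X a)) (fmap X b))"
      using s tt by (simp add: free_whb_simps fmap_cls free_tba_simps free_tba_simps1)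
    show "fmap X (wcoimp (free_whb X) a b) = tP (free_tba X) (tmeet (free_tba X) (fmap X a) (tneg (free_tba X) (fmap X b)))"
      using s tt by (simp add: free_whb_simps fmap_cls free_tba_simps free_tba_simps1 tP_def)
  next
    show "fmap X (wzero (free_whb X)) = tzero (free_tba X)" by (simp add: free_whb_simps2 free_tba_simps2 fmap_cls)
    show "fmap X (wone (free_whb X)) = tone (free_tba X)" by (simp add: free_whb_simps2 free_tba_simps2 fmap_cls)
  next
    show "inj_on (fmap X) (wcar (free_whb X))"
    proof (rule inj_onI)
      fix a b assume "a \<in> wcar (free_whb X)" "b \<in> wcar (free_whb X)" and e: "fmap X a = fmap X b"
      then obtain s t where s: "s \<in> wterms X" "a = wcls X s" "t \<in> wterms X" "b = wcls X t" using cases by blast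
      have "(tr s, tr t) \<in> tba_rel X" using e s fmap_cls tcls_eq tr_terms by metis
      then have "(s, t) \<in> whb_rel X" using TRinv s by blast
      then show "a = b" using s wcls_eq by blast
    qed
  qed
qed

lemma fhat_surj:
  "fhat (free_whb X) (free_tba X) (fmap X) ` tcar (T_alg (free_whb X)) = tcar (free_tba X)"
proof -
  interpret E: ext "free_whb X" "free_tba X" "fmap X" by (rule ext_free)
  have "\<exists>U\<in>tcar (T_alg (free_whb X)). fhat (free_whb X) (free_tba X) (fmap X) U = tcls X t" if "t \<in> tterms X" for t
    using that
  proof (induction t)
    case (TVar x)
    have w: "wcls X (WVar x) \<in> wcar (free_whb X)" using TVar by (simp add: free_whb_simps2 wcls_in)
    show ?case
      using E.W.sig_C[OF w] E.fhat_sigma[OF w] fmap_cls[of "WVar x" X] TVar by auto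
  next
    case (TMeet s t)
    then obtain U V where UV: "U \<in> tcar E.W.TA" "V \<in> tcar E.W.TA" "fhat (free_whb X) (free_tba X) (fmap X) U = tcls X s"
      "fhat (free_whb X) (free_tba X) (fmap X) V = tcls X t" by auto
    have "fhat (free_whb X) (free_tba X) (fmap X) (U \<inter> V) = tcls X (TMeet s t)"
      using E.fhat_meet[OF UV(1,2)] UV(3,4) free_tba_simps[of s X t] TMeet.prems by simp
    then show ?case using E.W.Tcar_Int[OF UV(1,2)] by blast
  next
    case (TJoin s t)
    then obtain U V where UV: "U \<in> tcar E.W.TA" "V \<in> tcar E.W.TA" "fhat (free_whb X) (free_tba X) (fmap X) U = tcls X s"
      "fhat (free_whb X) (free_tba X) (fmap X) V = tcls X t" by auto
    have "fhat (free_whb X) (free_tba X) (fmap X) (U \<union> V) = tcls X (TJoin s t)"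
      using E.fhat_join[OF UV(1,2)] UV(3,4) free_tba_simps[of s X t] TJoin.prems by simp
    then show ?case using E.W.Tcar_Un[OF UV(1,2)] by blast
  next
    case (TNeg s)
    then obtain U where U: "U \<in> tcar E.W.TA" "fhat (free_whb X) (free_tba X) (fmap X) U = tcls X s" by auto
    have "fhat (free_whb X) (free_tba X) (fmap X) (E.W.pfs - U) = tcls X (TNeg s)"
      using E.fhat_neg[OF U(1)] U(2) free_tba_simps1[of s X] TNeg.prems by simp
    then show ?case using E.W.Tcar_neg[OF U(1)] by blast
  next
    case TZero
    have "fhat (free_whb X) (free_tba X) (fmap X) {} = tcls X TZero" using E.fhat_zero free_tba_simps2 by simp
    then show ?case using E.W.Tcar_empty by blast
  next
    case TOne
    have "fhat (free_whb X) (free_tba X) (fmap X) E.W.pfs = tcls X TOne" using E.fhat_one free_tba_simps2 by simp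
    then show ?case using E.W.Tcar_top by blast
  next
    case (TGt s)
    then obtain U where U: "U \<in> tcar E.W.TA" "fhat (free_whb X) (free_tba X) (fmap X) U = tcls X s" by auto
    have "fhat (free_whb X) (free_tba X) (fmap X) (tG E.W.TA U) = tcls X (TGt s)"
      using E.fhat_G[OF U(1)] U(2) free_tba_simps1[of s X] TGt.prems by simp
    then show ?case using E.W.Tcar_G[OF U(1)] by blast
  next
    case (THt s)
    then obtain U where U: "U \<in> tcar E.W.TA" "fhat (free_whb X) (free_tba X) (fmap X) U = tcls X s" by auto
    have "fhat (free_whb X) (free_tba X) (fmap X) (tH E.W.TA U) = tcls X (THt s)"
      using E.fhat_H[OF U(1)] U(2) free_tba_simps1[of s X] THt.prems by simp
    then show ?case using E.W.Tcar_H[OF U(1)] by blast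
  qed
  note ex = this
  have "tcar (free_tba X) = tcls X ` tterms X"
    using tquot_cases tcls_in free_tba_simps2 by fastforce
  show ?thesis
  proof
    show "fhat (free_whb X) (free_tba X) (fmap X) ` tcar E.W.TA \<subseteq> tcar (free_tba X)" using E.fhatC by auto
    show "tcar (free_tba X) \<subseteq> fhat (free_whb X) (free_tba X) (fmap X) ` tcar E.W.TA"
    proof
      fix y assume "y \<in> tcar (free_tba X)"
      then obtain t where t: "t \<in> tterms X" "y = tcls X t" using \<open>tcar (free_tba X) = tcls X ` tterms X\<close> by auto
      then obtain U where "U \<in> tcar E.W.TA" "fhat (free_whb X) (free_tba X) (fmap X) U = tcls X t" using ex by blast
      then show "y \<in> fhat (free_whb X) (free_tba X) (fmap X) ` tcar E.W.TA" using t by (metis image_eqI)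
    qed
  qed
qed

lemma T_map_cnf:
  assumes A1: "is_whb A1" and A2: "is_whb A2"
    and hC: "\<And>a. a \<in> wcar A1 \<Longrightarrow> h a \<in> wcar A2"
    and hm: "\<And>a b. a \<in> wcar A1 \<Longrightarrow> b \<in> wcar A1 \<Longrightarrow> h (wmeet A1 a b) = wmeet A2 (h a) (h b)"
    and hj: "\<And>a b. a \<in> wcar A1 \<Longrightarrow> b \<in> wcar A1 \<Longrightarrow> h (wjoin A1 a b) = wjoin A2 (h a) (h b)"
    and h0: "h (wzero A1) = wzero A2" and h1: "h (wone A1) = wone A2"
    and ps: "set ps \<subseteq> wcar A1 \<times> wcar A1"
  shows "T_map A1 A2 h (cnf A1 ps) = cnf A2 (map (\<lambda>(a, b). (h a, h b)) ps)"
proof -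
  interpret W1: whb_alg A1 using A1 by (simp add: whb_alg_def)
  interpret W2: whb_alg A2 using A2 by (simp add: whb_alg_def)
  have pb: "W1.pf {a \<in> wcar A1. h a \<in> Q}" if Q: "W2.pf Q" for Q
    unfolding lpf_def
  proof (intro conjI ballI impI)
    show "{a \<in> wcar A1. h a \<in> Q} \<subseteq> wcar A1" by auto
    show "wone A1 \<in> {a \<in> wcar A1. h a \<in> Q}" using W2.pfD(2)[OF Q] h1 by simp
    show "wzero A1 \<notin> {a \<in> wcar A1. h a \<in> Q}" using W2.pfD(3)[OF Q] h0 by simp
    show "b \<in> {a \<in> wcar A1. h a \<in> Q}" if "a \<in> {a \<in> wcar A1. h a \<in> Q}" "b \<in> wcar A1" "wmeet A1 a b = a" for a b
    proof -
      have "h a = wmeet A2 (h a) (h b)" using that hm[of a b] by simp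
      then show ?thesis using that W2.pfD(5)[OF Q] hC by (metis (no_types, lifting) mem_Collect_eq)
    qed
    show "wmeet A1 a b \<in> {a \<in> wcar A1. h a \<in> Q}" if "a \<in> {a \<in> wcar A1. h a \<in> Q}" "b \<in> {a \<in> wcar A1. h a \<in> Q}" for a b
      using that W2.pfD(5)[OF Q] hC hm by simp
    show "a \<in> {a \<in> wcar A1. h a \<in> Q} \<or> b \<in> {a \<in> wcar A1. h a \<in> Q}"
      if "a \<in> wcar A1" "b \<in> wcar A1" "wjoin A1 a b \<in> {a \<in> wcar A1. h a \<in> Q}" for a b
      using that W2.pfD(6)[OF Q] hC hj by simp
  qed
  show ?thesis
  proof (intro set_eqI iffI)
    fix Q assume "Q \<in> T_map A1 A2 h (cnf A1 ps)"
    then have Q: "Q \<in> prime_filters A2" "{a \<in> wcar A1. h a \<in> Q} \<in> cnf A1 ps" by (auto simp: T_map_def)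
    then show "Q \<in> cnf A2 (map (\<lambda>(a, b). (h a, h b)) ps)" using ps by (auto simp: cnf_def)
  next
    fix Q assume Q: "Q \<in> cnf A2 (map (\<lambda>(a, b). (h a, h b)) ps)"
    then have Qp: "W2.pf Q" by (simp add: cnf_def W2.pfs_eq)
    have "{a \<in> wcar A1. h a \<in> Q} \<in> cnf A1 ps" using Q ps pb[OF Qp] by (auto simp: cnf_def W1.pfs_eq)
    then show "Q \<in> T_map A1 A2 h (cnf A1 ps)" using Q by (simp add: T_map_def cnf_def)
  qed
qed

lemma map_wterms: "l \<in> X \<rightarrow> Y \<Longrightarrow> s \<in> wterms X \<Longrightarrow> map_wterm l s \<in> wterms Y"
  by (auto simp: wterms_def wterm.set_map)
lemma map_tterms: "l \<in> X \<rightarrow> Y \<Longrightarrow> s \<in> tterms X \<Longrightarrow> map_tterm l s \<in> tterms Y"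
  by (auto simp: tterms_def tterm.set_map)

lemma naturality:
  fixes X Y :: "'x set" and l :: "'x \<Rightarrow> 'x"
  assumes l: "l \<in> X \<rightarrow> Y" and U: "U \<in> tcar (T_alg (free_whb X))"
  shows "fhat (free_whb Y) (free_tba Y) (fmap Y) (T_map (free_whb X) (free_whb Y) (free_whb_map Y l) U) =
         free_tba_map Y l (fhat (free_whb X) (free_tba X) (fmap X) U)"
proof -
  interpret EX: ext "free_whb X" "free_tba X" "fmap X" by (rule ext_free)
  interpret EY: ext "free_whb Y" "free_tba Y" "fmap Y" by (rule ext_free)
  define h where "h = free_whb_map Y l"
  define k where "k = free_tba_map Y l"
  have wcases: "\<And>a. a \<in> wcar (free_whb X) \<Longrightarrow> \<exists>s\<in>wterms X. a = wcls X s"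
    using wquot_cases free_whb_simps2(1) by metis
  have tcases: "\<And>a. a \<in> tcar (free_tba X) \<Longrightarrow> \<exists>s\<in>tterms X. a = tcls X s"
    using tquot_cases free_tba_simps2(1) by metis
  have hcls: "h (wcls X s) = wcls Y (map_wterm l s)" if "s \<in> wterms X" for s
    using free_whb_map_cls[OF l that] by (simp add: h_def)
  have kcls: "k (tcls X s) = tcls Y (map_tterm l s)" if "s \<in> tterms X" for s
    using free_tba_map_cls[OF l that] by (simp add: k_def)
  have hC: "h a \<in> wcar (free_whb Y)" if asm: "a \<in> wcar (free_whb X)" for a
  proof -
    obtain s where st: "s \<in> wterms X" "a = wcls X s" using wcases[OF asm] by blast
    then show ?thesis using hcls[OF st(1)] map_wterms[OF l st(1)] by (simp add: wcls_in free_whb_simps2)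
  qed
  have hm: "h (wmeet (free_whb X) a b) = wmeet (free_whb Y) (h a) (h b)"
    and hj: "h (wjoin (free_whb X) a b) = wjoin (free_whb Y) (h a) (h b)"
    if asm: "a \<in> wcar (free_whb X)" "b \<in> wcar (free_whb X)" for a b
  proof -
    obtain s where s: "s \<in> wterms X" "a = wcls X s" using wcases[OF asm(1)] by blast
    obtain t where t: "t \<in> wterms X" "b = wcls X t" using wcases[OF asm(2)] by blast
    note st = s t
    have m: "map_wterm l s \<in> wterms Y" "map_wterm l t \<in> wterms Y" using st map_wterms[OF l] by auto
    show "h (wmeet (free_whb X) a b) = wmeet (free_whb Y) (h a) (h b)"
      using st m by (simp add: free_whb_simps hcls)
    show "h (wjoin (free_whb X) a b) = wjoin (free_whb Y) (h a) (h b)"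
      using st m by (simp add: free_whb_simps hcls)
  qed
  have h0: "h (wzero (free_whb X)) = wzero (free_whb Y)" and h1: "h (wone (free_whb X)) = wone (free_whb Y)"
    by (simp_all add: free_whb_simps2 hcls)
  have kC: "k a \<in> tcar (free_tba Y)" if asm: "a \<in> tcar (free_tba X)" for a
  proof -
    obtain s where st: "s \<in> tterms X" "a = tcls X s" using tcases[OF asm] by blast
    then show ?thesis using kcls[OF st(1)] map_tterms[OF l st(1)] by (simp add: tcls_in free_tba_simps2)
  qed
  have km: "k (tmeet (free_tba X) a b) = tmeet (free_tba Y) (k a) (k b)"
    and kj: "k (tjoin (free_tba X) a b) = tjoin (free_tba Y) (k a) (k b)"
    if asm: "a \<in> tcar (free_tba X)" "b \<in> tcar (free_tba X)" for a b
  proof -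
    obtain s where s: "s \<in> tterms X" "a = tcls X s" using tcases[OF asm(1)] by blast
    obtain t where t: "t \<in> tterms X" "b = tcls X t" using tcases[OF asm(2)] by blast
    note st = s t
    have m: "map_tterm l s \<in> tterms Y" "map_tterm l t \<in> tterms Y" using st map_tterms[OF l] by auto
    show "k (tmeet (free_tba X) a b) = tmeet (free_tba Y) (k a) (k b)"
      using st m by (simp add: free_tba_simps kcls)
    show "k (tjoin (free_tba X) a b) = tjoin (free_tba Y) (k a) (k b)"
      using st m by (simp add: free_tba_simps kcls)
  qed
  have kn: "k (tneg (free_tba X) a) = tneg (free_tba Y) (k a)" if asm: "a \<in> tcar (free_tba X)" for a
  proof -
    obtain s where st: "s \<in> tterms X" "a = tcls X s" using tcases[OF asm] by blast
    have m: "map_tterm l s \<in> tterms Y" using st map_tterms[OF l] by auto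
    show ?thesis using st m by (simp add: free_tba_simps1 kcls)
  qed
  have k1: "k (tone (free_tba X)) = tone (free_tba Y)" by (simp add: free_tba_simps2 kcls)
  have kf: "k (fmap X a) = fmap Y (h a)" if asm: "a \<in> wcar (free_whb X)" for a
  proof -
    obtain s where st: "s \<in> wterms X" "a = wcls X s" using wcases[OF asm] by blast
    show ?thesis using st by (simp add: fmap_cls hcls kcls tr_terms tr_map map_wterms[OF l])
  qed
  have kmeetl: "k (EX.T.meetl xs) = EY.T.meetl (map k xs)" if "set xs \<subseteq> tcar (free_tba X)" for xs
    using that by (induction xs) (simp_all add: k1 km)
  obtain ps where ps: "set ps \<subseteq> wcar (free_whb X) \<times> wcar (free_whb X)" "U = cnf (free_whb X) ps"
    using U EX.W.Tcar by blast
  define ps' where "ps' = map (\<lambda>(a, b). (h a, h b)) ps"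
  have ps': "set ps' \<subseteq> wcar (free_whb Y) \<times> wcar (free_whb Y)" using ps(1) hC by (auto simp: ps'_def)
  have TM: "T_map (free_whb X) (free_whb Y) h U = cnf (free_whb Y) ps'"
    unfolding ps(2) ps'_def
    by (rule T_map_cnf[OF free_whb_is_whb free_whb_is_whb hC hm hj h0 h1 ps(1)])
  have "map EY.clause ps' = map k (map EX.clause ps)"
    unfolding ps'_def map_map
  proof (rule map_cong[OF refl])
    fix p assume "p \<in> set ps"
    then obtain a b where ab: "p = (a, b)" "a \<in> wcar (free_whb X)" "b \<in> wcar (free_whb X)" using ps(1) by auto
    show "(EY.clause \<circ> (\<lambda>(a, b). (h a, h b))) p = (k \<circ> EX.clause) p"
      using ab by (simp add: kj kn kf EX.fC)
  qed
  then show ?thesis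
    unfolding h_def[symmetric] k_def[symmetric] TM
    using EY.fhat_cnf[OF ps'] EX.fhat_cnf[OF ps(1)] ps(2) kmeetl[OF EX.clauseC[OF ps(1)]] by simp
qed

theorem theorem6p10:
  "\<exists>\<eta> :: 'x set \<Rightarrow> 'x wterm set set set \<Rightarrow> 'x tterm set.
     (\<forall>X. tba_iso (T_alg (free_whb X)) (free_tba X) (\<eta> X)) \<and>
     (\<forall>X Y (l :: 'x \<Rightarrow> 'x). l \<in> X \<rightarrow> Y \<longrightarrow>
        (\<forall>U \<in> tcar (T_alg (free_whb X)).
           \<eta> Y (T_map (free_whb X) (free_whb Y) (free_whb_map Y l) U) = free_tba_map Y l (\<eta> X U)))"
proof (intro exI[of _ "\<lambda>X. fhat (free_whb X) (free_tba X) (fmap X)"] conjI allI impI ballI)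
  fix X :: "'x set"
  interpret E: ext "free_whb X" "free_tba X" "fmap X" by (rule ext_free)
  show "tba_iso (T_alg (free_whb X)) (free_tba X) (fhat (free_whb X) (free_tba X) (fmap X))"
    unfolding tba_iso_def bij_betw_def using E.fhat_hom E.fhat_inj fhat_surj by blast
next
  fix X Y :: "'x set" and l :: "'x \<Rightarrow> 'x" and U
  assume "l \<in> X \<rightarrow> Y" "U \<in> tcar (T_alg (free_whb X))"
  then show "fhat (free_whb Y) (free_tba Y) (fmap Y) (T_map (free_whb X) (free_whb Y) (free_whb_map Y l) U) =
         free_tba_map Y l (fhat (free_whb X) (free_tba X) (fmap X) U)"
    by (rule naturality)
qed

end
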